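(* Under the setting, assumptions (A1)–(A2) and the algorithm PDAc-L described in the context, the sequence $\{(x_n,y_n)\}$ generated by PDAc-L converges to a saddle point of $\mathcal L$, i.e. to a point of $\Omega$.
   Context: Let $f:\mathbb{R}^p\to(-\infty,+\infty]$ and $g:\mathbb{R}^q\to(-\infty,+\infty]$ be proper closed convex functions; $f^*(y)=\sup_u\{\langle y,u\rangle-f(u)\}$ is the Fenchel conjugate, $\mathrm{dom}(h)=\{x:h(x)<+\infty\}$, and for $\lambda>0$, $\mathrm{Prox}_{\lambda h}(x)=\arg\min_u\{h(u)+\frac{1}{2\lambda}\|u-x\|^2\}$. Let $\Phi:\mathrm{dom}(g)\times\mathrm{dom}(f^* )\to\mathbb{R}$ be continuous and $\mathcal L(x,y)=g(x)+\Phi(x,y)-f^*(y)$. Let $\Omega$ be the set of $(x^\star,y^\star)\in\mathrm{dom}(g)\times\mathrm{dom}(f^* )$ with $-\nabla_x\Phi(x^\star,y^\star)\in\partial g(x^\star)$ and $\nabla_y\Phi(x^\star,y^\star)\in\partial f^*(y^\star)$ (saddle points of $\mathcal L$). Assume: (A1) $\Omega\neq\emptyset$, $\mathrm{dom}(g)\times\mathrm{dom}(f^* )\subseteq\mathrm{dom}(\Phi)$, and $\mathcal L(x^\star,y^\star)$ is finite; (A2) for each $y\in\mathrm{dom}(f^* )$, $\Phi(\cdot,y)$ is convex and differentiable, for each $x\in\mathrm{dom}(g)$, $\Phi(x,\cdot)$ is concave and differentiable, and for all bounded $\mathcal X\subset\mathbb R^q$, $\mathcal Y\subset\mathbb R^p$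 there exist $L_{yy},L_{xx}\ge 0$, $L_{xy}>0$ with $\|\nabla_y\Phi(x,y)-\nabla_y\Phi(x,\tilde y)\|\le L_{yy}\|y-\tilde y\|$ and $\|\nabla_x\Phi(x,y)-\nabla_x\Phi(\tilde x,\tilde y)\|\le L_{xx}\|x-\tilde x\|+L_{xy}\|y-\tilde y\|$ for all $x,\tilde x\in\mathcal X\cap\mathrm{dom}(g)$, $y,\tilde y\in\mathcal Y\cap\mathrm{dom}(f^* )$. Algorithm PDAc-L: choose $\psi\in(1,1+\sqrt3)$, $\xi>0$, $\varphi>1$ with $\omega:=2\psi-\xi-\frac{\psi^3\varphi}{1+\psi}>0$, $\tau_{\max}>0$, $\nu\in(0,1)$, $\mu\in(0,1)$, $\eta\in[0,1)$, an integer $M\ge1$, $\beta>0$, $x_0\in\mathrm{dom}(g)$, $y_0\in\mathrm{dom}(f^* )$, $\tau_0\in(0,\tau_{\max}]$; set $z_0=x_0$, $\delta_0=1$. For $n=1,2,\dots$: (1) $z_n=\frac{\psi-1}{\psi}x_{n-1}+\frac1\psi z_{n-1}$ and $x_n=\mathrm{Prox}_{\tau_{n-1}g}(z_n-\tau_{n-1}\nabla_x\Phi(x_{n-1},y_{n-1}))$. (2) Let $\tau=\min\{\varphi\tau_{n-1},\tau_{\max}\}$; set $\tau_n=\tau\mu^i$ and $y_n=\mathrm{Prox}_{\beta\tau_n f^*}(y_{n-1}+\beta\tau_n\nabla_y\Phi(x_n,y_{n-1}))$, where $i$ is the smallest nonnegative integer such that $\frac{\tau_n\tau_{n-1}}{\xi}\|\theta_n\|^2+2\tau_n\Phi_n^y\le\nu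 r_n+(1-\nu)c_n$, with $\theta_n=\nabla_x\Phi(x_n,y_n)-\nabla_x\Phi(x_{n-1},y_{n-1})$, $\Phi_n^y=\Phi(x_n,y_{n-1})+\langle\nabla_y\Phi(x_n,y_{n-1}),y_n-y_{n-1}\rangle-\Phi(x_n,y_n)$, $r_n=\omega\delta_{n-1}\|x_n-x_{n-1}\|^2+\frac1\beta\|y_n-y_{n-1}\|^2$, $c_n=\frac{\eta}{|\mathcal I_n|}\sum_{i\in\mathcal I_n}r_i$, $\mathcal I_n=\{n-1,n-2,\dots,\max\{n-M,1\}\}$ (the $r_i$ for $i<n$ being the values from earlier iterations; for $n=1$, $\mathcal I_1=\emptyset$ and $c_1:=0$). (3) $\delta_n=\tau_n/\tau_{n-1}$. *)

theory Defs
  imports "HOL-Analysis.Analysis"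
begin

text \<open>Functions R^n -> (-inf,+inf] are modelled as ereal-valued functions that never take -inf.\<close>

definition edom :: "('a \<Rightarrow> ereal) \<Rightarrow> 'a set" where
  "edom h = {x. h x < \<infinity>}"

definition proper_fun :: "('a \<Rightarrow> ereal) \<Rightarrow> bool" where
  "proper_fun h \<longleftrightarrow> (\<forall>x. h x \<noteq> -\<infinity>) \<and> (\<exists>x. h x < \<infinity>)"

definition eepigraph :: "('a \<Rightarrow> ereal) \<Rightarrow> ('a \<times> real) set" where
  "eepigraph h = {(x, t). h x \<le> ereal t}"

definition convex_fun :: "('a::real_vector \<Rightarrow> ereal) \<Rightarrow> bool" where
  "convex_fun h \<longleftrightarrow> convex (eepigraph h)"

definition closed_fun :: "('a::real_normed_vector \<Rightarrow> ereal) \<Rightarrow> bool" where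
  "closed_fun h \<longleftrightarrow> closed (eepigraph h)"

definition proper_closed_convex :: "('a::real_normed_vector \<Rightarrow> ereal) \<Rightarrow> bool" where
  "proper_closed_convex h \<longleftrightarrow> proper_fun h \<and> closed_fun h \<and> convex_fun h"

definition fenchel_conj :: "('a::real_inner \<Rightarrow> ereal) \<Rightarrow> 'a \<Rightarrow> ereal" where
  "fenchel_conj f y = (SUP u. ereal (inner y u) - f u)"

definition subdiff :: "('a::real_inner \<Rightarrow> ereal) \<Rightarrow> 'a \<Rightarrow> 'a set" where
  "subdiff h x = {v. h x \<noteq> \<infinity> \<and> h x \<noteq> -\<infinity> \<and>
                     (\<forall>u. h x + ereal (inner v (u - x)) \<le> h u)}"

definition Prox :: "real \<Rightarrow> ('a::real_normed_vector \<Rightarrow> ereal) \<Rightarrow> 'a \<Rightarrow> 'a" where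
  "Prox lam h x = (THE u. \<forall>v. h u + ereal ((norm (u - x))\<^sup>2 / (2 * lam))
                                 \<le> h v + ereal ((norm (v - x))\<^sup>2 / (2 * lam)))"

text \<open>gx, gy are the partial gradients of Phi (linked to Phi by hypotheses of the theorem).\<close>
definition saddle_set ::
  "('a::real_inner \<Rightarrow> ereal) \<Rightarrow> ('b::real_inner \<Rightarrow> ereal) \<Rightarrow>
   ('a \<Rightarrow> 'b \<Rightarrow> 'a) \<Rightarrow> ('a \<Rightarrow> 'b \<Rightarrow> 'b) \<Rightarrow> ('a \<times> 'b) set" where
  "saddle_set g fs gx gy =
     {(xs, ys). xs \<in> edom g \<and> ys \<in> edom fs \<and>
                - gx xs ys \<in> subdiff g xs \<and> gy xs ys \<in> subdiff fs ys}"

definition pdacl_r :: "real \<Rightarrow> real \<Rightarrow> real \<Rightarrow> 'a::real_normed_vector \<Rightarrow> 'a \<Rightarrow>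
                       'b::real_normed_vector \<Rightarrow> 'b \<Rightarrow> real" where
  "pdacl_r \<omega> \<beta> dprev xn xp yn yp =
     \<omega> * dprev * (norm (xn - xp))\<^sup>2 + (1 / \<beta>) * (norm (yn - yp))\<^sup>2"

definition pdacl_c :: "real \<Rightarrow> nat \<Rightarrow> (nat \<Rightarrow> real) \<Rightarrow> nat \<Rightarrow> real" where
  "pdacl_c \<eta> M r n =
     (if n \<le> 1 then 0
      else \<eta> / real (card {max (n - M) 1..<n}) * (\<Sum>i\<in>{max (n - M) 1..<n}. r i))"

text \<open>The line-search test of step (2) for trial step t and trial point yt at iteration n.\<close>
definition pdacl_test ::
  "('a::real_inner \<Rightarrow> 'b::real_inner \<Rightarrow> real) \<Rightarrow> ('a \<Rightarrow> 'b \<Rightarrow> 'a) \<Rightarrow> ('a \<Rightarrow> 'b \<Rightarrow> 'b) \<Rightarrow>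
   real \<Rightarrow> real \<Rightarrow> real \<Rightarrow> real \<Rightarrow> real \<Rightarrow> nat \<Rightarrow>
   (nat \<Rightarrow> 'a) \<Rightarrow> (nat \<Rightarrow> 'b) \<Rightarrow> (nat \<Rightarrow> real) \<Rightarrow> (nat \<Rightarrow> real) \<Rightarrow>
   nat \<Rightarrow> real \<Rightarrow> 'b \<Rightarrow> bool" where
  "pdacl_test \<Phi> gx gy \<xi> \<omega> \<nu> \<eta> \<beta> M x y \<tau> \<delta> n t yt \<longleftrightarrow>
     (let \<theta> = gx (x n) yt - gx (x (n - 1)) (y (n - 1));
          \<Phi>y = \<Phi> (x n) (y (n - 1)) + inner (gy (x n) (y (n - 1))) (yt - y (n - 1)) - \<Phi> (x n) yt;
          rn = pdacl_r \<omega> \<beta> (\<delta> (n - 1)) (x n) (x (n - 1)) yt (y (n - 1));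
          r = (\<lambda>i. pdacl_r \<omega> \<beta> (\<delta> (i - 1)) (x i) (x (i - 1)) (y i) (y (i - 1)));
          cn = pdacl_c \<eta> M r n
      in t * \<tau> (n - 1) / \<xi> * (norm \<theta>)\<^sup>2 + 2 * t * \<Phi>y \<le> \<nu> * rn + (1 - \<nu>) * cn)"

definition pdacl_seq ::
  "('a::real_inner \<Rightarrow> ereal) \<Rightarrow> ('b::real_inner \<Rightarrow> ereal) \<Rightarrow>
   ('a \<Rightarrow> 'b \<Rightarrow> real) \<Rightarrow> ('a \<Rightarrow> 'b \<Rightarrow> 'a) \<Rightarrow> ('a \<Rightarrow> 'b \<Rightarrow> 'b) \<Rightarrow>
   real \<Rightarrow> real \<Rightarrow> real \<Rightarrow> real \<Rightarrow> real \<Rightarrow> real \<Rightarrow> real \<Rightarrow> nat \<Rightarrow> real \<Rightarrow>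
   (nat \<Rightarrow> 'a) \<Rightarrow> (nat \<Rightarrow> 'b) \<Rightarrow> (nat \<Rightarrow> 'a) \<Rightarrow> (nat \<Rightarrow> real) \<Rightarrow> (nat \<Rightarrow> real) \<Rightarrow> bool" where
  "pdacl_seq g fs \<Phi> gx gy \<psi> \<xi> \<phi> \<tau>max \<nu> \<mu> \<eta> M \<beta> x y z \<tau> \<delta> \<longleftrightarrow>
     (let \<omega> = 2 * \<psi> - \<xi> - \<psi> ^ 3 * \<phi> / (1 + \<psi>) in
      z 0 = x 0 \<and> \<delta> 0 = 1 \<and>
      (\<forall>n\<ge>1.
         z n = ((\<psi> - 1) / \<psi>) *\<^sub>R x (n - 1) + (1 / \<psi>) *\<^sub>R z (n - 1) \<and>
         x n = Prox (\<tau> (n - 1)) g (z n - \<tau> (n - 1) *\<^sub>R gx (x (n - 1)) (y (n - 1))) \<and>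
         (let \<tau>b = min (\<phi> * \<tau> (n - 1)) \<tau>max;
              yt = (\<lambda>t. Prox (\<beta> * t) fs (y (n - 1) + (\<beta> * t) *\<^sub>R gy (x n) (y (n - 1))))
          in \<exists>i::nat.
               \<tau> n = \<tau>b * \<mu> ^ i \<and> y n = yt (\<tau> n) \<and>
               pdacl_test \<Phi> gx gy \<xi> \<omega> \<nu> \<eta> \<beta> M x y \<tau> \<delta> n (\<tau> n) (y n) \<and>
               (\<forall>j<i. \<not> pdacl_test \<Phi> gx gy \<xi> \<omega> \<nu> \<eta> \<beta> M x y \<tau> \<delta> n
                          (\<tau>b * \<mu> ^ j) (yt (\<tau>b * \<mu> ^ j)))) \<and>
         \<delta> n = \<tau> n / \<tau> (n - 1)))"

end

theory Submission
  imports Defs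
begin

lemma dirderiv_le:
  fixes F :: "'a::real_inner \<Rightarrow> real"
  assumes der: "(F has_derivative (\<lambda>h. inner a h)) (at u)"
    and le: "\<And>t. 0 < t \<Longrightarrow> t < 1 \<Longrightarrow> (F (u + t *\<^sub>R w) - F u) / t \<le> K"
  shows "inner a w \<le> K"
proof -
  have d1: "((\<lambda>t::real. u + t *\<^sub>R w) has_derivative (\<lambda>t. t *\<^sub>R w)) (at 0)"
    by (auto intro!: derivative_eq_intros)
  have d2: "((\<lambda>t::real. F (u + t *\<^sub>R w)) has_derivative (\<lambda>t. inner a (t *\<^sub>R w))) (at 0)"
    using has_derivative_compose[OF d1, of F "\<lambda>h. inner a h"] der by simp
  have "((\<lambda>t::real. F (u + t *\<^sub>R w)) has_field_derivative (inner a w)) (at 0)"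
  proof -
    have "(\<lambda>t. inner a (t *\<^sub>R w)) = (*) (inner a w)" by (auto simp: fun_eq_iff)
    then show ?thesis using d2 unfolding has_field_derivative_def by simp
  qed
  then have "((\<lambda>y. (F (u + y *\<^sub>R w) - F (u + 0 *\<^sub>R w)) / (y - 0)) \<longlongrightarrow> inner a w) (at 0)"
    unfolding has_field_derivative_iff by simp
  then have lim: "((\<lambda>y. (F (u + y *\<^sub>R w) - F u) / y) \<longlongrightarrow> inner a w) (at_right 0)"
    by (auto intro: tendsto_mono at_le)
  have ev: "eventually (\<lambda>y. (F (u + y *\<^sub>R w) - F u) / y \<le> K) (at_right (0::real))"
    using eventually_at_right_real[of 0 1] by (rule eventually_mono) (auto intro: le)
  show ?thesis
    using tendsto_upperbound[OF lim ev] by simp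
qed

lemma grad_convex:
  fixes F :: "'a::real_inner \<Rightarrow> real"
  assumes cv: "convex_on S F" and der: "(F has_derivative (\<lambda>h. inner a h)) (at u)"
    and u: "u \<in> S" and u': "u' \<in> S"
  shows "F u' \<ge> F u + inner a (u' - u)"
proof -
  have "inner a (u' - u) \<le> F u' - F u"
  proof (rule dirderiv_le[OF der])
    fix t :: real assume t: "0 < t" "t < 1"
    have eq: "u + t *\<^sub>R (u' - u) = (1 - t) *\<^sub>R u + t *\<^sub>R u'"
      by (simp add: algebra_simps)
    have "F ((1 - t) *\<^sub>R u + t *\<^sub>R u') \<le> (1 - t) * F u + t * F u'"
      using convex_onD[OF cv] t u u' by auto
    then have "F (u + t *\<^sub>R (u' - u)) - F u \<le> t * (F u' - F u)"
      unfolding eq by (simp add: algebra_simps)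
    then show "(F (u + t *\<^sub>R (u' - u)) - F u) / t \<le> F u' - F u"
      using t by (simp add: divide_le_eq mult.commute)
  qed
  then show ?thesis by simp
qed

lemma grad_concave:
  fixes F :: "'a::real_inner \<Rightarrow> real"
  assumes cv: "concave_on S F" and der: "(F has_derivative (\<lambda>h. inner a h)) (at u)"
    and u: "u \<in> S" and u': "u' \<in> S"
  shows "F u' \<le> F u + inner a (u' - u)"
proof -
  have cv': "convex_on S (\<lambda>x. - F x)" using cv by (simp add: concave_on_def)
  have der': "((\<lambda>x. - F x) has_derivative (\<lambda>h. inner (- a) h)) (at u)"
    using has_derivative_minus[OF der] by simp
  show ?thesis using grad_convex[OF cv' der' u u'] by (simp add: inner_minus_left)
qed



lemma quad_bound:
  fixes r A B :: real
  assumes "0 \<le> r" "0 \<le> A" "0 \<le> B" "r\<^sup>2 \<le> A * r + B"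
  shows "r \<le> A + B + 1"
proof (cases "r \<le> 1")
  case True then show ?thesis using assms by linarith
next
  case False
  then have "B \<le> B * r" using mult_left_mono[of 1 r B] assms by simp
  then have "A * r + B \<le> (A + B) * r" by (simp add: algebra_simps)
  with assms(4) have "r * r \<le> (A + B) * r" by (simp add: power2_eq_square)
  then have "r \<le> A + B" using False by (simp add: mult_le_cancel_right)
  then show ?thesis by simp
qed

lemma small_t_le:
  fixes X Y Z :: real
  assumes "\<And>t. 0 < t \<Longrightarrow> t < 1 \<Longrightarrow> Y \<le> X + t * Z" "0 \<le> Z"
  shows "Y \<le> X"
proof (rule ccontr)
  assume "\<not> Y \<le> X"
  then have d: "Y - X > 0" by simp
  define t where "t = min (1/2) ((Y - X) / (2 * (Z + 1)))"
  have t0: "0 < t" using d assms(2) by (simp add: t_def)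
  have t1: "t < 1" by (simp add: t_def)
  have "t * Z \<le> ((Y - X) / (2 * (Z + 1))) * Z"
    using assms(2) by (intro mult_right_mono) (auto simp: t_def)
  also have "\<dots> < Y - X"
  proof -
    have "((Y - X) / (2 * (Z + 1))) * Z = (Y - X) * (Z / (2 * (Z + 1)))" by simp
    also have "\<dots> < (Y - X) * 1"
      using d assms(2) by (intro mult_strict_left_mono) (auto simp: divide_less_eq)
    finally show ?thesis by simp
  qed
  finally show False using assms(1)[OF t0 t1] by linarith
qed

lemma epi_closed_limit:
  fixes h :: "'a::real_normed_vector \<Rightarrow> ereal"
  assumes "closed_fun h" "X \<longlonglongrightarrow> xb" "\<And>k. h (X k) \<le> ereal (T k)" "T \<longlonglongrightarrow> tb"
  shows "h xb \<le> ereal tb"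
proof -
  have l: "(\<lambda>k. (X k, T k)) \<longlonglongrightarrow> (xb, tb)" using assms(2,4) by (rule tendsto_Pair)
  have m: "\<And>k. (X k, T k) \<in> eepigraph h" using assms(3) by (simp add: eepigraph_def)
  have c: "closed (eepigraph h)" using assms(1) by (simp add: closed_fun_def)
  have "(xb, tb) \<in> eepigraph h"
    by (rule closed_sequentially[of "eepigraph h" "\<lambda>k. (X k, T k)", OF c m l])
  then show ?thesis by (simp add: eepigraph_def)
qed

lemma epi_convex_comb:
  fixes h :: "'a::real_normed_vector \<Rightarrow> ereal"
  assumes "convex_fun h" "h u \<le> ereal a" "h v \<le> ereal b" "0 \<le> t" "t \<le> 1"
  shows "h ((1 - t) *\<^sub>R u + t *\<^sub>R v) \<le> ereal ((1 - t) * a + t * b)"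
proof -
  have "(u, a) \<in> eepigraph h" "(v, b) \<in> eepigraph h" using assms by (auto simp: eepigraph_def)
  then have "(1 - t) *\<^sub>R (u, a) + t *\<^sub>R (v, b) \<in> eepigraph h"
    using assms(1,4,5) unfolding convex_fun_def by (intro convexD) auto
  then show ?thesis by (simp add: eepigraph_def)
qed

lemma proper_finite:
  assumes "proper_fun h" "h u < \<infinity>"
  shows "h u = ereal (real_of_ereal (h u))"
  using assms by (cases "h u") (auto simp: proper_fun_def)

lemma affine_minorant:
  fixes h :: "'a::euclidean_space \<Rightarrow> ereal"
  assumes "proper_closed_convex h"
  shows "\<exists>a c. \<forall>x. ereal (inner a x + c) \<le> h x"
proof -
  have pf: "proper_fun h" and cl: "closed_fun h" and cv: "convex_fun h"
    using assms by (auto simp: proper_closed_convex_def)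
  obtain x0 where x0: "h x0 < \<infinity>" using pf by (auto simp: proper_fun_def)
  define h0 where "h0 = real_of_ereal (h x0)"
  have hx0: "h x0 = ereal h0" using proper_finite[OF pf x0] by (simp add: h0_def)
  have "(x0, h0 - 1) \<notin> eepigraph h" using hx0 by (simp add: eepigraph_def)
  then obtain A b where A: "inner A (x0, h0 - 1) < b" and Ab: "\<forall>p\<in>eepigraph h. b < inner A p"
    using separating_hyperplane_closed_point[of "eepigraph h" "(x0, h0 - 1)"] cl cv
    unfolding closed_fun_def convex_fun_def by blast
  obtain a1 s where As: "A = (a1, s)" by (cases A)
  have "(x0, h0) \<in> eepigraph h" using hx0 by (simp add: eepigraph_def)
  then have "b < inner a1 x0 + s * h0" using Ab As by (auto simp: inner_Pair)
  moreover have "inner a1 x0 + s * (h0 - 1) < b" using A As by (simp add: inner_Pair)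
  ultimately have s: "s > 0" by (simp add: algebra_simps)
  have "ereal (inner (- (1/s) *\<^sub>R a1) x + b / s) \<le> h x" for x
  proof (cases "h x")
    case (real r)
    then have "(x, r) \<in> eepigraph h" by (simp add: eepigraph_def)
    then have "b < inner a1 x + s * r" using Ab As by (auto simp: inner_Pair)
    then have "b / s - inner a1 x / s < r" using s by (simp add: field_simps)
    then show ?thesis using real by (simp add: inner_minus_left)
  next
    case PInf then show ?thesis by simp
  next
    case MInf then show ?thesis using pf by (simp add: proper_fun_def)
  qed
  then show ?thesis by blast
qed



lemma inner_lower: "inner a v \<ge> - (norm a * norm v)"
  using norm_cauchy_schwarz[of "- a" v] by (simp add: inner_minus_left)

lemma ereal_add_less_split:
  assumes "h + ereal q < ereal b" shows "h \<le> ereal (b - q)"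
  using assms by (cases h) auto

lemma prox_exists:
  fixes h :: "'a::euclidean_space \<Rightarrow> ereal"
  assumes pcc: "proper_closed_convex h" and lam: "lam > 0"
  shows "\<exists>u. \<forall>v. h u + ereal ((norm (u - w))\<^sup>2 / (2 * lam)) \<le> h v + ereal ((norm (v - w))\<^sup>2 / (2 * lam))"
proof -
  have pf: "proper_fun h" and cl: "closed_fun h" and cv: "convex_fun h"
    using pcc by (auto simp: proper_closed_convex_def)
  obtain a c where ac: "\<And>x. ereal (inner a x + c) \<le> h x" using affine_minorant[OF pcc] by blast
  obtain x0 where x0: "h x0 < \<infinity>" using pf by (auto simp: proper_fun_def)
  define q where "q x = (norm (x - w))\<^sup>2 / (2 * lam)" for x
  define \<phi> where "\<phi> x = h x + ereal (q x)" for x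
  define m0 where "m0 = c + inner a w - lam * (norm a)\<^sup>2 / 2"
  have lowq: "m0 \<le> inner a x + c + q x" for x
  proof -
    define r where "r = norm (x - w)"
    have "inner a (x - w) \<ge> - (norm a * r)"
      using inner_lower[of a "x - w"] by (simp add: r_def)
    moreover have "inner a x = inner a (x - w) + inner a w" by (simp add: inner_diff_right)
    moreover have "- (norm a * r) + r\<^sup>2 / (2 * lam) \<ge> - lam * (norm a)\<^sup>2 / 2"
    proof -
      have "0 \<le> (r - lam * norm a)\<^sup>2 / (2 * lam)" using lam by simp
      also have "\<dots> = r\<^sup>2 / (2 * lam) - norm a * r + lam * (norm a)\<^sup>2 / 2"
        using lam by (simp add: field_simps power2_eq_square)
      finally show ?thesis by simp
    qed
    ultimately show ?thesis unfolding m0_def q_def r_def by linarith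
  qed
  have low: "ereal m0 \<le> \<phi> x" for x
  proof -
    have "ereal m0 \<le> ereal (inner a x + c) + ereal (q x)" using lowq[of x] by simp
    also have "\<dots> \<le> \<phi> x" unfolding \<phi>_def using ac[of x] by (rule add_right_mono)
    finally show ?thesis .
  qed
  define m where "m = (INF x. \<phi> x)"
  have mlow: "ereal m0 \<le> m" unfolding m_def using low by (simp add: le_INF_iff)
  have mup: "m \<le> \<phi> x0" unfolding m_def by (rule INF_lower) simp
  have "\<phi> x0 < \<infinity>" using x0 by (simp add: \<phi>_def)
  then obtain mr where mr: "m = ereal mr" using mlow mup by (cases m) auto
  have "\<forall>k. \<exists>u. \<phi> u < ereal (mr + inverse (real (Suc k)))"
  proof
    fix k
    have "m < ereal (mr + inverse (real (Suc k)))" using mr by simp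
    then show "\<exists>u. \<phi> u < ereal (mr + inverse (real (Suc k)))"
      unfolding m_def by (simp add: INF_less_iff)
  qed
  then obtain U where U: "\<And>k. \<phi> (U k) < ereal (mr + inverse (real (Suc k)))"
    using choice[of "\<lambda>k u. \<phi> u < ereal (mr + inverse (real (Suc k)))"] by blast
  define B where "B = 2 * lam * \<bar>mr + 1 - c - inner a w\<bar>"
  define Rb where "Rb = 2 * lam * norm a + B + 1"
  have Ubd: "norm (U k - w) \<le> Rb" for k
  proof -
    define r where "r = norm (U k - w)"
    have "ereal (inner a (U k) + c + q (U k)) \<le> \<phi> (U k)"
      unfolding \<phi>_def using add_right_mono[OF ac[of "U k"], of "ereal (q (U k))"] by simp
    also have "\<dots> < ereal (mr + inverse (real (Suc k)))" by (rule U)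
    also have "\<dots> \<le> ereal (mr + 1)" by (simp add: inverse_le_1_iff)
    finally have i1: "inner a (U k) + c + q (U k) < mr + 1" by simp
    have "inner a (U k - w) \<ge> - (norm a * r)"
      using inner_lower[of a "U k - w"] by (simp add: r_def)
    then have "inner a (U k) \<ge> inner a w - norm a * r" by (simp add: inner_diff_right)
    with i1 have "r\<^sup>2 / (2 * lam) \<le> mr + 1 - c - inner a w + norm a * r"
      unfolding q_def r_def by linarith
    then have "r\<^sup>2 \<le> 2 * lam * (mr + 1 - c - inner a w + norm a * r)"
      using lam by (simp add: divide_le_eq mult.commute)
    also have "\<dots> \<le> (2 * lam * norm a) * r + B"
    proof -
      have "2 * lam * (mr + 1 - c - inner a w) \<le> B"
        unfolding B_def using lam by (intro mult_left_mono) auto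
      then show ?thesis by (simp add: algebra_simps)
    qed
    finally have "r\<^sup>2 \<le> (2 * lam * norm a) * r + B" .
    then have "r \<le> 2 * lam * norm a + B + 1"
      by (rule quad_bound[rotated 3]) (use lam in \<open>auto simp: r_def B_def\<close>)
    then show ?thesis by (simp add: r_def Rb_def)
  qed
  have "bounded (range U)"
    unfolding bounded_iff
  proof (intro exI ballI)
    fix y assume "y \<in> range U"
    then obtain k where "y = U k" by auto
    then show "norm y \<le> Rb + norm w"
      using Ubd[of k] norm_triangle_ineq4[of "U k" w] by (smt (verit) norm_triangle_sub)
  qed
  then obtain l \<sigma> where \<sigma>: "strict_mono \<sigma>" and lim: "(U \<circ> \<sigma>) \<longlonglongrightarrow> l"
    using bounded_imp_convergent_subsequence by blast
  define T where "T k = mr + inverse (real (Suc (\<sigma> k))) - q (U (\<sigma> k))" for k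
  have hT: "h (U (\<sigma> k)) \<le> ereal (T k)" for k
    using U[of "\<sigma> k"] unfolding T_def \<phi>_def by (rule ereal_add_less_split)
  have inv0: "(\<lambda>k. inverse (real (Suc (\<sigma> k)))) \<longlonglongrightarrow> 0"
    using LIMSEQ_subseq_LIMSEQ[OF LIMSEQ_inverse_real_of_nat \<sigma>] by (simp add: o_def)
  have lim': "(\<lambda>k. U (\<sigma> k)) \<longlonglongrightarrow> l" using lim by (simp add: o_def)
  have qlim: "(\<lambda>k. q (U (\<sigma> k))) \<longlonglongrightarrow> q l"
    unfolding q_def using lam by (intro tendsto_intros lim') auto
  have Tlim: "T \<longlonglongrightarrow> mr + 0 - q l"
    unfolding T_def by (intro tendsto_intros inv0 qlim)
  have "h l \<le> ereal (mr - q l)"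
    using epi_closed_limit[OF cl lim' hT Tlim] by simp
  then have "\<phi> l \<le> ereal mr"
    unfolding \<phi>_def by (cases "h l") auto
  then have "\<phi> l \<le> \<phi> v" for v
    using INF_lower[of v UNIV \<phi>] mr unfolding m_def by auto
  then show ?thesis unfolding \<phi>_def q_def by blast
qed

lemma nsq_add: "(norm (x + y))\<^sup>2 = (norm x)\<^sup>2 + 2 * inner x y + (norm (y::'a::real_inner))\<^sup>2"
  by (simp add: power2_norm_eq_inner inner_add_left inner_add_right inner_commute)

lemma nsq_diff: "(norm (x - y))\<^sup>2 = (norm x)\<^sup>2 - 2 * inner x y + (norm (y::'a::real_inner))\<^sup>2"
  by (simp add: power2_norm_eq_inner inner_diff_left inner_diff_right inner_commute)

lemma min_VI:
  fixes h :: "'a::euclidean_space \<Rightarrow> ereal"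
  assumes pcc: "proper_closed_convex h" and lam: "lam > 0"
    and min: "\<forall>v. h u + ereal ((norm (u - w))\<^sup>2 / (2 * lam)) \<le> h v + ereal ((norm (v - w))\<^sup>2 / (2 * lam))"
  shows "h u < \<infinity> \<and> (\<forall>v. h u + ereal (inner ((1 / lam) *\<^sub>R (w - u)) (v - u)) \<le> h v)"
proof -
  have pf: "proper_fun h" and cv: "convex_fun h"
    using pcc by (auto simp: proper_closed_convex_def)
  obtain x0 where x0: "h x0 < \<infinity>" using pf by (auto simp: proper_fun_def)
  have "h u + ereal ((norm (u - w))\<^sup>2 / (2 * lam)) < \<infinity>"
    using min[rule_format, of x0] x0 by (cases "h x0") auto
  then have hu: "h u < \<infinity>" by (cases "h u") auto
  then obtain Hu where Hu: "h u = ereal Hu" using pf by (cases "h u") (auto simp: proper_fun_def)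
  have "h u + ereal (inner ((1 / lam) *\<^sub>R (w - u)) (v - u)) \<le> h v" for v
  proof (cases "h v")
    case PInf then show ?thesis by simp
  next
    case MInf then show ?thesis using pf by (simp add: proper_fun_def)
  next
    case (real Hv)
    have key: "Hu \<le> Hv + inner (u - w) (v - u) / lam + t * ((norm (v - u))\<^sup>2 / (2 * lam))"
      if t: "0 < t" "t < 1" for t
    proof -
      define ut where "ut = (1 - t) *\<^sub>R u + t *\<^sub>R v"
      have hut: "h ut \<le> ereal ((1 - t) * Hu + t * Hv)"
        unfolding ut_def using epi_convex_comb[OF cv, of u Hu v Hv t] Hu real t by simp
      have "ereal (Hu + (norm (u - w))\<^sup>2 / (2 * lam)) \<le> h ut + ereal ((norm (ut - w))\<^sup>2 / (2 * lam))"
        using min[rule_format, of ut] Hu by simp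
      also have "\<dots> \<le> ereal ((1 - t) * Hu + t * Hv) + ereal ((norm (ut - w))\<^sup>2 / (2 * lam))"
        using hut by (rule add_right_mono)
      finally have i1: "Hu + (norm (u - w))\<^sup>2 / (2 * lam) \<le> (1 - t) * Hu + t * Hv + (norm (ut - w))\<^sup>2 / (2 * lam)"
        by simp
      have e: "ut - w = (u - w) + t *\<^sub>R (v - u)" by (simp add: ut_def algebra_simps)
      define I where "I = inner (u - w) (v - u)"
      define D where "D = (norm (v - u))\<^sup>2"
      define N0 where "N0 = (norm (u - w))\<^sup>2"
      have n1: "(norm (ut - w))\<^sup>2 = N0 + 2 * t * I + t\<^sup>2 * D"
        unfolding e nsq_add I_def D_def N0_def by (simp add: power_mult_distrib)
      have sp: "(N0 + 2 * t * I + t\<^sup>2 * D) / (2 * lam) = N0 / (2 * lam) + t * (I / lam + t * (D / (2 * lam)))"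
        using lam by (simp add: field_simps power2_eq_square)
      have "Hu + N0 / (2 * lam) \<le> (1 - t) * Hu + t * Hv + (N0 + 2 * t * I + t\<^sup>2 * D) / (2 * lam)"
        using i1 n1 unfolding N0_def by simp
      then have "t * Hu \<le> t * (Hv + I / lam + t * (D / (2 * lam)))"
        unfolding sp by (simp add: algebra_simps)
      then have "Hu \<le> Hv + I / lam + t * (D / (2 * lam))" using t by simp
      then show ?thesis unfolding I_def D_def by simp
    qed
    have "Hu \<le> Hv + inner (u - w) (v - u) / lam"
      by (rule small_t_le[OF key]) (use lam in auto)
    moreover have "inner ((1 / lam) *\<^sub>R (w - u)) (v - u) = - (inner (u - w) (v - u) / lam)"
    proof -
      have "w - u = - (u - w)" by simp
      then show ?thesis by (simp only: inner_scaleR_left inner_minus_left) simp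
    qed
    ultimately show ?thesis using Hu real by simp
  qed
  with hu show ?thesis by blast
qed
lemma VI_min:
  fixes h :: "'a::real_inner \<Rightarrow> ereal"
  assumes lam: "lam > 0" and Hu: "h u = ereal Hu"
    and vi: "\<forall>v. h u + ereal (inner ((1 / lam) *\<^sub>R (w - u)) (v - u)) \<le> h v"
  shows "h u + ereal ((norm (u - w))\<^sup>2 / (2 * lam) + (norm (v - u))\<^sup>2 / (2 * lam))
           \<le> h v + ereal ((norm (v - w))\<^sup>2 / (2 * lam))"
proof (cases "h v")
  case PInf then show ?thesis using Hu by simp
next
  case MInf then show ?thesis using vi[rule_format, of v] Hu by simp
next
  case (real Hv)
  have i: "Hu + inner ((1 / lam) *\<^sub>R (w - u)) (v - u) \<le> Hv" using vi[rule_format, of v] Hu real by simp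
  have "v - w = (v - u) + (u - w)" by simp
  then have e: "(norm (v - w))\<^sup>2 = (norm (v - u))\<^sup>2 + 2 * inner (v - u) (u - w) + (norm (u - w))\<^sup>2"
    by (metis nsq_add)
  have "inner ((1 / lam) *\<^sub>R (w - u)) (v - u) = - inner (v - u) (u - w) / lam"
    using lam by (simp add: inner_commute inner_diff_left inner_diff_right field_simps)
  with i have "Hu - inner (v - u) (u - w) / lam \<le> Hv" by simp
  moreover have "((norm (v - u))\<^sup>2 + 2 * inner (v - u) (u - w) + (norm (u - w))\<^sup>2) / (2 * lam)
     = (norm (v - u))\<^sup>2 / (2 * lam) + inner (v - u) (u - w) / lam + (norm (u - w))\<^sup>2 / (2 * lam)"
    using lam by (simp add: field_simps)
  ultimately have "Hu + (norm (u - w))\<^sup>2 / (2 * lam) + (norm (v - u))\<^sup>2 / (2 * lam) \<le> Hv + (norm (v - w))\<^sup>2 / (2 * lam)"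
    unfolding e by linarith
  then show ?thesis using Hu real by simp
qed

lemma prox_unique_ex:
  fixes h :: "'a::euclidean_space \<Rightarrow> ereal"
  assumes pcc: "proper_closed_convex h" and lam: "lam > 0"
  shows "\<exists>!u. \<forall>v. h u + ereal ((norm (u - w))\<^sup>2 / (2 * lam)) \<le> h v + ereal ((norm (v - w))\<^sup>2 / (2 * lam))"
proof -
  obtain u where u: "\<forall>v. h u + ereal ((norm (u - w))\<^sup>2 / (2 * lam)) \<le> h v + ereal ((norm (v - w))\<^sup>2 / (2 * lam))"
    using prox_exists[OF pcc lam] by blast
  have pf: "proper_fun h" using pcc by (simp add: proper_closed_convex_def)
  have mv: "h u < \<infinity> \<and> (\<forall>v. h u + ereal (inner ((1 / lam) *\<^sub>R (w - u)) (v - u)) \<le> h v)"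
    by (rule min_VI[OF pcc lam u])
  have "h u < \<infinity>" and vi: "\<forall>v. h u + ereal (inner ((1 / lam) *\<^sub>R (w - u)) (v - u)) \<le> h v"
    using mv by auto
  then obtain Hu where Hu: "h u = ereal Hu" using pf by (cases "h u") (auto simp: proper_fun_def)
  show ?thesis
  proof (rule ex1I[of _ u])
    fix u' assume u': "\<forall>v. h u' + ereal ((norm (u' - w))\<^sup>2 / (2 * lam)) \<le> h v + ereal ((norm (v - w))\<^sup>2 / (2 * lam))"
    have a: "h u + ereal ((norm (u - w))\<^sup>2 / (2 * lam) + (norm (u' - u))\<^sup>2 / (2 * lam))
           \<le> h u' + ereal ((norm (u' - w))\<^sup>2 / (2 * lam))" by (rule VI_min[OF lam Hu vi])
    have b: "h u' + ereal ((norm (u' - w))\<^sup>2 / (2 * lam)) \<le> h u + ereal ((norm (u - w))\<^sup>2 / (2 * lam))"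
      using u' by blast
    from a b Hu have "(norm (u' - u))\<^sup>2 / (2 * lam) \<le> 0"
      by (cases "h u'") auto
    then have "norm (u' - u) = 0" using lam
      by (simp add: divide_le_0_iff)
    then show "u' = u" by simp
  qed (rule u)
qed

lemma prox_min:
  fixes h :: "'a::euclidean_space \<Rightarrow> ereal"
  assumes pcc: "proper_closed_convex h" and lam: "lam > 0"
  shows "\<forall>v. h (Prox lam h w) + ereal ((norm (Prox lam h w - w))\<^sup>2 / (2 * lam)) \<le> h v + ereal ((norm (v - w))\<^sup>2 / (2 * lam))"
  unfolding Prox_def by (rule theI'[OF prox_unique_ex[OF pcc lam]])

lemma prox_VI:
  fixes h :: "'a::euclidean_space \<Rightarrow> ereal"
  assumes pcc: "proper_closed_convex h" and lam: "lam > 0"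
  shows "h (Prox lam h w) < \<infinity> \<and>
    (\<forall>v. h (Prox lam h w) + ereal (inner ((1 / lam) *\<^sub>R (w - Prox lam h w)) (v - Prox lam h w)) \<le> h v)"
  by (rule min_VI[OF pcc lam prox_min[OF pcc lam]])

lemma prox_eq:
  fixes h :: "'a::euclidean_space \<Rightarrow> ereal"
  assumes pcc: "proper_closed_convex h" and lam: "lam > 0" and Hu: "h u = ereal Hu"
    and vi: "\<forall>v. h u + ereal (inner ((1 / lam) *\<^sub>R (w - u)) (v - u)) \<le> h v"
  shows "Prox lam h w = u"
proof -
  have m: "\<forall>v. h u + ereal ((norm (u - w))\<^sup>2 / (2 * lam)) \<le> h v + ereal ((norm (v - w))\<^sup>2 / (2 * lam))"
  proof
    fix v
    have "h u + ereal ((norm (u - w))\<^sup>2 / (2 * lam)) \<le> h u + ereal ((norm (u - w))\<^sup>2 / (2 * lam) + (norm (v - u))\<^sup>2 / (2 * lam))"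
      using Hu lam by simp
    also have "\<dots> \<le> h v + ereal ((norm (v - w))\<^sup>2 / (2 * lam))" by (rule VI_min[OF lam Hu vi])
    finally show "h u + ereal ((norm (u - w))\<^sup>2 / (2 * lam)) \<le> h v + ereal ((norm (v - w))\<^sup>2 / (2 * lam))" .
  qed
  show ?thesis unfolding Prox_def
    by (rule the1_equality[OF prox_unique_ex[OF pcc lam] m])
qed



lemma fenchel_epi:
  fixes f :: "'a::real_inner \<Rightarrow> ereal"
  assumes pf: "\<forall>x. f x \<noteq> - \<infinity>"
  shows "eepigraph (fenchel_conj f) = (\<Inter>u\<in>{u. f u \<noteq> \<infinity>}. {p. inner (u, -1::real) p \<le> real_of_ereal (f u)})"
proof (intro set_eqI iffI)
  fix p :: "'a \<times> real"
  obtain y t where p: "p = (y, t)" by (cases p)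
  {
    assume "p \<in> eepigraph (fenchel_conj f)"
    then have le: "\<And>u. ereal (inner y u) - f u \<le> ereal t"
      unfolding p eepigraph_def fenchel_conj_def by (auto simp: SUP_le_iff)
    show "p \<in> (\<Inter>u\<in>{u. f u \<noteq> \<infinity>}. {p. inner (u, -1::real) p \<le> real_of_ereal (f u)})"
    proof (intro INT_I CollectI)
      fix u assume "u \<in> {u. f u \<noteq> \<infinity>}"
      then obtain c where c: "f u = ereal c" using pf by (cases "f u") auto
      show "inner (u, -1::real) p \<le> real_of_ereal (f u)"
        using le[of u] c unfolding p by (simp add: inner_Pair inner_commute)
    qed
  }
  {
    assume a: "p \<in> (\<Inter>u\<in>{u. f u \<noteq> \<infinity>}. {p. inner (u, -1::real) p \<le> real_of_ereal (f u)})"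
    have "ereal (inner y u) - f u \<le> ereal t" for u
    proof (cases "f u")
      case (real c)
      then have "u \<in> {u. f u \<noteq> \<infinity>}" by simp
      then have "p \<in> {p. inner (u, -1::real) p \<le> real_of_ereal (f u)}" using a by (rule INT_D[rotated])
      then have "inner (u, -1::real) p \<le> real_of_ereal (f u)" by simp
      then have "inner (u, -1::real) p \<le> c" using real by simp
      then show ?thesis using real unfolding p by (simp add: inner_Pair inner_commute)
    next
      case PInf then show ?thesis by simp
    next
      case MInf then show ?thesis using pf by simp
    qed
    then show "p \<in> eepigraph (fenchel_conj f)"
      unfolding p eepigraph_def fenchel_conj_def by (auto simp: SUP_le_iff)
  }
qed

lemma fenchel_pcc:
  fixes f :: "'a::euclidean_space \<Rightarrow> ereal"
  assumes pcc: "proper_closed_convex f" and ne: "\<exists>y. fenchel_conj f y < \<infinity>"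
  shows "proper_closed_convex (fenchel_conj f)"
proof -
  have pf: "proper_fun f" using pcc by (simp add: proper_closed_convex_def)
  have nm: "\<forall>x. f x \<noteq> - \<infinity>" using pf by (simp add: proper_fun_def)
  obtain x0 where x0: "f x0 < \<infinity>" using pf by (auto simp: proper_fun_def)
  then obtain a0 where a0: "f x0 = ereal a0" using nm by (cases "f x0") auto
  have "fenchel_conj f y \<noteq> - \<infinity>" for y
  proof -
    have "ereal (inner y x0) - f x0 \<le> fenchel_conj f y"
      unfolding fenchel_conj_def by (rule SUP_upper) simp
    then show ?thesis using a0 by auto
  qed
  then have p1: "proper_fun (fenchel_conj f)" using ne by (simp add: proper_fun_def)
  have "closed (eepigraph (fenchel_conj f))"
    unfolding fenchel_epi[OF nm] by (intro closed_INT ballI closed_halfspace_le)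
  moreover have "convex (eepigraph (fenchel_conj f))"
    unfolding fenchel_epi[OF nm] by (intro convex_INT ballI convex_halfspace_le)
  ultimately show ?thesis using p1
    by (simp add: proper_closed_convex_def closed_fun_def convex_fun_def)
qed



lemma alg_scalar:
  fixes \<psi> \<delta> \<phi> Q W X Dd Dq Dw :: real
  assumes \<psi>: "\<psi> > 1" and \<delta>: "0 < \<delta>" "\<delta> \<le> \<phi>" and Dd: "Dd \<ge> 0"
    and nn: "(1 + \<psi>)\<^sup>2 * (Q - 2 * X + W) - 2 * (1 + \<psi>) * \<delta> * \<psi>\<^sup>2 * (Dq - Dw) + \<delta>\<^sup>2 * \<psi>^4 * Dd \<ge> 0"
  shows "- 2 * (Q - X) + 2 * \<delta> * \<psi> * (Dq - Dw - Dd)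
     \<le> (\<psi> / (\<psi> - 1)) * (W - ((\<psi> - 1)\<^sup>2 * Q + 2 * (\<psi> - 1) * X + W) / \<psi>\<^sup>2)
        - (2 * \<psi> - \<psi> ^ 3 * \<phi> / (1 + \<psi>)) * \<delta> * Dd"
proof -
  define N where "N = (1 + \<psi>)\<^sup>2 * (Q - 2 * X + W) - 2 * (1 + \<psi>) * \<delta> * \<psi>\<^sup>2 * (Dq - Dw) + \<delta>\<^sup>2 * \<psi>^4 * Dd"
  have eq: "(\<psi> / (\<psi> - 1)) * (W - ((\<psi> - 1)\<^sup>2 * Q + 2 * (\<psi> - 1) * X + W) / \<psi>\<^sup>2)
        - (2 * \<psi> - \<psi> ^ 3 * \<phi> / (1 + \<psi>)) * \<delta> * Dd - (- 2 * (Q - X) + 2 * \<delta> * \<psi> * (Dq - Dw - Dd))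
        = N / (\<psi> * (1 + \<psi>)) + (\<phi> - \<delta>) * (\<delta> * \<psi> ^ 3 / (1 + \<psi>)) * Dd"
  proof -
    have h1: "inverse \<psi> * \<psi> = 1" "inverse (\<psi> - 1) * (\<psi> - 1) = 1" "inverse (1 + \<psi>) * (1 + \<psi>) = 1"
      using \<psi> by auto
    have h2: "inverse (\<psi>\<^sup>2) = (inverse \<psi>)\<^sup>2" "inverse (\<psi> * (1 + \<psi>)) = inverse \<psi> * inverse (1 + \<psi>)"
      by (simp_all add: power_inverse)
    show ?thesis unfolding N_def divide_inverse h2
      using h1 by algebra
  qed
  have "N / (\<psi> * (1 + \<psi>)) \<ge> 0" using nn \<psi> unfolding N_def by simp
  moreover have "(\<phi> - \<delta>) * (\<delta> * \<psi> ^ 3 / (1 + \<psi>)) * Dd \<ge> 0" using \<psi> \<delta> Dd by simp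
  ultimately show ?thesis using eq by linarith
qed

lemma alg_x:
  fixes p q s :: "'a::real_inner" and \<psi> \<delta> \<phi> :: real
  assumes \<psi>: "\<psi> > 1" and \<delta>: "0 < \<delta>" "\<delta> \<le> \<phi>"
    and w: "w = ((\<psi> - 1) / \<psi>) *\<^sub>R p + (1 / \<psi>) *\<^sub>R s"
    and w': "w' = ((\<psi> - 1) / \<psi>) *\<^sub>R q + (1 / \<psi>) *\<^sub>R w"
  shows "2 * inner (q - w) (- q) + 2 * \<delta> * inner (p - s) (q - p)
     \<le> (\<psi> / (\<psi> - 1)) * ((norm w)\<^sup>2 - (norm w')\<^sup>2) - (2 * \<psi> - \<psi> ^ 3 * \<phi> / (1 + \<psi>)) * \<delta> * (norm (q - p))\<^sup>2"
proof -
  define d where "d = q - p"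
  have p: "p = q - d" by (simp add: d_def)
  have ps: "p - s = \<psi> *\<^sub>R (q - w - d)"
  proof -
    have "\<psi> *\<^sub>R w = (\<psi> - 1) *\<^sub>R p + s" using \<psi> unfolding w by (simp add: scaleR_add_right)
    then have "s = \<psi> *\<^sub>R w - (\<psi> - 1) *\<^sub>R p" by simp
    then have "p - s = \<psi> *\<^sub>R (p - w)" by (simp add: algebra_simps)
    then show ?thesis by (simp add: p algebra_simps)
  qed
  have w'2: "w' = (1 / \<psi>) *\<^sub>R ((\<psi> - 1) *\<^sub>R q + w)"
    unfolding w' by (simp add: scaleR_add_right)
  define Q where "Q = inner q q"
  define W where "W = inner w w"
  define X where "X = inner q w"
  define Dd where "Dd = inner d d"
  define Dq where "Dq = inner d q"
  define Dw where "Dw = inner d w"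
  have e1: "inner (q - w) (- q) = - (Q - X)"
    unfolding Q_def X_def by (simp add: inner_diff_left inner_diff_right inner_commute)
  have e2: "inner (p - s) (q - p) = \<psi> * (Dq - Dw - Dd)"
    unfolding ps d_def[symmetric] Dq_def Dw_def Dd_def
    by (simp add: inner_diff_left inner_diff_right inner_commute)
  have e3: "(norm w')\<^sup>2 = ((\<psi> - 1)\<^sup>2 * Q + 2 * (\<psi> - 1) * X + W) / \<psi>\<^sup>2"
  proof -
    have a: "(norm w')\<^sup>2 = (norm ((\<psi> - 1) *\<^sub>R q + w))\<^sup>2 / \<psi>\<^sup>2"
      unfolding w'2 by (simp add: power_mult_distrib power_divide)
    have b: "(norm ((\<psi> - 1) *\<^sub>R q + w))\<^sup>2 = (\<psi> - 1)\<^sup>2 * Q + 2 * (\<psi> - 1) * X + W"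
      unfolding nsq_add Q_def X_def W_def by (simp add: power_mult_distrib power2_norm_eq_inner)
    show ?thesis unfolding a b ..
  qed
  have e4: "(norm w)\<^sup>2 = W" unfolding W_def by (simp add: power2_norm_eq_inner)
  have e5: "(norm (q - p))\<^sup>2 = Dd" unfolding Dd_def d_def by (simp add: power2_norm_eq_inner)
  have nn0: "0 \<le> (norm ((1 + \<psi>) *\<^sub>R (q - w) - (\<delta> * \<psi>\<^sup>2) *\<^sub>R d))\<^sup>2" by simp
  also have "\<dots> = (1 + \<psi>)\<^sup>2 * (Q - 2 * X + W) - 2 * (1 + \<psi>) * \<delta> * \<psi>\<^sup>2 * (Dq - Dw) + \<delta>\<^sup>2 * \<psi>^4 * Dd"
    unfolding power2_norm_eq_inner Q_def X_def W_def Dq_def Dw_def Dd_def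
    by (simp add: inner_diff_left inner_diff_right inner_commute power2_eq_square power4_eq_xxxx algebra_simps)
  finally have nn: "0 \<le> (1 + \<psi>)\<^sup>2 * (Q - 2 * X + W) - 2 * (1 + \<psi>) * \<delta> * \<psi>\<^sup>2 * (Dq - Dw) + \<delta>\<^sup>2 * \<psi>^4 * Dd" .
  have Dd0: "Dd \<ge> 0" unfolding Dd_def by simp
  show ?thesis
    unfolding e1 e2 e3 e4 e5
    using alg_scalar[OF \<psi> \<delta> Dd0 nn] by (simp add: algebra_simps)
qed



locale pd =
  fixes f :: "'b::euclidean_space \<Rightarrow> ereal"
    and g :: "'a::euclidean_space \<Rightarrow> ereal"
    and \<Phi> :: "'a \<Rightarrow> 'b \<Rightarrow> real"
    and gx :: "'a \<Rightarrow> 'b \<Rightarrow> 'a" and gy :: "'a \<Rightarrow> 'b \<Rightarrow> 'b"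
    and \<psi> \<xi> \<phi> \<tau>max \<nu> \<mu> \<eta> \<beta> :: real and M :: nat
    and x :: "nat \<Rightarrow> 'a" and y :: "nat \<Rightarrow> 'b" and z :: "nat \<Rightarrow> 'a"
    and \<tau> \<delta> :: "nat \<Rightarrow> real"
  assumes f: "proper_closed_convex f"
    and g: "proper_closed_convex g"
    and \<Phi>_cont: "continuous_on (edom g \<times> edom (fenchel_conj f)) (\<lambda>(u, v). \<Phi> u v)"
    and A1_nonempty: "saddle_set g (fenchel_conj f) gx gy \<noteq> {}"
    and A1_finite: "\<forall>(xs, ys) \<in> saddle_set g (fenchel_conj f) gx gy.
                      \<bar>g xs + ereal (\<Phi> xs ys) - fenchel_conj f ys\<bar> \<noteq> \<infinity>"
    and A2_x: "\<forall>v \<in> edom (fenchel_conj f).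
                 convex_on (edom g) (\<lambda>u. \<Phi> u v) \<and>
                 (\<forall>u \<in> edom g. ((\<lambda>u'. \<Phi> u' v) has_derivative (\<lambda>h. inner (gx u v) h)) (at u))"
    and A2_y: "\<forall>u \<in> edom g.
                 concave_on (edom (fenchel_conj f)) (\<lambda>v. \<Phi> u v) \<and>
                 (\<forall>v \<in> edom (fenchel_conj f).
                    ((\<lambda>v'. \<Phi> u v') has_derivative (\<lambda>h. inner (gy u v) h)) (at v))"
    and A2_lip: "\<forall>X Y. bounded (X :: 'a set) \<longrightarrow> bounded (Y :: 'b set) \<longrightarrow>
                   (\<exists>Lyy Lxx Lxy. Lyy \<ge> 0 \<and> Lxx \<ge> 0 \<and> Lxy > 0 \<and>
                     (\<forall>u \<in> X \<inter> edom g. \<forall>u' \<in> X \<inter> edom g.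
                      \<forall>v \<in> Y \<inter> edom (fenchel_conj f). \<forall>v' \<in> Y \<inter> edom (fenchel_conj f).
                        norm (gy u v - gy u v') \<le> Lyy * norm (v - v') \<and>
                        norm (gx u v - gx u' v') \<le> Lxx * norm (u - u') + Lxy * norm (v - v')))"
    and \<psi>: "1 < \<psi>" "\<psi> < 1 + sqrt 3"
    and \<xi>: "\<xi> > 0" and \<phi>: "\<phi> > 1"
    and \<omega>: "2 * \<psi> - \<xi> - \<psi> ^ 3 * \<phi> / (1 + \<psi>) > 0"
    and \<tau>max: "\<tau>max > 0"
    and \<nu>: "0 < \<nu>" "\<nu> < 1" and \<mu>: "0 < \<mu>" "\<mu> < 1" and \<eta>: "0 \<le> \<eta>" "\<eta> < 1"
    and M: "M \<ge> 1" and \<beta>: "\<beta> > 0"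
    and x0: "x 0 \<in> edom g" and y0: "y 0 \<in> edom (fenchel_conj f)"
    and \<tau>0: "0 < \<tau> 0" "\<tau> 0 \<le> \<tau>max"
    and gen: "pdacl_seq g (fenchel_conj f) \<Phi> gx gy \<psi> \<xi> \<phi> \<tau>max \<nu> \<mu> \<eta> M \<beta> x y z \<tau> \<delta>"
begin

abbreviation "fs \<equiv> fenchel_conj f"
definition "G u = real_of_ereal (g u)"
definition "F v = real_of_ereal (fs v)"
definition "\<omega> = 2 * \<psi> - \<xi> - \<psi> ^ 3 * \<phi> / (1 + \<psi>)"
definition "R i = pdacl_r \<omega> \<beta> (\<delta> (i - 1)) (x i) (x (i - 1)) (y i) (y (i - 1))"
definition "cc n = pdacl_c \<eta> M R n"
definition "tb n = min (\<phi> * \<tau> (n - 1)) \<tau>max"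
definition "yt n t = Prox (\<beta> * t) fs (y (n - 1) + (\<beta> * t) *\<^sub>R gy (x n) (y (n - 1)))"

lemma \<omega>_pos: "\<omega> > 0" using \<omega> by (simp add: \<omega>_def)

lemma gen_step:
  assumes n: "n \<ge> 1"
  shows "z n = ((\<psi> - 1) / \<psi>) *\<^sub>R x (n - 1) + (1 / \<psi>) *\<^sub>R z (n - 1)"
    and "x n = Prox (\<tau> (n - 1)) g (z n - \<tau> (n - 1) *\<^sub>R gx (x (n - 1)) (y (n - 1)))"
    and "\<exists>i. \<tau> n = tb n * \<mu> ^ i \<and> y n = yt n (\<tau> n) \<and>
            pdacl_test \<Phi> gx gy \<xi> \<omega> \<nu> \<eta> \<beta> M x y \<tau> \<delta> n (\<tau> n) (y n) \<and>
            (\<forall>j<i. \<not> pdacl_test \<Phi> gx gy \<xi> \<omega> \<nu> \<eta> \<beta> M x y \<tau> \<delta> n (tb n * \<mu> ^ j) (yt n (tb n * \<mu> ^ j)))"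
    and "\<delta> n = \<tau> n / \<tau> (n - 1)"
proof -
  have all: "z 0 = x 0 \<and> \<delta> 0 = 1 \<and> (\<forall>n\<ge>1.
         z n = ((\<psi> - 1) / \<psi>) *\<^sub>R x (n - 1) + (1 / \<psi>) *\<^sub>R z (n - 1) \<and>
         x n = Prox (\<tau> (n - 1)) g (z n - \<tau> (n - 1) *\<^sub>R gx (x (n - 1)) (y (n - 1))) \<and>
         (\<exists>i::nat.
               \<tau> n = min (\<phi> * \<tau> (n - 1)) \<tau>max * \<mu> ^ i \<and> y n = Prox (\<beta> * \<tau> n) fs (y (n - 1) + (\<beta> * \<tau> n) *\<^sub>R gy (x n) (y (n - 1))) \<and>
               pdacl_test \<Phi> gx gy \<xi> \<omega> \<nu> \<eta> \<beta> M x y \<tau> \<delta> n (\<tau> n) (y n) \<and>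
               (\<forall>j<i. \<not> pdacl_test \<Phi> gx gy \<xi> \<omega> \<nu> \<eta> \<beta> M x y \<tau> \<delta> n
                          (min (\<phi> * \<tau> (n - 1)) \<tau>max * \<mu> ^ j) (Prox (\<beta> * (min (\<phi> * \<tau> (n - 1)) \<tau>max * \<mu> ^ j)) fs (y (n - 1) + (\<beta> * (min (\<phi> * \<tau> (n - 1)) \<tau>max * \<mu> ^ j)) *\<^sub>R gy (x n) (y (n - 1)))))) \<and>
         \<delta> n = \<tau> n / \<tau> (n - 1))"
    using gen unfolding pdacl_seq_def Let_def \<omega>_def[symmetric] .
  then have A: "z n = ((\<psi> - 1) / \<psi>) *\<^sub>R x (n - 1) + (1 / \<psi>) *\<^sub>R z (n - 1) \<and>
         x n = Prox (\<tau> (n - 1)) g (z n - \<tau> (n - 1) *\<^sub>R gx (x (n - 1)) (y (n - 1))) \<and>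
         (\<exists>i::nat.
               \<tau> n = min (\<phi> * \<tau> (n - 1)) \<tau>max * \<mu> ^ i \<and> y n = Prox (\<beta> * \<tau> n) fs (y (n - 1) + (\<beta> * \<tau> n) *\<^sub>R gy (x n) (y (n - 1))) \<and>
               pdacl_test \<Phi> gx gy \<xi> \<omega> \<nu> \<eta> \<beta> M x y \<tau> \<delta> n (\<tau> n) (y n) \<and>
               (\<forall>j<i. \<not> pdacl_test \<Phi> gx gy \<xi> \<omega> \<nu> \<eta> \<beta> M x y \<tau> \<delta> n
                          (min (\<phi> * \<tau> (n - 1)) \<tau>max * \<mu> ^ j) (Prox (\<beta> * (min (\<phi> * \<tau> (n - 1)) \<tau>max * \<mu> ^ j)) fs (y (n - 1) + (\<beta> * (min (\<phi> * \<tau> (n - 1)) \<tau>max * \<mu> ^ j)) *\<^sub>R gy (x n) (y (n - 1)))))) \<and>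
         \<delta> n = \<tau> n / \<tau> (n - 1)"
    using n by blast
  show "z n = ((\<psi> - 1) / \<psi>) *\<^sub>R x (n - 1) + (1 / \<psi>) *\<^sub>R z (n - 1)" using A by blast
  show "x n = Prox (\<tau> (n - 1)) g (z n - \<tau> (n - 1) *\<^sub>R gx (x (n - 1)) (y (n - 1)))" using A by blast
  show "\<delta> n = \<tau> n / \<tau> (n - 1)" using A by blast
  show "\<exists>i. \<tau> n = tb n * \<mu> ^ i \<and> y n = yt n (\<tau> n) \<and>
            pdacl_test \<Phi> gx gy \<xi> \<omega> \<nu> \<eta> \<beta> M x y \<tau> \<delta> n (\<tau> n) (y n) \<and>
            (\<forall>j<i. \<not> pdacl_test \<Phi> gx gy \<xi> \<omega> \<nu> \<eta> \<beta> M x y \<tau> \<delta> n (tb n * \<mu> ^ j) (yt n (tb n * \<mu> ^ j)))"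
    unfolding tb_def yt_def using A by blast
qed

lemma z0: "z 0 = x 0" and \<delta>0: "\<delta> 0 = 1"
  using gen unfolding pdacl_seq_def Let_def by blast+

lemma tau_bounds: "0 < \<tau> n \<and> \<tau> n \<le> \<tau>max"
proof (induction n)
  case 0 then show ?case using \<tau>0 by simp
next
  case (Suc n)
  obtain i where i: "\<tau> (Suc n) = tb (Suc n) * \<mu> ^ i" using gen_step(3)[of "Suc n"] by auto
  have tb: "0 < tb (Suc n)" "tb (Suc n) \<le> \<tau>max" using Suc \<phi> \<tau>max by (auto simp: tb_def)
  have "\<mu> ^ i \<le> 1" "0 < \<mu> ^ i" using \<mu> by (auto simp: power_le_one)
  have a: "tb (Suc n) * \<mu> ^ i \<le> tb (Suc n)" by (rule mult_left_le) (use tb \<open>\<mu> ^ i \<le> 1\<close> in auto)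
  have b: "0 < tb (Suc n) * \<mu> ^ i" using tb \<open>0 < \<mu> ^ i\<close> by simp
  show ?case using i a b tb(2) by linarith
qed

lemma tau_pos: "0 < \<tau> n" and tau_max: "\<tau> n \<le> \<tau>max"
  using tau_bounds by auto

lemma tau_phi: assumes "n \<ge> 1" shows "\<tau> n \<le> \<phi> * \<tau> (n - 1)"
proof -
  obtain i where i: "\<tau> n = tb n * \<mu> ^ i" using gen_step(3)[OF assms] by auto
  have "tb n \<le> \<phi> * \<tau> (n - 1)" "0 < tb n" using tau_pos[of "n - 1"] \<phi> \<tau>max by (auto simp: tb_def)
  moreover have "\<mu> ^ i \<le> 1" "0 < \<mu> ^ i" using \<mu> by (auto simp: power_le_one)
  ultimately have "tb n * \<mu> ^ i \<le> tb n" by (simp add: mult_left_le)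
  then show ?thesis using i \<open>tb n \<le> \<phi> * \<tau> (n - 1)\<close> by simp
qed

lemma delta_eq: "n \<ge> 1 \<Longrightarrow> \<delta> n = \<tau> n / \<tau> (n - 1)" by (rule gen_step(4))

lemma delta_pos: "\<delta> n > 0"
  by (cases "n = 0") (use \<delta>0 delta_eq[of n] tau_pos in auto)

lemma delta_phi: "n \<ge> 1 \<Longrightarrow> \<delta> n \<le> \<phi>"
  using delta_eq tau_phi tau_pos[of "n - 1"] by (simp add: divide_le_eq)

end


lemma prox_VI_scaled:
  fixes h :: "'a::euclidean_space \<Rightarrow> ereal"
  assumes pcc: "proper_closed_convex h" and lam: "lam > 0"
  shows "Prox lam h w \<in> edom h"
    and "v \<in> edom h \<Longrightarrow> inner (w - Prox lam h w) (v - Prox lam h w)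
            \<le> lam * (real_of_ereal (h v) - real_of_ereal (h (Prox lam h w)))"
proof -
  let ?P = "Prox lam h w"
  have vi: "h ?P < \<infinity>" "\<forall>v. h ?P + ereal (inner ((1 / lam) *\<^sub>R (w - ?P)) (v - ?P)) \<le> h v"
    using prox_VI[OF pcc lam, of w] by auto
  then show "?P \<in> edom h" by (simp add: edom_def)
  have pf: "proper_fun h" using pcc by (simp add: proper_closed_convex_def)
  assume v: "v \<in> edom h"
  have hP: "h ?P = ereal (real_of_ereal (h ?P))" by (rule proper_finite[OF pf vi(1)])
  have hv: "h v = ereal (real_of_ereal (h v))" using v by (intro proper_finite[OF pf]) (simp add: edom_def)
  have "real_of_ereal (h ?P) + inner ((1 / lam) *\<^sub>R (w - ?P)) (v - ?P) \<le> real_of_ereal (h v)"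
    using vi(2)[rule_format, of v] hP hv by (metis ereal_less_eq(3) plus_ereal.simps(1))
  then have "inner (w - ?P) (v - ?P) / lam \<le> real_of_ereal (h v) - real_of_ereal (h ?P)"
    by simp
  then show "inner (w - ?P) (v - ?P) \<le> lam * (real_of_ereal (h v) - real_of_ereal (h ?P))"
    using lam by (simp add: divide_le_eq mult.commute)
qed

context pd begin

lemma pf_g: "proper_fun g" using g by (simp add: proper_closed_convex_def)

lemma saddle_ne: "\<exists>xs ys. (xs, ys) \<in> saddle_set g fs gx gy" using A1_nonempty by auto

lemma fs_ne: "\<exists>v. fs v < \<infinity>"
  using saddle_ne by (auto simp: saddle_set_def edom_def)

lemma pcc_fs: "proper_closed_convex fs" by (rule fenchel_pcc[OF f fs_ne])

lemma pf_fs: "proper_fun fs" using pcc_fs by (simp add: proper_closed_convex_def)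

lemma g_fin: "u \<in> edom g \<Longrightarrow> g u = ereal (G u)"
  unfolding G_def by (rule proper_finite[OF pf_g]) (simp add: edom_def)

lemma fs_fin: "v \<in> edom fs \<Longrightarrow> fs v = ereal (F v)"
  unfolding F_def by (rule proper_finite[OF pf_fs]) (simp add: edom_def)

lemma x_dom: "x n \<in> edom g"
proof (cases "n = 0")
  case True then show ?thesis using x0 by simp
next
  case False
  then have "x n = Prox (\<tau> (n - 1)) g (z n - \<tau> (n - 1) *\<^sub>R gx (x (n - 1)) (y (n - 1)))"
    using gen_step(2)[of n] by simp
  then show ?thesis using prox_VI_scaled(1)[OF g tau_pos] by simp
qed

lemma yt_dom: "t > 0 \<Longrightarrow> yt n t \<in> edom fs"
  unfolding yt_def using prox_VI_scaled(1)[OF pcc_fs] \<beta> by simp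

lemma y_eq: "n \<ge> 1 \<Longrightarrow> y n = yt n (\<tau> n)"
  using gen_step(3)[of n] by auto

lemma y_dom: "y n \<in> edom fs"
proof (cases "n = 0")
  case True then show ?thesis using y0 by simp
next
  case False
  then show ?thesis using y_eq[of n] yt_dom[OF tau_pos, of n n] by simp
qed

lemma xVI:
  assumes n: "n \<ge> 1" and v: "v \<in> edom g"
  shows "inner (z n - \<tau> (n - 1) *\<^sub>R gx (x (n - 1)) (y (n - 1)) - x n) (v - x n)
           \<le> \<tau> (n - 1) * (G v - G (x n))"
  using prox_VI_scaled(2)[OF g tau_pos[of "n - 1"] v, where w="z n - \<tau> (n - 1) *\<^sub>R gx (x (n - 1)) (y (n - 1))"]
    gen_step(2)[OF n] unfolding G_def by simp

lemma ytVI: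
  assumes t: "t > 0" and v: "v \<in> edom fs"
  shows "inner (y (n - 1) + (\<beta> * t) *\<^sub>R gy (x n) (y (n - 1)) - yt n t) (v - yt n t)
           \<le> (\<beta> * t) * (F v - F (yt n t))"
  using prox_VI_scaled(2)[OF pcc_fs _ v, where lam="\<beta> * t" and w="y (n - 1) + (\<beta> * t) *\<^sub>R gy (x n) (y (n - 1))"]
    t \<beta> unfolding F_def yt_def by simp

lemma yVI:
  assumes n: "n \<ge> 1" and v: "v \<in> edom fs"
  shows "inner (y (n - 1) + (\<beta> * \<tau> n) *\<^sub>R gy (x n) (y (n - 1)) - y n) (v - y n)
           \<le> (\<beta> * \<tau> n) * (F v - F (y n))"
  using ytVI[OF tau_pos v, of n n] y_eq[OF n] by simp

lemma saddle_props:
  assumes "(xs, ys) \<in> saddle_set g fs gx gy"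
  shows "xs \<in> edom g" "ys \<in> edom fs"
    and "v \<in> edom g \<Longrightarrow> G xs + inner (- gx xs ys) (v - xs) \<le> G v"
    and "w \<in> edom fs \<Longrightarrow> F ys + inner (gy xs ys) (w - ys) \<le> F w"
proof -
  have s: "xs \<in> edom g" "ys \<in> edom fs" "- gx xs ys \<in> subdiff g xs" "gy xs ys \<in> subdiff fs ys"
    using assms by (auto simp: saddle_set_def)
  then show "xs \<in> edom g" "ys \<in> edom fs" by auto
  show "G xs + inner (- gx xs ys) (v - xs) \<le> G v" if v: "v \<in> edom g"
  proof -
    have "g xs + ereal (inner (- gx xs ys) (v - xs)) \<le> g v" using s(3) by (simp add: subdiff_def)
    then show ?thesis using g_fin[OF s(1)] g_fin[OF v] by simp
  qed
  show "F ys + inner (gy xs ys) (w - ys) \<le> F w" if w: "w \<in> edom fs"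
  proof -
    have "fs ys + ereal (inner (gy xs ys) (w - ys)) \<le> fs w" using s(4) by (simp add: subdiff_def)
    then show ?thesis using fs_fin[OF s(2)] fs_fin[OF w] by simp
  qed
qed

lemma gradx:
  assumes "v \<in> edom fs" "u \<in> edom g" "u' \<in> edom g"
  shows "\<Phi> u' v \<ge> \<Phi> u v + inner (gx u v) (u' - u)"
  using A2_x assms by (intro grad_convex[of "edom g" "\<lambda>u. \<Phi> u v"]) auto

lemma grady:
  assumes "u \<in> edom g" "v \<in> edom fs" "v' \<in> edom fs"
  shows "\<Phi> u v' \<le> \<Phi> u v + inner (gy u v) (v' - v)"
  using A2_y assms by (intro grad_concave[of "edom fs" "\<lambda>v. \<Phi> u v"]) auto

lemma convex_dom_g: "convex (edom g)"
  using saddle_ne A2_x by (auto simp: saddle_set_def dest: convex_on_imp_convex)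

lemma convex_dom_fs: "convex (edom fs)"
  using saddle_ne A2_y by (auto simp: saddle_set_def dest: concave_on_imp_convex)

end


lemma stage1_scalar:
  fixes t0 t1 dl \<beta> a1 a2 a3 a4 a5 a6 a7 a8 Gxx GX1 GX2 Fyy FY1 Pxy1 P11 P1y P10 :: real
  assumes t1: "t1 = dl * t0" and pos: "t0 > 0" "dl > 0" "\<beta> > 0"
    and h2: "- a1 - t1 * a3 \<le> t1 * (Gxx - GX2)"
    and h1: "- a2 - t0 * a5 \<le> t0 * (GX2 - GX1)"
    and h3: "- a6 + (\<beta> * t1) * a7 \<le> (\<beta> * t1) * (Fyy - FY1)"
    and h4: "P11 + a4 \<le> Pxy1"
    and h5: "P1y \<le> P10 + a8"
  shows "t1 * ((GX1 + P1y - Fyy) - (Gxx + Pxy1 - FY1))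
         \<le> a1 + dl * a2 + t1 * (a3 - a4 + a5) + (1 / \<beta>) * a6 + t1 * (P10 + (a8 - a7) - P11)"
proof -
  have t1p: "t1 > 0" using t1 pos by simp
  have s1: "dl * (- a2 - t0 * a5) \<le> dl * (t0 * (GX2 - GX1))"
    by (rule mult_left_mono[OF h1]) (use pos in simp)
  then have s1': "- (dl * a2) - t1 * a5 \<le> t1 * GX2 - t1 * GX1"
    unfolding t1 by (simp add: algebra_simps)
  have s3: "(1 / \<beta>) * (- a6 + (\<beta> * t1) * a7) \<le> (1 / \<beta>) * ((\<beta> * t1) * (Fyy - FY1))"
    by (rule mult_left_mono[OF h3]) (use pos in simp)
  then have s3': "- ((1 / \<beta>) * a6) + t1 * a7 \<le> t1 * Fyy - t1 * FY1"
    using pos by (simp add: algebra_simps)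
  have s4: "t1 * (P11 + a4) \<le> t1 * Pxy1" using h4 t1p by (simp add: mult_left_mono)
  have s5: "t1 * P1y \<le> t1 * (P10 + a8)" using h5 t1p by (simp add: mult_left_mono)
  have h2': "- a1 - t1 * a3 \<le> t1 * Gxx - t1 * GX2" using h2 by (simp add: algebra_simps)
  show ?thesis using s1' s3' s4 s5 h2' by (simp add: algebra_simps)
qed

context pd begin

definition "Qf xx yy k = (\<psi> / (\<psi> - 1)) * (norm (z (k + 1) - xx))\<^sup>2 + (1 / \<beta>) * (norm (y (k - 1) - yy))\<^sup>2
   + \<omega> * \<delta> (k - 1) * (norm (x k - x (k - 1)))\<^sup>2"

lemma R_alt: "R n = \<omega> * \<delta> (n - 1) * (norm (x n - x (n - 1)))\<^sup>2 + (1 / \<beta>) * (norm (y n - y (n - 1)))\<^sup>2"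
  unfolding R_def pdacl_r_def by simp

lemma test_n:
  assumes n: "n \<ge> 1"
  shows "\<tau> n * \<tau> (n - 1) / \<xi> * (norm (gx (x n) (y n) - gx (x (n - 1)) (y (n - 1))))\<^sup>2
     + 2 * \<tau> n * (\<Phi> (x n) (y (n - 1)) + inner (gy (x n) (y (n - 1))) (y n - y (n - 1)) - \<Phi> (x n) (y n))
     \<le> \<nu> * R n + (1 - \<nu>) * cc n"
proof -
  have t: "pdacl_test \<Phi> gx gy \<xi> \<omega> \<nu> \<eta> \<beta> M x y \<tau> \<delta> n (\<tau> n) (y n)"
    using gen_step(3)[OF n] by auto
  have Rf: "(\<lambda>i. pdacl_r \<omega> \<beta> (\<delta> (i - 1)) (x i) (x (i - 1)) (y i) (y (i - 1))) = R"
    by (simp add: R_def fun_eq_iff)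
  show ?thesis using t unfolding pdacl_test_def Let_def Rf cc_def[symmetric] R_def[symmetric]
    by (simp add: mult.assoc)
qed

end


context pd begin

lemma one_step:
  assumes n: "n \<ge> 1" and xx: "xx \<in> edom g" and yy: "yy \<in> edom fs"
  shows "2 * \<tau> n * ((G (x n) + \<Phi> (x n) yy - F yy) - (G xx + \<Phi> xx (y n) - F (y n)))
         + Qf xx yy (Suc n) + (1 - \<nu>) * R n \<le> Qf xx yy n + (1 - \<nu>) * cc n"
proof -
  define X0 where "X0 = x (n - 1)"
  define X1 where "X1 = x n"
  define X2 where "X2 = x (Suc n)"
  define Z1 where "Z1 = z n"
  define Z2 where "Z2 = z (Suc n)"
  define Z3 where "Z3 = z (Suc (Suc n))"
  define Y0 where "Y0 = y (n - 1)"
  define Y1 where "Y1 = y n"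
  define A0 where "A0 = gx X0 Y0"
  define A1 where "A1 = gx X1 Y1"
  define B where "B = gy X1 Y0"
  define t0 where "t0 = \<tau> (n - 1)"
  define t1 where "t1 = \<tau> n"
  define dl where "dl = \<delta> n"
  have t0p: "t0 > 0" and t1p: "t1 > 0" using tau_pos by (auto simp: t0_def t1_def)
  have dlp: "dl > 0" using delta_pos by (simp add: dl_def)
  have dlphi: "dl \<le> \<phi>" using delta_phi[OF n] by (simp add: dl_def)
  have t1eq: "t1 = dl * t0" using delta_eq[OF n] t0p by (simp add: dl_def t0_def t1_def)
  have \<psi>1: "\<psi> > 1" using \<psi> by simp
  have Z2eq: "Z2 = ((\<psi> - 1) / \<psi>) *\<^sub>R X1 + (1 / \<psi>) *\<^sub>R Z1"
    using gen_step(1)[of "Suc n"] by (simp add: Z2_def X1_def Z1_def)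
  have Z3eq: "Z3 = ((\<psi> - 1) / \<psi>) *\<^sub>R X2 + (1 / \<psi>) *\<^sub>R Z2"
    using gen_step(1)[of "Suc (Suc n)"] by (simp add: Z3_def X2_def Z2_def)
  have X1d: "X1 \<in> edom g" "X2 \<in> edom g" "X0 \<in> edom g" using x_dom by (auto simp: X1_def X2_def X0_def)
  have Y1d: "Y1 \<in> edom fs" "Y0 \<in> edom fs" using y_dom by (auto simp: Y1_def Y0_def)
  have h2: "- inner (X2 - Z2) (xx - X2) - t1 * inner A1 (xx - X2) \<le> t1 * (G xx - G X2)"
  proof -
    have "inner (Z2 - t1 *\<^sub>R A1 - X2) (xx - X2) \<le> t1 * (G xx - G X2)"
      using xVI[of "Suc n" xx] xx by (simp add: Z2_def t1_def A1_def X1_def Y1_def X2_def)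
    moreover have "inner (Z2 - t1 *\<^sub>R A1 - X2) (xx - X2) = - inner (X2 - Z2) (xx - X2) - t1 * inner A1 (xx - X2)"
      by (simp add: inner_diff_left inner_diff_right algebra_simps)
    ultimately show ?thesis by simp
  qed
  have h1: "- inner (X1 - Z1) (X2 - X1) - t0 * inner A0 (X2 - X1) \<le> t0 * (G X2 - G X1)"
  proof -
    have "inner (Z1 - t0 *\<^sub>R A0 - X1) (X2 - X1) \<le> t0 * (G X2 - G X1)"
      using xVI[OF n X1d(2)] by (simp add: Z1_def t0_def A0_def X0_def Y0_def X1_def)
    moreover have "inner (Z1 - t0 *\<^sub>R A0 - X1) (X2 - X1) = - inner (X1 - Z1) (X2 - X1) - t0 * inner A0 (X2 - X1)"
      by (simp add: inner_diff_left inner_diff_right algebra_simps)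
    ultimately show ?thesis by simp
  qed
  have h3: "- inner (Y1 - Y0) (yy - Y1) + (\<beta> * t1) * inner B (yy - Y1) \<le> (\<beta> * t1) * (F yy - F Y1)"
  proof -
    have "inner (Y0 + (\<beta> * t1) *\<^sub>R B - Y1) (yy - Y1) \<le> (\<beta> * t1) * (F yy - F Y1)"
      using yVI[OF n yy] by (simp add: Y0_def Y1_def t1_def B_def X1_def)
    moreover have "inner (Y0 + (\<beta> * t1) *\<^sub>R B - Y1) (yy - Y1) = - inner (Y1 - Y0) (yy - Y1) + (\<beta> * t1) * inner B (yy - Y1)"
      by (simp add: inner_diff_left inner_diff_right inner_add_left algebra_simps)
    ultimately show ?thesis by simp
  qed
  have h4: "\<Phi> X1 Y1 + inner A1 (xx - X1) \<le> \<Phi> xx Y1"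
    using gradx[OF Y1d(1) X1d(1) xx] by (simp add: A1_def)
  have h5: "\<Phi> X1 yy \<le> \<Phi> X1 Y0 + inner B (yy - Y0)"
    using grady[OF X1d(1) Y1d(2) yy] by (simp add: B_def)
  note S1 = stage1_scalar[OF t1eq t0p dlp \<beta> h2 h1 h3 h4 h5]
  have th: "inner A1 (xx - X2) - inner A1 (xx - X1) + inner A0 (X2 - X1) = inner (A1 - A0) (X1 - X2)"
    by (simp add: inner_diff_left inner_diff_right algebra_simps)
  have bh: "inner B (yy - Y0) - inner B (yy - Y1) = inner B (Y1 - Y0)"
    by (simp add: inner_diff_right algebra_simps)
  have weq: "Z2 - xx = ((\<psi> - 1) / \<psi>) *\<^sub>R (X1 - xx) + (1 / \<psi>) *\<^sub>R (Z1 - xx)"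
  proof -
    have c: "(\<psi> - 1) / \<psi> + 1 / \<psi> = 1" using \<psi>1 by (simp add: field_simps)
    have "((\<psi> - 1) / \<psi>) *\<^sub>R (X1 - xx) + (1 / \<psi>) *\<^sub>R (Z1 - xx)
        = (((\<psi> - 1) / \<psi>) *\<^sub>R X1 + (1 / \<psi>) *\<^sub>R Z1) - ((\<psi> - 1) / \<psi> + 1 / \<psi>) *\<^sub>R xx"
      by (simp add: algebra_simps)
    then show ?thesis using c Z2eq by simp
  qed
  have w'eq: "Z3 - xx = ((\<psi> - 1) / \<psi>) *\<^sub>R (X2 - xx) + (1 / \<psi>) *\<^sub>R (Z2 - xx)"
  proof -
    have c: "(\<psi> - 1) / \<psi> + 1 / \<psi> = 1" using \<psi>1 by (simp add: field_simps)
    have "((\<psi> - 1) / \<psi>) *\<^sub>R (X2 - xx) + (1 / \<psi>) *\<^sub>R (Z2 - xx)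
        = (((\<psi> - 1) / \<psi>) *\<^sub>R X2 + (1 / \<psi>) *\<^sub>R Z2) - ((\<psi> - 1) / \<psi> + 1 / \<psi>) *\<^sub>R xx"
      by (simp add: algebra_simps)
    then show ?thesis using c Z3eq by simp
  qed
  note alg = alg_x[OF \<psi>1 dlp dlphi weq w'eq]
  have v1: "(X2 - xx) - (Z2 - xx) = X2 - Z2" "- (X2 - xx) = xx - X2" "(X1 - xx) - (Z1 - xx) = X1 - Z1"
    "(X2 - xx) - (X1 - xx) = X2 - X1" by auto
  define N2 where "N2 = (norm (Z2 - xx))\<^sup>2"
  define N3 where "N3 = (norm (Z3 - xx))\<^sup>2"
  define D where "D = (norm (X2 - X1))\<^sup>2"
  define D0 where "D0 = (norm (X1 - X0))\<^sup>2"
  define E0 where "E0 = (norm (Y0 - yy))\<^sup>2"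
  define E1 where "E1 = (norm (Y1 - yy))\<^sup>2"
  define EY where "EY = (norm (Y1 - Y0))\<^sup>2"
  define T where "T = (norm (A1 - A0))\<^sup>2"
  define I where "I = inner (A1 - A0) (X1 - X2)"
  define kp where "kp = \<psi> / (\<psi> - 1)"
  define a1 where "a1 = inner (X2 - Z2) (xx - X2)"
  define a2 where "a2 = inner (X1 - Z1) (X2 - X1)"
  define a6 where "a6 = inner (Y1 - Y0) (yy - Y1)"
  define Py where "Py = \<Phi> X1 Y0 + inner B (Y1 - Y0) - \<Phi> X1 Y1"
  define gap where "gap = (G X1 + \<Phi> X1 yy - F yy) - (G xx + \<Phi> xx Y1 - F Y1)"
  have S1': "t1 * gap \<le> a1 + dl * a2 + t1 * I + (1 / \<beta>) * a6 + t1 * Py"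
    using S1 unfolding th bh gap_def a1_def a2_def a6_def I_def Py_def by simp
  have alg': "2 * a1 + 2 * dl * a2 \<le> kp * N2 - kp * N3 - (2 * \<psi> - \<psi> ^ 3 * \<phi> / (1 + \<psi>)) * dl * D"
    using alg unfolding v1 a1_def a2_def kp_def N2_def N3_def D_def by (simp add: right_diff_distrib)
  have om: "(2 * \<psi> - \<psi> ^ 3 * \<phi> / (1 + \<psi>)) * dl * D = \<omega> * dl * D + \<xi> * dl * D"
    by (simp add: \<omega>_def algebra_simps)
  have young: "2 * (t1 * I) \<le> t1 * t0 / \<xi> * T + \<xi> * dl * D"
  proof -
    have "0 \<le> (dl / \<xi>) * (norm (t0 *\<^sub>R (A1 - A0) - \<xi> *\<^sub>R (X1 - X2)))\<^sup>2"
      using dlp \<xi> by simp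
    also have "(norm (t0 *\<^sub>R (A1 - A0) - \<xi> *\<^sub>R (X1 - X2)))\<^sup>2 = t0\<^sup>2 * T - 2 * t0 * \<xi> * I + \<xi>\<^sup>2 * D"
    proof -
      have d: "(norm (X1 - X2))\<^sup>2 = D" unfolding D_def by (simp add: norm_minus_commute)
      show ?thesis using nsq_diff[of "t0 *\<^sub>R (A1 - A0)" "\<xi> *\<^sub>R (X1 - X2)"] d
        by (simp add: power_mult_distrib T_def I_def)
    qed
    also have "(dl / \<xi>) * (t0\<^sup>2 * T - 2 * t0 * \<xi> * I + \<xi>\<^sup>2 * D) = t1 * t0 / \<xi> * T - 2 * (t1 * I) + \<xi> * dl * D"
      using \<xi> unfolding t1eq by (simp add: field_simps power2_eq_square)
    finally show ?thesis by linarith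
  qed
  have yid: "2 * a6 = E0 - E1 - EY"
    unfolding a6_def E0_def E1_def EY_def power2_norm_eq_inner
    by (simp add: inner_diff_left inner_diff_right inner_commute algebra_simps)
  have test: "t1 * t0 / \<xi> * T + 2 * t1 * Py \<le> \<nu> * R n + (1 - \<nu>) * cc n"
    using test_n[OF n] unfolding T_def Py_def A1_def A0_def B_def X1_def X0_def Y1_def Y0_def t1_def t0_def
    by simp
  have Rn: "R n = \<omega> * \<delta> (n - 1) * D0 + (1 / \<beta>) * EY"
    unfolding R_alt D0_def EY_def X1_def X0_def Y1_def Y0_def ..
  have Qn: "Qf xx yy n = kp * N2 + (1 / \<beta>) * E0 + \<omega> * \<delta> (n - 1) * D0"
    unfolding Qf_def kp_def N2_def E0_def D0_def Z2_def Y0_def X1_def X0_def by simp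
  have Qn1: "Qf xx yy (Suc n) = kp * N3 + (1 / \<beta>) * E1 + \<omega> * dl * D"
    unfolding Qf_def kp_def N3_def E1_def D_def Z3_def Y1_def X2_def X1_def dl_def by simp
  have b6: "2 * ((1 / \<beta>) * a6) = (1 / \<beta>) * E0 - (1 / \<beta>) * E1 - (1 / \<beta>) * EY"
  proof -
    have "2 * ((1 / \<beta>) * a6) = (1 / \<beta>) * (2 * a6)" by simp
    also have "\<dots> = (1 / \<beta>) * (E0 - E1 - EY)" using yid by simp
    also have "\<dots> = (1 / \<beta>) * E0 - (1 / \<beta>) * E1 - (1 / \<beta>) * EY" by (simp only: right_diff_distrib)
    finally show ?thesis .
  qed
  have gap2: "2 * \<tau> n * ((G (x n) + \<Phi> (x n) yy - F yy) - (G xx + \<Phi> xx (y n) - F (y n))) = 2 * (t1 * gap)"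
    unfolding gap_def t1_def X1_def Y1_def by simp
  have fin: "2 * (t1 * gap) \<le> 2 * a1 + 2 * (dl * a2) + 2 * (t1 * I) + 2 * ((1 / \<beta>) * a6) + 2 * (t1 * Py)"
    using S1' by linarith
  have alg'': "2 * a1 + 2 * (dl * a2) \<le> kp * N2 - kp * N3 - (\<omega> * dl * D + \<xi> * dl * D)"
    using alg' om by (simp add: mult.assoc)
  have test': "t1 * t0 / \<xi> * T + 2 * (t1 * Py) \<le> \<nu> * R n + (cc n - \<nu> * cc n)"
    using test by (simp add: algebra_simps)
  have e1: "(1 - \<nu>) * R n = R n - \<nu> * R n" by (simp add: algebra_simps)
  have e2: "(1 - \<nu>) * cc n = cc n - \<nu> * cc n" by (simp add: algebra_simps)
  show ?thesis
    unfolding gap2 Qn Qn1 e1 e2 using fin alg'' young b6 test' Rn by linarith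
qed

end


context pd begin

lemma R_nonneg: "R n \<ge> 0"
  unfolding R_alt using \<omega>_pos delta_pos[of "n - 1"] \<beta> by simp

lemma cc_nonneg: "cc n \<ge> 0"
proof -
  have e: "cc n = (if n \<le> 1 then 0 else \<eta> / real (card {max (n - M) 1..<n}) * (\<Sum>i\<in>{max (n - M) 1..<n}. R i))"
    by (simp only: cc_def pdacl_c_def)
  have nn: "0 \<le> \<eta> / real (card S) * (\<Sum>i\<in>S. R i)" for S
    by (intro mult_nonneg_nonneg divide_nonneg_nonneg sum_nonneg) (use R_nonneg \<eta> in auto)
  show ?thesis
  proof (cases "n \<le> 1")
    case True then show ?thesis unfolding e by simp
  next
    case False
    show ?thesis unfolding e if_not_P[OF False] by (rule nn)
  qed
qed

lemma Qf_nonneg: "Qf xx yy k \<ge> 0"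
proof -
  have "\<psi> / (\<psi> - 1) \<ge> 0" using \<psi> by simp
  then have a: "0 \<le> (\<psi> / (\<psi> - 1)) * (norm (z (k + 1) - xx))\<^sup>2" by (rule mult_nonneg_nonneg) simp
  have b: "0 \<le> (1 / \<beta>) * (norm (y (k - 1) - yy))\<^sup>2" using \<beta> by simp
  have c: "0 \<le> \<omega> * \<delta> (k - 1) * (norm (x k - x (k - 1)))\<^sup>2"
    using \<omega>_pos delta_pos[of "k - 1"] by simp
  show ?thesis unfolding Qf_def using a b c by linarith
qed

lemma gap_nonneg:
  assumes s: "(xs, ys) \<in> saddle_set g fs gx gy"
  shows "(G (x n) + \<Phi> (x n) ys - F ys) - (G xs + \<Phi> xs (y n) - F (y n)) \<ge> 0"
proof -
  have d: "xs \<in> edom g" "ys \<in> edom fs" using saddle_props[OF s] by auto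
  have a: "G xs + inner (- gx xs ys) (x n - xs) \<le> G (x n)" using saddle_props(3)[OF s x_dom] .
  have b: "\<Phi> xs ys + inner (gx xs ys) (x n - xs) \<le> \<Phi> (x n) ys" using gradx[OF d(2) d(1) x_dom] .
  have c: "F ys + inner (gy xs ys) (y n - ys) \<le> F (y n)" using saddle_props(4)[OF s y_dom] .
  have e: "\<Phi> xs (y n) \<le> \<Phi> xs ys + inner (gy xs ys) (y n - ys)" using grady[OF d(1) d(2) y_dom] .
  show ?thesis using a b c e by (simp add: inner_minus_left)
qed

lemma Q_step:
  assumes s: "(xs, ys) \<in> saddle_set g fs gx gy" and n: "n \<ge> 1"
  shows "Qf xs ys (Suc n) + (1 - \<nu>) * R n \<le> Qf xs ys n + (1 - \<nu>) * cc n"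
proof -
  have d: "xs \<in> edom g" "ys \<in> edom fs" using saddle_props[OF s] by auto
  have "0 \<le> 2 * \<tau> n * ((G (x n) + \<Phi> (x n) ys - F ys) - (G xs + \<Phi> xs (y n) - F (y n)))"
    using gap_nonneg[OF s, of n] tau_pos[of n] by simp
  then show ?thesis using one_step[OF n d] by linarith
qed

lemma cc_sum_bound:
  "(\<Sum>n\<in>{1..N}. cc n) \<le> \<eta> * (\<Sum>i\<in>{1..N}. R i) + real M * \<eta> * (\<Sum>i\<in>{1..M}. R i)"
proof -
  have split: "{1..N} = {n\<in>{1..N}. n \<le> M} \<union> {n\<in>{1..N}. M < n}" by auto
  have disj: "{n\<in>{1..N}. n \<le> M} \<inter> {n\<in>{1..N}. M < n} = {}" by auto
  have sum_split: "(\<Sum>n\<in>{1..N}. cc n) = (\<Sum>n\<in>{n\<in>{1..N}. n \<le> M}. cc n) + (\<Sum>n\<in>{n\<in>{1..N}. M < n}. cc n)"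
    by (subst split) (rule sum.union_disjoint, auto)
  have part1: "(\<Sum>n\<in>{n\<in>{1..N}. n \<le> M}. cc n) \<le> real M * \<eta> * (\<Sum>i\<in>{1..M}. R i)"
  proof -
    have each: "cc n \<le> \<eta> * (\<Sum>i\<in>{1..M}. R i)" if "n \<in> {n\<in>{1..N}. n \<le> M}" for n
    proof (cases "n \<le> 1")
      case True then show ?thesis unfolding cc_def pdacl_c_def using \<eta> R_nonneg by (simp add: sum_nonneg)
    next
      case False
      have I: "{max (n - M) 1..<n} = {1..<n}" using that by auto
      have card: "real (card {1..<n}) \<ge> 1" using False by simp
      have s0: "(\<Sum>i\<in>{1..<n}. R i) \<ge> 0" by (rule sum_nonneg) (simp add: R_nonneg)
      have "cc n = \<eta> / real (card {1..<n}) * (\<Sum>i\<in>{1..<n}. R i)"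
        unfolding cc_def pdacl_c_def I using False by simp
      also have "\<dots> \<le> \<eta> * (\<Sum>i\<in>{1..<n}. R i)"
      proof (rule mult_right_mono[OF _ s0])
        have "\<eta> / real (card {1..<n}) \<le> \<eta> / 1"
          by (rule divide_left_mono) (use card \<eta> in auto)
        then show "\<eta> / real (card {1..<n}) \<le> \<eta>" by simp
      qed
      also have "\<dots> \<le> \<eta> * (\<Sum>i\<in>{1..M}. R i)"
        using that \<eta> by (intro mult_left_mono sum_mono2) (auto simp: R_nonneg)
      finally show ?thesis .
    qed
    have "(\<Sum>n\<in>{n\<in>{1..N}. n \<le> M}. cc n) \<le> (\<Sum>n\<in>{n\<in>{1..N}. n \<le> M}. \<eta> * (\<Sum>i\<in>{1..M}. R i))"
      by (rule sum_mono) (rule each)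
    also have "\<dots> = real (card {n\<in>{1..N}. n \<le> M}) * (\<eta> * (\<Sum>i\<in>{1..M}. R i))" by simp
    also have "\<dots> \<le> real M * (\<eta> * (\<Sum>i\<in>{1..M}. R i))"
    proof (rule mult_right_mono)
      have "{n\<in>{1..N}. n \<le> M} \<subseteq> {1..M}" by auto
      then have "card {n\<in>{1..N}. n \<le> M} \<le> card {1..M}" by (rule card_mono[rotated]) simp
      then show "real (card {n\<in>{1..N}. n \<le> M}) \<le> real M" by simp
      show "0 \<le> \<eta> * (\<Sum>i\<in>{1..M}. R i)" using \<eta> by (simp add: sum_nonneg R_nonneg)
    qed
    finally show ?thesis by (simp add: mult.assoc)
  qed
  have part2: "(\<Sum>n\<in>{n\<in>{1..N}. M < n}. cc n) \<le> \<eta> * (\<Sum>i\<in>{1..N}. R i)"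
  proof -
    define A where "A = {n\<in>{1..N}. M < n}"
    have Mp: "real M > 0" using M by simp
    have ccA: "cc n = (\<eta> / real M) * (\<Sum>i\<in>{i\<in>{1..N}. n - M \<le> i \<and> i < n}. R i)" if "n \<in> A" for n
    proof -
      have I: "{max (n - M) 1..<n} = {i\<in>{1..N}. n - M \<le> i \<and> i < n}" using that M by (auto simp: A_def)
      have c: "card {max (n - M) 1..<n} = M" using that M by (auto simp: A_def)
      have nle: "\<not> n \<le> 1" using that M by (auto simp: A_def)
      show ?thesis unfolding cc_def pdacl_c_def if_not_P[OF nle] c unfolding I ..
    qed
    have e1: "(\<Sum>n\<in>A. cc n) = (\<eta> / real M) * (\<Sum>n\<in>A. \<Sum>i\<in>{i\<in>{1..N}. n - M \<le> i \<and> i < n}. R i)"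
      by (simp add: ccA sum_distrib_left)
    have "(\<Sum>n\<in>A. \<Sum>i\<in>{i\<in>{1..N}. n - M \<le> i \<and> i < n}. R i)
        = (\<Sum>i\<in>{1..N}. \<Sum>n\<in>{n\<in>A. n - M \<le> i \<and> i < n}. R i)"
      by (rule sum.swap_restrict) (auto simp: A_def)
    also have "\<dots> \<le> (\<Sum>i\<in>{1..N}. real M * R i)"
    proof (rule sum_mono)
      fix i assume "i \<in> {1..N}"
      have sub: "{n\<in>A. n - M \<le> i \<and> i < n} \<subseteq> {i<..i + M}" by auto
      have "card {n\<in>A. n - M \<le> i \<and> i < n} \<le> card {i<..i + M}" by (rule card_mono[OF _ sub]) simp
      then have "real (card {n\<in>A. n - M \<le> i \<and> i < n}) \<le> real M" by simp
      then show "(\<Sum>n\<in>{n\<in>A. n - M \<le> i \<and> i < n}. R i) \<le> real M * R i"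
        using R_nonneg[of i] by (simp add: mult_right_mono)
    qed
    also have "\<dots> = real M * (\<Sum>i\<in>{1..N}. R i)" by (simp add: sum_distrib_left)
    finally have S: "(\<Sum>n\<in>A. \<Sum>i\<in>{i\<in>{1..N}. n - M \<le> i \<and> i < n}. R i) \<le> real M * (\<Sum>i\<in>{1..N}. R i)" .
    have "(\<Sum>n\<in>A. cc n) \<le> (\<eta> / real M) * (real M * (\<Sum>i\<in>{1..N}. R i))"
      unfolding e1 by (rule mult_left_mono[OF S]) (use \<eta> Mp in simp)
    also have "\<dots> = \<eta> * (\<Sum>i\<in>{1..N}. R i)" using Mp by simp
    finally show ?thesis unfolding A_def .
  qed
  show ?thesis using sum_split part1 part2 by linarith
qed

end


lemma summable_from1:
  fixes f :: "nat \<Rightarrow> real"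
  assumes nn: "\<And>n. f n \<ge> 0" and b: "\<And>N. (\<Sum>i\<in>{1..N}. f i) \<le> B"
  shows "summable f"
proof (rule summableI_nonneg_bounded[where x = "f 0 + B"])
  show "0 \<le> f n" for n by (rule nn)
  fix n
  have "(\<Sum>i<n. f i) \<le> (\<Sum>i\<in>{0..n}. f i)" by (rule sum_mono2) (auto simp: nn)
  also have "\<dots> = f 0 + (\<Sum>i\<in>{Suc 0..n}. f i)" by (rule sum.atLeast_Suc_atMost) simp
  also have "\<dots> \<le> f 0 + B" using b[of n] by simp
  finally show "(\<Sum>i<n. f i) \<le> f 0 + B" .
qed

context pd begin

lemma telescope:
  assumes s: "(xs, ys) \<in> saddle_set g fs gx gy"
  shows "Qf xs ys (Suc N) + (1 - \<nu>) * (\<Sum>n\<in>{1..N}. R n) \<le> Qf xs ys 1 + (1 - \<nu>) * (\<Sum>n\<in>{1..N}. cc n)"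
proof (induction N)
  case 0 then show ?case by simp
next
  case (Suc N)
  have st: "Qf xs ys (Suc (Suc N)) + (1 - \<nu>) * R (Suc N) \<le> Qf xs ys (Suc N) + (1 - \<nu>) * cc (Suc N)"
    using Q_step[OF s, of "Suc N"] by simp
  have "(\<Sum>n\<in>{1..Suc N}. R n) = (\<Sum>n\<in>{1..N}. R n) + R (Suc N)" by simp
  moreover have "(\<Sum>n\<in>{1..Suc N}. cc n) = (\<Sum>n\<in>{1..N}. cc n) + cc (Suc N)" by simp
  ultimately show ?case using Suc st by (simp add: algebra_simps)
qed

definition "Cst xs ys = Qf xs ys 1 + (1 - \<nu>) * (real M * \<eta> * (\<Sum>i\<in>{1..M}. R i))"

lemma main_bound:
  assumes s: "(xs, ys) \<in> saddle_set g fs gx gy"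
  shows "Qf xs ys (Suc N) + (1 - \<nu>) * (1 - \<eta>) * (\<Sum>n\<in>{1..N}. R n) \<le> Cst xs ys"
proof -
  have a: "(1 - \<nu>) * (\<Sum>n\<in>{1..N}. cc n) \<le> (1 - \<nu>) * (\<eta> * (\<Sum>i\<in>{1..N}. R i) + real M * \<eta> * (\<Sum>i\<in>{1..M}. R i))"
    using cc_sum_bound[of N] \<nu> by (intro mult_left_mono) auto
  show ?thesis using telescope[OF s, of N] a unfolding Cst_def by (simp add: algebra_simps)
qed

lemma Q_bound:
  assumes s: "(xs, ys) \<in> saddle_set g fs gx gy" and k: "k \<ge> 1"
  shows "Qf xs ys k \<le> Cst xs ys"
proof -
  obtain N where N: "k = Suc N" using k by (cases k) auto
  have "0 \<le> (1 - \<nu>) * (1 - \<eta>) * (\<Sum>n\<in>{1..N}. R n)"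
    using \<nu> \<eta> R_nonneg by (intro mult_nonneg_nonneg sum_nonneg) auto
  then show ?thesis using main_bound[OF s, of N] unfolding N by linarith
qed

lemma R_sum_bound:
  assumes s: "(xs, ys) \<in> saddle_set g fs gx gy"
  shows "(\<Sum>n\<in>{1..N}. R n) \<le> Cst xs ys / ((1 - \<nu>) * (1 - \<eta>))"
proof -
  have p: "(1 - \<nu>) * (1 - \<eta>) > 0" using \<nu> \<eta> by simp
  have "(1 - \<nu>) * (1 - \<eta>) * (\<Sum>n\<in>{1..N}. R n) \<le> Cst xs ys"
    using main_bound[OF s, of N] Qf_nonneg[of xs ys "Suc N"] by linarith
  then show ?thesis using p by (simp add: le_divide_eq mult.commute)
qed

lemma R_summable: "summable R"
proof -
  obtain xs ys where s: "(xs, ys) \<in> saddle_set g fs gx gy" using saddle_ne by blast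
  show ?thesis by (rule summable_from1[OF R_nonneg R_sum_bound[OF s]])
qed

lemma cc_summable: "summable cc"
proof -
  obtain xs ys where s: "(xs, ys) \<in> saddle_set g fs gx gy" using saddle_ne by blast
  have "(\<Sum>n\<in>{1..N}. cc n) \<le> \<eta> * (Cst xs ys / ((1 - \<nu>) * (1 - \<eta>))) + real M * \<eta> * (\<Sum>i\<in>{1..M}. R i)" for N
  proof -
    have "\<eta> * (\<Sum>i\<in>{1..N}. R i) \<le> \<eta> * (Cst xs ys / ((1 - \<nu>) * (1 - \<eta>)))"
      using R_sum_bound[OF s, of N] \<eta> by (intro mult_left_mono) auto
    then show ?thesis using cc_sum_bound[of N] by linarith
  qed
  then show ?thesis by (rule summable_from1[OF cc_nonneg])
qed

lemma R_lim: "R \<longlonglongrightarrow> 0" using R_summable by (rule summable_LIMSEQ_zero)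
lemma cc_lim: "cc \<longlonglongrightarrow> 0" using cc_summable by (rule summable_LIMSEQ_zero)

lemma z_y_close:
  assumes s: "(xs, ys) \<in> saddle_set g fs gx gy"
  shows "k \<ge> 1 \<Longrightarrow> (norm (z (Suc k) - xs))\<^sup>2 \<le> ((\<psi> - 1) / \<psi>) * Cst xs ys" (is "_ \<Longrightarrow> ?A")
    and "(norm (y k - ys))\<^sup>2 \<le> \<beta> * Cst xs ys" (is ?B)
proof -
  have Q1: "Qf xs ys k' \<le> Cst xs ys" if "k' \<ge> 1" for k' using Q_bound[OF s that] .
  have a: "0 \<le> (1 / \<beta>) * (norm (y (k' - 1) - ys))\<^sup>2" for k' using \<beta> by simp
  have b: "0 \<le> (\<psi> / (\<psi> - 1)) * (norm (z (k' + 1) - xs))\<^sup>2" for k'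
    using \<psi> by (intro mult_nonneg_nonneg) auto
  have c: "0 \<le> \<omega> * \<delta> (k' - 1) * (norm (x k' - x (k' - 1)))\<^sup>2" for k'
    using \<omega>_pos delta_pos[of "k' - 1"] by simp
  {
    assume k: "k \<ge> 1"
    have q: "(\<psi> / (\<psi> - 1)) * (norm (z (k + 1) - xs))\<^sup>2 \<le> Cst xs ys"
      using Q1[OF k] a[of k] c[of k] unfolding Qf_def by linarith
    have pp: "(\<psi> - 1) / \<psi> > 0" using \<psi> by simp
    have "(norm (z (k + 1) - xs))\<^sup>2 = ((\<psi> - 1) / \<psi>) * ((\<psi> / (\<psi> - 1)) * (norm (z (k + 1) - xs))\<^sup>2)"
      using \<psi> by (simp add: field_simps)
    also have "\<dots> \<le> ((\<psi> - 1) / \<psi>) * Cst xs ys" by (rule mult_left_mono[OF q]) (use pp in simp)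
    finally show ?A by simp
  }
  have "(1 / \<beta>) * (norm (y (k + 1 - 1) - ys))\<^sup>2 \<le> Cst xs ys"
    using Q1[of "k + 1"] b[of "k + 1"] c[of "k + 1"] unfolding Qf_def by linarith
  then show ?B using \<beta> by (simp add: divide_le_eq mult.commute)
qed

end


lemma contr_seq:
  fixes a b :: "nat \<Rightarrow> real"
  assumes nn: "\<And>n. 0 \<le> a n" and rec: "\<And>n. a (Suc n) \<le> q * a n + b n"
    and q: "0 \<le> q" "q < 1" and b: "b \<longlonglongrightarrow> 0"
  shows "a \<longlonglongrightarrow> 0"
proof (rule LIMSEQ_I)
  fix r :: real assume r: "0 < r"
  have e: "r * (1 - q) / 2 > 0" using r q by simp
  obtain N0 where N0: "\<And>n. n \<ge> N0 \<Longrightarrow> norm (b n - 0) < r * (1 - q) / 2"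
    using LIMSEQ_D[OF b e] by blast
  have claim: "a (N0 + k) \<le> q ^ k * a N0 + r / 2" for k
  proof (induction k)
    case 0 then show ?case using r by simp
  next
    case (Suc k)
    have bk: "b (N0 + k) \<le> r * (1 - q) / 2" using N0[of "N0 + k"] by simp
    have "a (N0 + Suc k) \<le> q * a (N0 + k) + b (N0 + k)" using rec[of "N0 + k"] by simp
    also have "\<dots> \<le> q * (q ^ k * a N0 + r / 2) + r * (1 - q) / 2"
      using Suc q bk by (intro add_mono mult_left_mono) auto
    also have "\<dots> = q ^ Suc k * a N0 + r / 2" by (simp add: field_simps)
    finally show ?case .
  qed
  have "(\<lambda>k. q ^ k * a N0) \<longlonglongrightarrow> 0"
    using LIMSEQ_power_zero[of q] q by (intro tendsto_mult_left_zero) auto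
  moreover have r2: "r / 2 > 0" using r by simp
  ultimately obtain K where K: "\<And>k. k \<ge> K \<Longrightarrow> norm (q ^ k * a N0 - 0) < r / 2"
    using LIMSEQ_D by blast
  show "\<exists>no. \<forall>n\<ge>no. norm (a n - 0) < r"
  proof (intro exI allI impI)
    fix n assume n: "n \<ge> N0 + K"
    have "a n = a (N0 + (n - N0))" using n by simp
    also have "\<dots> \<le> q ^ (n - N0) * a N0 + r / 2" by (rule claim)
    also have "\<dots> < r"
    proof -
      have "K \<le> n - N0" using n by simp
      then have "norm (q ^ (n - N0) * a N0 - 0) < r / 2" by (rule K)
      then show ?thesis by simp
    qed
    finally show "norm (a n - 0) < r" using nn[of n] by simp
  qed
qed

context pd begin

lemma z1: "z 1 = x 0"
proof -
  have c: "(\<psi> - 1) / \<psi> + 1 / \<psi> = 1" using \<psi> by (simp add: field_simps)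
  have "z 1 = ((\<psi> - 1) / \<psi>) *\<^sub>R x 0 + (1 / \<psi>) *\<^sub>R x 0" using gen_step(1)[of 1] z0 by simp
  also have "\<dots> = ((\<psi> - 1) / \<psi> + 1 / \<psi>) *\<^sub>R x 0" by (rule scaleR_add_left[symmetric])
  also have "\<dots> = x 0" unfolding c by simp
  finally show ?thesis .
qed

lemma x_from_z: "x n = (\<psi> / (\<psi> - 1)) *\<^sub>R z (Suc n) - (1 / (\<psi> - 1)) *\<^sub>R z n"
proof -
  have zs: "z (Suc n) = ((\<psi> - 1) / \<psi>) *\<^sub>R x n + (1 / \<psi>) *\<^sub>R z n" using gen_step(1)[of "Suc n"] by simp
  have "(\<psi> / (\<psi> - 1)) *\<^sub>R z (Suc n) = ((\<psi> / (\<psi> - 1)) * ((\<psi> - 1) / \<psi>)) *\<^sub>R x n + ((\<psi> / (\<psi> - 1)) * (1 / \<psi>)) *\<^sub>R z n"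
    unfolding zs by (simp add: scaleR_add_right)
  also have "\<dots> = x n + (1 / (\<psi> - 1)) *\<^sub>R z n" using \<psi> by simp
  finally show ?thesis by simp
qed

lemma e_rec: "z (Suc n) - x (Suc n) = (1 / \<psi>) *\<^sub>R (z n - x n) + (x n - x (Suc n))"
proof -
  have zs: "z (Suc n) = ((\<psi> - 1) / \<psi>) *\<^sub>R x n + (1 / \<psi>) *\<^sub>R z n" using gen_step(1)[of "Suc n"] by simp
  have "((\<psi> - 1) / \<psi>) *\<^sub>R x n = x n - (1 / \<psi>) *\<^sub>R x n"
  proof -
    have "(\<psi> - 1) / \<psi> = 1 - 1 / \<psi>" using \<psi> by (simp add: field_simps)
    then show ?thesis by (simp add: scaleR_diff_left)
  qed
  then show ?thesis unfolding zs by (simp add: algebra_simps)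
qed

lemma bounded_y: "bounded (range y)"
proof -
  obtain xs ys where s: "(xs, ys) \<in> saddle_set g fs gx gy" using saddle_ne by blast
  have "y k \<in> cball ys (sqrt (\<beta> * Cst xs ys))" for k
    using z_y_close(2)[OF s, of k] by (simp add: dist_norm norm_minus_commute real_le_rsqrt)
  then show ?thesis by (intro bounded_subset[OF bounded_cball]) auto
qed

lemma bounded_z: "bounded (range z)"
proof -
  obtain xs ys where s: "(xs, ys) \<in> saddle_set g fs gx gy" using saddle_ne by blast
  have "z k \<in> cball xs (sqrt (((\<psi> - 1) / \<psi>) * Cst xs ys)) \<union> {x 0}" for k
  proof (cases "k \<le> 1")
    case True
    then have "k = 0 \<or> k = 1" by auto
    then have "z k = x 0" using z0 z1 by auto
    then show ?thesis by simp
  next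
    case False
    then obtain j where j: "k = Suc j" "j \<ge> 1" by (cases k) auto
    show ?thesis using z_y_close(1)[OF s j(2)] j(1)
      by (simp add: dist_norm norm_minus_commute real_le_rsqrt)
  qed
  then have "range z \<subseteq> cball xs (sqrt (((\<psi> - 1) / \<psi>) * Cst xs ys)) \<union> {x 0}" by blast
  then show ?thesis by (rule bounded_subset[rotated]) simp
qed

lemma bounded_x: "bounded (range x)"
proof -
  obtain Bz where Bz: "\<And>n. norm (z n) \<le> Bz" using bounded_z by (auto simp: bounded_iff)
  have "norm (x n) \<le> (\<psi> / (\<psi> - 1)) * Bz + (1 / (\<psi> - 1)) * Bz" for n
  proof -
    have p: "\<psi> / (\<psi> - 1) > 0" "1 / (\<psi> - 1) > 0" using \<psi> by auto
    have "norm (x n) \<le> norm ((\<psi> / (\<psi> - 1)) *\<^sub>R z (Suc n)) + norm ((1 / (\<psi> - 1)) *\<^sub>R z n)"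
      unfolding x_from_z by (rule norm_triangle_ineq4)
    also have "\<dots> = (\<psi> / (\<psi> - 1)) * norm (z (Suc n)) + (1 / (\<psi> - 1)) * norm (z n)" using p by simp
    also have "\<dots> \<le> (\<psi> / (\<psi> - 1)) * Bz + (1 / (\<psi> - 1)) * Bz"
      using p Bz by (intro add_mono mult_left_mono) auto
    finally show ?thesis .
  qed
  then show ?thesis unfolding bounded_iff by blast
qed

end


lemma inner_le_bd:
  fixes a b :: "'a::real_inner"
  assumes "norm a \<le> A" "norm b \<le> B"
  shows "inner a b \<le> A * B"
proof -
  have "inner a b \<le> norm a * norm b" by (rule norm_cauchy_schwarz)
  also have "\<dots> \<le> A * B"
  proof -
    have "0 \<le> A" using assms(1) norm_ge_zero[of a] by linarith
    then show ?thesis using assms by (intro mult_mono) auto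
  qed
  finally show ?thesis .
qed

context pd begin

lemma lip_consts:
  assumes "bounded X" "bounded Y"
  obtains Lyy Lxx Lxy where "Lyy \<ge> 0" "Lxx \<ge> 0" "Lxy > 0"
    "\<forall>u \<in> X \<inter> edom g. \<forall>u' \<in> X \<inter> edom g.
                      \<forall>v \<in> Y \<inter> edom (fenchel_conj f). \<forall>v' \<in> Y \<inter> edom (fenchel_conj f).
                        norm (gy u v - gy u v') \<le> Lyy * norm (v - v') \<and>
                        norm (gx u v - gx u' v') \<le> Lxx * norm (u - u') + Lxy * norm (v - v')"
proof -
  have "\<exists>Lyy Lxx Lxy. Lyy \<ge> 0 \<and> Lxx \<ge> 0 \<and> Lxy > 0 \<and>
                     (\<forall>u \<in> X \<inter> edom g. \<forall>u' \<in> X \<inter> edom g.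
                      \<forall>v \<in> Y \<inter> edom (fenchel_conj f). \<forall>v' \<in> Y \<inter> edom (fenchel_conj f).
                        norm (gy u v - gy u v') \<le> Lyy * norm (v - v') \<and>
                        norm (gx u v - gx u' v') \<le> Lxx * norm (u - u') + Lxy * norm (v - v'))"
    using A2_lip assms by (simp only: imp_conjL)
  then show ?thesis using that by (elim exE conjE) 
qed

lemma osc_bound:
  assumes s: "(xs, ys) \<in> saddle_set g fs gx gy" and bX: "bX \<ge> 0" and bY: "bY \<ge> 0"
    and xsb: "norm xs \<le> bX" and ysb: "norm ys \<le> bY"
  obtains K where "K \<ge> 0" "\<And>u v w. u \<in> cball 0 bX \<inter> edom g \<Longrightarrow> v \<in> cball 0 bY \<inter> edom fs \<Longrightarrow>
      w \<in> cball 0 bY \<inter> edom fs \<Longrightarrow> \<Phi> u w - \<Phi> u v \<le> K"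
proof -
  obtain Lyy Lxx Lxy where L: "Lyy \<ge> 0" "Lxx \<ge> 0" "Lxy > 0"
    and L4: "\<forall>u \<in> cball 0 bX \<inter> edom g. \<forall>u' \<in> cball 0 bX \<inter> edom g.
                      \<forall>v \<in> cball 0 bY \<inter> edom (fenchel_conj f). \<forall>v' \<in> cball 0 bY \<inter> edom (fenchel_conj f).
                        norm (gy u v - gy u v') \<le> Lyy * norm (v - v') \<and>
                        norm (gx u v - gx u' v') \<le> Lxx * norm (u - u') + Lxy * norm (v - v')"
    by (rule lip_consts[of "cball 0 bX" "cball 0 bY"]) auto
  have Ly: "norm (gy u v - gy u v') \<le> Lyy * norm (v - v')"
    if "u \<in> cball 0 bX \<inter> edom g" "u' \<in> cball 0 bX \<inter> edom g" "v \<in> cball 0 bY \<inter> edom fs" "v' \<in> cball 0 bY \<inter> edom fs" for u u' v v'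
    using L4[rule_format, OF that] by simp
  have Lx: "norm (gx u v - gx u' v') \<le> Lxx * norm (u - u') + Lxy * norm (v - v')"
    if "u \<in> cball 0 bX \<inter> edom g" "u' \<in> cball 0 bX \<inter> edom g" "v \<in> cball 0 bY \<inter> edom fs" "v' \<in> cball 0 bY \<inter> edom fs" for u u' v v'
    using L4[rule_format, OF that] by simp
  have xsd: "xs \<in> cball 0 bX \<inter> edom g" and ysd: "ys \<in> cball 0 bY \<inter> edom fs"
    using saddle_props(1,2)[OF s] xsb ysb by auto
  define Gy where "Gy = norm (gy xs ys) + Lyy * (2 * bY)"
  define Gx where "Gx = norm (gx xs ys) + Lxx * (2 * bX) + Lxy * (2 * bY)"
  define K where "K = Gy * (2 * bY) + Gx * (2 * bX) + Gx * (2 * bX)"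
  have K0: "K \<ge> 0" unfolding K_def Gy_def Gx_def using L bX bY by simp
  have dX: "norm (a - b) \<le> 2 * bX" if "a \<in> cball 0 bX" "b \<in> cball 0 bX" for a b
    using that norm_triangle_ineq4[of a b] by simp
  have dY: "norm (a - b) \<le> 2 * bY" if "a \<in> cball 0 bY" "b \<in> cball 0 bY" for a b
    using that norm_triangle_ineq4[of a b] by simp
  have gyb: "norm (gy xs v) \<le> Gy" if v: "v \<in> cball 0 bY \<inter> edom fs" for v
  proof -
    have "norm (gy xs v) \<le> norm (gy xs ys) + norm (gy xs v - gy xs ys)"
      by (rule norm_triangle_sub)
    also have "norm (gy xs v - gy xs ys) \<le> Lyy * (2 * bY)"
    proof -
      have "norm (gy xs v - gy xs ys) \<le> Lyy * norm (v - ys)" by (rule Ly[OF xsd xsd v ysd])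
      also have "\<dots> \<le> Lyy * (2 * bY)" using dY[of v ys] v ysd L(1) by (intro mult_left_mono) auto
      finally show ?thesis .
    qed
    finally show ?thesis unfolding Gy_def by simp
  qed
  have gxb: "norm (gx u w) \<le> Gx" if u: "u \<in> cball 0 bX \<inter> edom g" and w: "w \<in> cball 0 bY \<inter> edom fs" for u w
  proof -
    have "norm (gx u w) \<le> norm (gx xs ys) + norm (gx u w - gx xs ys)"
      by (rule norm_triangle_sub)
    also have "norm (gx u w - gx xs ys) \<le> Lxx * (2 * bX) + Lxy * (2 * bY)"
    proof -
      have "norm (gx u w - gx xs ys) \<le> Lxx * norm (u - xs) + Lxy * norm (w - ys)" by (rule Lx[OF u xsd w ysd])
      also have "\<dots> \<le> Lxx * (2 * bX) + Lxy * (2 * bY)"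
        using dX[of u xs] dY[of w ys] u w xsd ysd L by (intro add_mono mult_left_mono) auto
      finally show ?thesis .
    qed
    finally show ?thesis unfolding Gx_def by simp
  qed
  have "\<Phi> u w - \<Phi> u v \<le> K" if u: "u \<in> cball 0 bX \<inter> edom g" and v: "v \<in> cball 0 bY \<inter> edom fs"
      and w: "w \<in> cball 0 bY \<inter> edom fs" for u v w
  proof -
    have a: "\<Phi> xs w \<ge> \<Phi> u w + inner (gx u w) (xs - u)" using gradx[of w u xs] u w xsd by auto
    have b: "\<Phi> u v \<ge> \<Phi> xs v + inner (gx xs v) (u - xs)" using gradx[of v xs u] u v xsd by auto
    have c: "\<Phi> xs w \<le> \<Phi> xs v + inner (gy xs v) (w - v)" using grady[of xs v w] v w xsd by auto
    have i1: "inner (gy xs v) (w - v) \<le> Gy * (2 * bY)" using gyb[OF v] dY[of w v] v w by (intro inner_le_bd) auto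
    have i2: "- inner (gx u w) (xs - u) \<le> Gx * (2 * bX)"
    proof -
      have "inner (gx u w) (u - xs) \<le> Gx * (2 * bX)" using gxb[OF u w] dX[of u xs] u xsd by (intro inner_le_bd) auto
      moreover have "inner (gx u w) (u - xs) = - inner (gx u w) (xs - u)"
        by (simp add: inner_diff_right)
      ultimately show ?thesis by simp
    qed
    have i3: "- inner (gx xs v) (u - xs) \<le> Gx * (2 * bX)"
    proof -
      have "inner (gx xs v) (xs - u) \<le> Gx * (2 * bX)" using gxb[OF xsd v] dX[of xs u] u xsd by (intro inner_le_bd) auto
      moreover have "inner (gx xs v) (xs - u) = - inner (gx xs v) (u - xs)"
        by (simp add: inner_diff_right)
      ultimately show ?thesis by simp
    qed
    show ?thesis using a b c i1 i2 i3 unfolding K_def by linarith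
  qed
  then show ?thesis using K0 that by blast
qed

lemma dir_bound:
  assumes s: "(xs, ys) \<in> saddle_set g fs gx gy" and bX: "bX \<ge> 0" and bY: "bY \<ge> 0"
    and xsb: "norm xs \<le> bX" and ysb: "norm ys \<le> bY"
  obtains Kd where "Kd \<ge> 0"
    "\<And>u v w. u \<in> cball 0 bX \<inter> edom g \<Longrightarrow> v \<in> cball 0 bY \<inter> edom fs \<Longrightarrow> w \<in> edom fs \<Longrightarrow>
        inner (gy u v) (w - v) \<le> Kd * max 1 (norm (w - v))"
    "\<And>u v w. u \<in> cball 0 bX \<inter> edom g \<Longrightarrow> v \<in> cball 0 bY \<inter> edom fs \<Longrightarrow> w \<in> cball 0 bY \<inter> edom fs \<Longrightarrow>
        inner (gy u v) (w - v) \<ge> - Kd"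
proof -
  have bY1: "bY + 1 \<ge> 0" "norm ys \<le> bY + 1" using bY ysb by auto
  obtain K where K0: "K \<ge> 0" and K: "\<And>u v w. u \<in> cball 0 bX \<inter> edom g \<Longrightarrow> v \<in> cball 0 (bY + 1) \<inter> edom fs \<Longrightarrow>
      w \<in> cball 0 (bY + 1) \<inter> edom fs \<Longrightarrow> \<Phi> u w - \<Phi> u v \<le> K"
    using osc_bound[OF s bX bY1(1) xsb bY1(2)] by blast
  obtain Lyy Lxx Lxy where L: "Lyy \<ge> 0" "Lxx \<ge> 0" "Lxy > 0"
    and L4: "\<forall>u \<in> cball 0 bX \<inter> edom g. \<forall>u' \<in> cball 0 bX \<inter> edom g.
                      \<forall>v \<in> cball 0 (bY + 1) \<inter> edom (fenchel_conj f). \<forall>v' \<in> cball 0 (bY + 1) \<inter> edom (fenchel_conj f).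
                        norm (gy u v - gy u v') \<le> Lyy * norm (v - v') \<and>
                        norm (gx u v - gx u' v') \<le> Lxx * norm (u - u') + Lxy * norm (v - v')"
    by (rule lip_consts[of "cball 0 bX" "cball 0 (bY + 1)"]) auto
  have Ly: "norm (gy u v - gy u v') \<le> Lyy * norm (v - v')"
    if "u \<in> cball 0 bX \<inter> edom g" "v \<in> cball 0 (bY + 1) \<inter> edom fs" "v' \<in> cball 0 (bY + 1) \<inter> edom fs" for u v v'
    using L4[rule_format, OF that(1) that(1) that(2) that(3)] by simp
  define Kd where "Kd = K + Lyy"
  have Kd0: "Kd \<ge> 0" using K0 L by (simp add: Kd_def)
  have up: "inner (gy u v) (w - v) \<le> Kd * max 1 (norm (w - v))"
    if u: "u \<in> cball 0 bX \<inter> edom g" and v: "v \<in> cball 0 bY \<inter> edom fs" and w: "w \<in> edom fs" for u v w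
  proof -
    define m where "m = max 1 (norm (w - v))"
    define sc where "sc = 1 / m"
    have m1: "m \<ge> 1" by (simp add: m_def)
    have sc: "0 < sc" "sc \<le> 1" using m1 by (auto simp: sc_def)
    define w' where "w' = (1 - sc) *\<^sub>R v + sc *\<^sub>R w"
    have w'd: "w' \<in> edom fs"
      unfolding w'_def using convex_dom_fs v w sc by (intro convexD) auto
    have w'v: "w' - v = sc *\<^sub>R (w - v)" by (simp add: w'_def algebra_simps)
    have nw'v: "norm (w' - v) \<le> 1"
    proof -
      have "norm (w' - v) = sc * norm (w - v)" unfolding w'v using sc by simp
      also have "\<dots> \<le> sc * m" using sc by (intro mult_left_mono) (auto simp: m_def)
      also have "\<dots> = 1" using m1 by (simp add: sc_def)
      finally show ?thesis .
    qed
    have v1: "v \<in> cball 0 (bY + 1) \<inter> edom fs" using v by auto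
    have w'1: "w' \<in> cball 0 (bY + 1) \<inter> edom fs"
    proof -
      have "norm w' \<le> norm v + norm (w' - v)" by (rule norm_triangle_sub)
      then show ?thesis using v nw'v w'd by auto
    qed
    have a: "\<Phi> u v \<le> \<Phi> u w' + inner (gy u w') (v - w')" using grady[of u w' v] u v w'd by auto
    have b: "\<Phi> u w' - \<Phi> u v \<le> K" using K[OF u v1 w'1] .
    have c: "inner (gy u v - gy u w') (w' - v) \<le> Lyy"
    proof -
      have "inner (gy u v - gy u w') (w' - v) \<le> norm (gy u v - gy u w') * norm (w' - v)" by (rule norm_cauchy_schwarz)
      also have "\<dots> \<le> (Lyy * norm (v - w')) * 1"
        using Ly[OF u v1 w'1] nw'v L(1) by (intro mult_mono) auto
      also have "\<dots> \<le> Lyy * 1"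
      proof -
        have "norm (v - w') \<le> 1" using nw'v by (simp add: norm_minus_commute)
        then show ?thesis using L(1) by (simp add: mult_left_le)
      qed
      finally show ?thesis by simp
    qed
    have d: "inner (gy u w') (v - w') = - inner (gy u w') (w' - v)" by (simp add: inner_diff_right)
    have e: "inner (gy u v - gy u w') (w' - v) = inner (gy u v) (w' - v) - inner (gy u w') (w' - v)"
      by (simp add: inner_diff_left)
    have "inner (gy u v) (w' - v) \<le> Kd" using a b c d e unfolding Kd_def by linarith
    then have "sc * inner (gy u v) (w - v) \<le> Kd" unfolding w'v by simp
    then have "inner (gy u v) (w - v) \<le> Kd / sc" using sc by (simp add: le_divide_eq mult.commute)
    then show ?thesis by (simp add: sc_def m_def)
  qed
  have low: "inner (gy u v) (w - v) \<ge> - Kd"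
    if u: "u \<in> cball 0 bX \<inter> edom g" and v: "v \<in> cball 0 bY \<inter> edom fs" and w: "w \<in> cball 0 bY \<inter> edom fs" for u v w
  proof -
    have v1: "v \<in> cball 0 (bY + 1) \<inter> edom fs" and w1: "w \<in> cball 0 (bY + 1) \<inter> edom fs" using v w by auto
    have a: "\<Phi> u w \<le> \<Phi> u v + inner (gy u v) (w - v)" using grady[of u v w] u v w by auto
    have b: "\<Phi> u v - \<Phi> u w \<le> K" using K[OF u w1 v1] .
    show ?thesis using a b L(1) unfolding Kd_def by linarith
  qed
  show ?thesis using that Kd0 up low by blast
qed

end


context pd begin

lemma trial_bound:
  assumes s: "(xs, ys) \<in> saddle_set g fs gx gy" and bX: "bX \<ge> 0" and bY: "bY \<ge> 0"
    and xsb: "norm xs \<le> bX" and ysb: "norm ys \<le> bY"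
    and xb: "\<And>n. norm (x n) \<le> bX" and yb: "\<And>n. norm (y n) \<le> bY"
  obtains BT where "\<And>n t. n \<ge> 1 \<Longrightarrow> 0 < t \<Longrightarrow> t \<le> \<tau>max \<Longrightarrow> norm (yt n t - ys) \<le> BT"
proof -
  obtain Kd where Kd0: "Kd \<ge> 0"
    and up: "\<And>u v w. u \<in> cball 0 bX \<inter> edom g \<Longrightarrow> v \<in> cball 0 bY \<inter> edom fs \<Longrightarrow> w \<in> edom fs \<Longrightarrow>
        inner (gy u v) (w - v) \<le> Kd * max 1 (norm (w - v))"
    and low: "\<And>u v w. u \<in> cball 0 bX \<inter> edom g \<Longrightarrow> v \<in> cball 0 bY \<inter> edom fs \<Longrightarrow> w \<in> cball 0 bY \<inter> edom fs \<Longrightarrow>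
        inner (gy u v) (w - v) \<ge> - Kd"
    using dir_bound[OF s bX bY xsb ysb] by blast
  define ss where "ss = gy xs ys"
  define Lam where "Lam = \<beta> * \<tau>max"
  define A where "A = 2 * bY + Lam * Kd + Lam * norm ss"
  define B where "B = Lam * Kd * (2 + 2 * bY)"
  have Lam0: "Lam > 0" using \<beta> \<tau>max by (simp add: Lam_def)
  have A0: "A \<ge> 0" and B0: "B \<ge> 0" using Lam0 Kd0 bY by (auto simp: A_def B_def)
  have ysd: "ys \<in> edom fs" using saddle_props(2)[OF s] .
  have bound: "norm (yt n t - ys) \<le> A + B + 1" if n: "n \<ge> 1" and t: "0 < t" "t \<le> \<tau>max" for n t
  proof -
    define u where "u = x n"
    define v where "v = y (n - 1)"
    define b where "b = gy u v"
    define lam where "lam = \<beta> * t"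
    define P where "P = yt n t"
    define e where "e = norm (P - ys)"
    define a where "a = norm (v - ys)"
    have lam: "0 < lam" "lam \<le> Lam" using t \<beta> by (auto simp: lam_def Lam_def)
    have ud: "u \<in> cball 0 bX \<inter> edom g" using xb x_dom by (simp add: u_def)
    have vd: "v \<in> cball 0 bY \<inter> edom fs" using yb y_dom by (simp add: v_def)
    have ysd': "ys \<in> cball 0 bY \<inter> edom fs" using ysb ysd by simp
    have Pd: "P \<in> edom fs" using yt_dom[OF t(1)] by (simp add: P_def)
    have a2: "a \<le> 2 * bY" using vd ysb norm_triangle_ineq4[of v ys] by (simp add: a_def)
    have vi: "inner (v + lam *\<^sub>R b - P) (ys - P) \<le> lam * (F ys - F P)"
      using ytVI[OF t(1) ysd, of n] by (simp add: v_def lam_def b_def u_def P_def)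
    have sd: "F ys + inner ss (P - ys) \<le> F P" using saddle_props(4)[OF s Pd] by (simp add: ss_def)
    have i1: "inner (v + lam *\<^sub>R b - P) (ys - P) = inner (v - ys) (ys - P) + e\<^sup>2 + lam * inner b (ys - P)"
    proof -
      have "v + lam *\<^sub>R b - P = (v - ys) + (ys - P) + lam *\<^sub>R b" by simp
      then have "inner (v + lam *\<^sub>R b - P) (ys - P) = inner (v - ys) (ys - P) + inner (ys - P) (ys - P) + lam * inner b (ys - P)"
        by (simp only: inner_add_left inner_scaleR_left)
      moreover have "inner (ys - P) (ys - P) = e\<^sup>2"
        by (simp add: e_def power2_norm_eq_inner norm_minus_commute[of P ys])
      ultimately show ?thesis by simp
    qed
    have lowb: "inner b (ys - v) \<ge> - Kd" using low[OF ud vd ysd'] by (simp add: b_def)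
    have upb: "inner b (P - v) \<le> Kd * max 1 (norm (P - v))" using up[OF ud vd Pd] by (simp add: b_def)
    have Pv: "norm (P - v) \<le> e + a"
    proof -
      have "P - v = (P - ys) - (v - ys)" by simp
      then show ?thesis using norm_triangle_ineq4[of "P - ys" "v - ys"] by (simp add: e_def a_def)
    qed
    have mx: "max 1 (norm (P - v)) \<le> 1 + e + a" using Pv by (simp add: e_def a_def)
    have ib: "inner b (ys - P) \<ge> - Kd - Kd * (1 + e + a)"
    proof -
      have "inner b (ys - P) = inner b (ys - v) - inner b (P - v)" by (simp add: inner_diff_right)
      moreover have "Kd * max 1 (norm (P - v)) \<le> Kd * (1 + e + a)" using mx Kd0 by (rule mult_left_mono)
      ultimately show ?thesis using lowb upb by linarith
    qed
    have c1: "- inner (v - ys) (ys - P) \<le> a * e"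
    proof -
      have "- inner (v - ys) (ys - P) = inner (v - ys) (P - ys)" by (simp add: inner_diff_right)
      also have "\<dots> \<le> a * e" unfolding a_def e_def by (rule norm_cauchy_schwarz)
      finally show ?thesis .
    qed
    have c2: "- (lam * inner ss (P - ys)) \<le> lam * (norm ss * e)"
    proof -
      have "- inner ss (P - ys) \<le> norm ss * e" using inner_lower[of ss "P - ys"] by (simp add: e_def)
      then have "lam * (- inner ss (P - ys)) \<le> lam * (norm ss * e)" using lam(1) by (intro mult_left_mono) auto
      then show ?thesis by simp
    qed
    have c3: "- (lam * inner b (ys - P)) \<le> lam * (Kd + Kd * (1 + e + a))"
    proof -
      have "- inner b (ys - P) \<le> Kd + Kd * (1 + e + a)" using ib by linarith
      then have "lam * (- inner b (ys - P)) \<le> lam * (Kd + Kd * (1 + e + a))" using lam(1) by (intro mult_left_mono) auto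
      then show ?thesis by simp
    qed
    have main: "e\<^sup>2 \<le> a * e + lam * (norm ss * e) + lam * (Kd + Kd * (1 + e + a))"
    proof -
      have "F ys - F P \<le> - inner ss (P - ys)" using sd by linarith
      then have "lam * (F ys - F P) \<le> lam * (- inner ss (P - ys))" using lam(1) by (intro mult_left_mono) auto
      then have "inner (v - ys) (ys - P) + e\<^sup>2 + lam * inner b (ys - P) \<le> - (lam * inner ss (P - ys))"
        using vi i1 by simp
      then show ?thesis using c1 c2 c3 by linarith
    qed
    have "a * e + lam * (norm ss * e) + lam * (Kd + Kd * (1 + e + a)) \<le> A * e + B"
    proof -
      have e0: "e \<ge> 0" by (simp add: e_def)
      have a0: "a \<ge> 0" by (simp add: a_def)
      have "a * e \<le> (2 * bY) * e" using a2 e0 by (rule mult_right_mono)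
      moreover have "lam * (norm ss * e) \<le> Lam * (norm ss * e)" using lam e0 by (intro mult_right_mono) auto
      moreover have "lam * (Kd + Kd * (1 + e + a)) \<le> Lam * (Kd + Kd * (1 + e + 2 * bY))"
        using lam Kd0 e0 a0 a2 by (intro mult_mono) (auto intro!: add_mono mult_left_mono)
      moreover have "Lam * (Kd + Kd * (1 + e + 2 * bY)) = (Lam * Kd) * e + B" by (simp add: B_def algebra_simps)
      moreover have "A * e = (2 * bY) * e + Lam * (norm ss * e) + (Lam * Kd) * e" by (simp add: A_def algebra_simps)
      ultimately show ?thesis by linarith
    qed
    then have "e\<^sup>2 \<le> A * e + B" using main by linarith
    then have "e \<le> A + B + 1" by (intro quad_bound) (use A0 B0 in \<open>auto simp: e_def\<close>)
    then show ?thesis by (simp add: e_def P_def)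
  qed
  show ?thesis using that bound by blast
qed

end


context pd begin

lemma test_unfold:
  "pdacl_test \<Phi> gx gy \<xi> \<omega> \<nu> \<eta> \<beta> M x y \<tau> \<delta> n t P \<longleftrightarrow>
    t * \<tau> (n - 1) / \<xi> * (norm (gx (x n) P - gx (x (n - 1)) (y (n - 1))))\<^sup>2
     + 2 * t * (\<Phi> (x n) (y (n - 1)) + inner (gy (x n) (y (n - 1))) (P - y (n - 1)) - \<Phi> (x n) P)
     \<le> \<nu> * (\<omega> * \<delta> (n - 1) * (norm (x n - x (n - 1)))\<^sup>2 + (1 / \<beta>) * (norm (P - y (n - 1)))\<^sup>2) + (1 - \<nu>) * cc n"
proof -
  have Rf: "(\<lambda>i. pdacl_r \<omega> \<beta> (\<delta> (i - 1)) (x i) (x (i - 1)) (y i) (y (i - 1))) = R"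
    by (simp add: R_def fun_eq_iff)
  show ?thesis unfolding pdacl_test_def Let_def Rf cc_def[symmetric] unfolding pdacl_r_def by (simp add: mult.assoc)
qed

lemma delta_lower: "n \<ge> 1 \<Longrightarrow> \<delta> (n - 1) \<ge> \<tau> (n - 1) / \<tau>max"
proof (cases "n - 1 = 0")
  case True
  then show ?thesis using \<delta>0 \<tau>0 \<tau>max by (simp add: divide_le_eq)
next
  case False
  then have "\<delta> (n - 1) = \<tau> (n - 1) / \<tau> (n - 1 - 1)" using delta_eq[of "n - 1"] by simp
  moreover have "\<tau> (n - 1) / \<tau>max \<le> \<tau> (n - 1) / \<tau> (n - 1 - 1)"
    using tau_pos[of "n - 1"] tau_max[of "n - 1 - 1"] mult_pos_pos[OF \<tau>max tau_pos[of "n - 1 - 1"]]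
    by (intro divide_left_mono) auto
  ultimately show ?thesis by simp
qed

lemma sq_sum_le: "(a + b)\<^sup>2 \<le> 2 * a\<^sup>2 + 2 * (b::real)\<^sup>2"
proof -
  have "0 \<le> (a - b)\<^sup>2" by simp
  then show ?thesis by (simp add: power2_eq_square algebra_simps)
qed

lemma tau_lower: "\<exists>tmin > 0. \<forall>n. \<tau> n \<ge> tmin"
proof -
  obtain xs ys where s: "(xs, ys) \<in> saddle_set g fs gx gy" using saddle_ne by blast
  obtain bX0 where bX0: "\<And>n. norm (x n) \<le> bX0" using bounded_x by (auto simp: bounded_iff)
  obtain bY0 where bY0: "\<And>n. norm (y n) \<le> bY0" using bounded_y by (auto simp: bounded_iff)
  define bX where "bX = max bX0 (norm xs)"
  define bY where "bY = max bY0 (norm ys)"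
  have bX: "bX \<ge> 0" "norm xs \<le> bX" "\<And>n. norm (x n) \<le> bX"
    using bX0 by (auto simp: bX_def intro: le_max_iff_disj[THEN iffD2])
  have bY: "bY \<ge> 0" "norm ys \<le> bY" "\<And>n. norm (y n) \<le> bY"
    using bY0 by (auto simp: bY_def intro: le_max_iff_disj[THEN iffD2])
  obtain BT where BT: "\<And>n t. n \<ge> 1 \<Longrightarrow> 0 < t \<Longrightarrow> t \<le> \<tau>max \<Longrightarrow> norm (yt n t - ys) \<le> BT"
    using trial_bound[OF s bX(1) bY(1) bX(2) bY(2) bX(3) bY(3)] by blast
  define bY2 where "bY2 = bY + max BT 0"
  have ytb: "norm (yt n t) \<le> bY2" if "n \<ge> 1" "0 < t" "t \<le> \<tau>max" for n t
  proof -
    have "norm (yt n t) \<le> norm ys + norm (yt n t - ys)" by (rule norm_triangle_sub)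
    then show ?thesis using BT[OF that] bY(2) unfolding bY2_def by linarith
  qed
  have yb2: "norm (y n) \<le> bY2" for n using bY(3)[of n] unfolding bY2_def by linarith
  obtain Lyy Lxx Lxy where L: "Lyy \<ge> 0" "Lxx \<ge> 0" "Lxy > 0"
    and L4: "\<forall>u \<in> cball 0 bX \<inter> edom g. \<forall>u' \<in> cball 0 bX \<inter> edom g.
                      \<forall>v \<in> cball 0 bY2 \<inter> edom (fenchel_conj f). \<forall>v' \<in> cball 0 bY2 \<inter> edom (fenchel_conj f).
                        norm (gy u v - gy u v') \<le> Lyy * norm (v - v') \<and>
                        norm (gx u v - gx u' v') \<le> Lxx * norm (u - u') + Lxy * norm (v - v')"
    by (rule lip_consts[of "cball 0 bX" "cball 0 bY2"]) auto
  define k1 where "k1 = \<nu> * \<omega> * \<xi> / (2 * (Lxx\<^sup>2 + 1) * \<tau>max)"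
  define k2 where "k2 = \<nu> / (\<beta> * (2 * \<tau>max * Lxy\<^sup>2 / \<xi> + 2 * Lyy + 1))"
  define \<kappa> where "\<kappa> = min k1 k2"
  have l1: "0 < Lxx\<^sup>2 + 1" by (rule add_nonneg_pos) simp_all
  have k1p: "k1 > 0" unfolding k1_def using \<nu> \<omega>_pos \<xi> \<tau>max l1
    by (intro divide_pos_pos mult_pos_pos) (auto simp: add_pos_nonneg)
  have k2p: "k2 > 0" unfolding k2_def using \<nu> \<beta> \<xi> \<tau>max L
    by (intro divide_pos_pos mult_pos_pos add_pos_nonneg add_nonneg_pos) auto
  have \<kappa>p: "\<kappa> > 0" using k1p k2p by (simp add: \<kappa>_def)
  have fail: "t > \<kappa>" if n: "n \<ge> 1" and t: "0 < t" "t \<le> \<tau>max"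
      and nt: "\<not> pdacl_test \<Phi> gx gy \<xi> \<omega> \<nu> \<eta> \<beta> M x y \<tau> \<delta> n t (yt n t)" for n t
  proof (rule ccontr)
    assume "\<not> t > \<kappa>"
    then have tk: "t \<le> k1" "t \<le> k2" by (auto simp: \<kappa>_def)
    define P where "P = yt n t"
    define t0 where "t0 = \<tau> (n - 1)"
    define DX where "DX = (norm (x n - x (n - 1)))\<^sup>2"
    define DY where "DY = (norm (P - y (n - 1)))\<^sup>2"
    have t0: "0 < t0" "t0 \<le> \<tau>max" using tau_pos tau_max by (auto simp: t0_def)
    have ud: "x n \<in> cball 0 bX \<inter> edom g" "x (n - 1) \<in> cball 0 bX \<inter> edom g" using bX(3) x_dom by auto
    have vd: "y (n - 1) \<in> cball 0 bY2 \<inter> edom fs" using yb2 y_dom by auto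
    have Pd: "P \<in> cball 0 bY2 \<inter> edom fs" using ytb[OF n t] yt_dom[OF t(1)] by (simp add: P_def)
    have th: "norm (gx (x n) P - gx (x (n - 1)) (y (n - 1))) \<le> Lxx * norm (x n - x (n - 1)) + Lxy * norm (P - y (n - 1))"
      using L4[rule_format, OF ud(1) ud(2) Pd vd] by simp
    have th2: "(norm (gx (x n) P - gx (x (n - 1)) (y (n - 1))))\<^sup>2 \<le> 2 * Lxx\<^sup>2 * DX + 2 * Lxy\<^sup>2 * DY"
    proof -
      have "(norm (gx (x n) P - gx (x (n - 1)) (y (n - 1))))\<^sup>2 \<le> (Lxx * norm (x n - x (n - 1)) + Lxy * norm (P - y (n - 1)))\<^sup>2"
        using th by (intro power_mono) auto
      also have "\<dots> \<le> 2 * (Lxx * norm (x n - x (n - 1)))\<^sup>2 + 2 * (Lxy * norm (P - y (n - 1)))\<^sup>2" by (rule sq_sum_le)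
      finally show ?thesis by (simp add: DX_def DY_def power_mult_distrib)
    qed
    have phy: "\<Phi> (x n) (y (n - 1)) + inner (gy (x n) (y (n - 1))) (P - y (n - 1)) - \<Phi> (x n) P \<le> Lyy * DY"
    proof -
      have a: "\<Phi> (x n) (y (n - 1)) \<le> \<Phi> (x n) P + inner (gy (x n) P) (y (n - 1) - P)"
        using grady[of "x n" P "y (n - 1)"] ud vd Pd by auto
      have b: "inner (gy (x n) P - gy (x n) (y (n - 1))) (y (n - 1) - P) \<le> Lyy * DY"
      proof -
        have "inner (gy (x n) P - gy (x n) (y (n - 1))) (y (n - 1) - P) \<le> norm (gy (x n) P - gy (x n) (y (n - 1))) * norm (y (n - 1) - P)"
          by (rule norm_cauchy_schwarz)
        also have "\<dots> \<le> (Lyy * norm (P - y (n - 1))) * norm (y (n - 1) - P)"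
          using L4[rule_format, OF ud(1) ud(1) Pd vd] by (intro mult_right_mono) auto
        also have "\<dots> = Lyy * DY" by (simp add: DY_def norm_minus_commute power2_eq_square)
        finally show ?thesis .
      qed
      have c: "inner (gy (x n) P - gy (x n) (y (n - 1))) (y (n - 1) - P)
          = inner (gy (x n) P) (y (n - 1) - P) + inner (gy (x n) (y (n - 1))) (P - y (n - 1))"
        by (simp add: inner_diff_left inner_diff_right)
      show ?thesis using a b c by linarith
    qed
    have dl: "\<delta> (n - 1) \<ge> t0 / \<tau>max" using delta_lower[OF n] by (simp add: t0_def)
    have DX0: "DX \<ge> 0" and DY0: "DY \<ge> 0" by (auto simp: DX_def DY_def)
    have c1: "t * t0 / \<xi> * (2 * Lxx\<^sup>2) \<le> \<nu> * \<omega> * \<delta> (n - 1)"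
    proof -
      have dp: "0 < 2 * (Lxx\<^sup>2 + 1) * \<tau>max" using l1 \<tau>max by simp
      have "t * (2 * (Lxx\<^sup>2 + 1) * \<tau>max) \<le> \<nu> * \<omega> * \<xi>"
        using tk(1) unfolding k1_def using pos_le_divide_eq[OF dp] by simp
      moreover have "t * (2 * Lxx\<^sup>2) * \<tau>max \<le> t * (2 * (Lxx\<^sup>2 + 1) * \<tau>max)"
      proof -
        have "2 * Lxx\<^sup>2 * \<tau>max \<le> 2 * (Lxx\<^sup>2 + 1) * \<tau>max" using \<tau>max by (intro mult_right_mono) auto
        then have "t * (2 * Lxx\<^sup>2 * \<tau>max) \<le> t * (2 * (Lxx\<^sup>2 + 1) * \<tau>max)" using t by (intro mult_left_mono) auto
        then show ?thesis by (simp only: mult.assoc)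
      qed
      ultimately have "t * (2 * Lxx\<^sup>2) * \<tau>max \<le> \<nu> * \<omega> * \<xi>" by linarith
      then have "t * (2 * Lxx\<^sup>2) / \<xi> \<le> \<nu> * \<omega> / \<tau>max"
        using \<xi> \<tau>max by (simp add: field_simps)
      then have "t0 * (t * (2 * Lxx\<^sup>2) / \<xi>) \<le> t0 * (\<nu> * \<omega> / \<tau>max)"
        using t0 by (intro mult_left_mono) auto
      also have "\<dots> = \<nu> * \<omega> * (t0 / \<tau>max)" by simp
      also have "\<dots> \<le> \<nu> * \<omega> * \<delta> (n - 1)" using dl \<nu> \<omega>_pos by (intro mult_left_mono) auto
      finally show ?thesis by (simp add: algebra_simps)
    qed
    have c2: "t * t0 / \<xi> * (2 * Lxy\<^sup>2) + 2 * t * Lyy \<le> \<nu> * (1 / \<beta>)"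
    proof -
      have den: "\<beta> * (2 * \<tau>max * Lxy\<^sup>2 / \<xi> + 2 * Lyy + 1) > 0" using \<beta> \<xi> \<tau>max L by (simp add: add_pos_nonneg)
      have "t * (\<beta> * (2 * \<tau>max * Lxy\<^sup>2 / \<xi> + 2 * Lyy + 1)) \<le> \<nu>"
        using tk(2) den by (simp add: k2_def le_divide_eq)
      moreover have "t * (2 * t0 * Lxy\<^sup>2 / \<xi> + 2 * Lyy) \<le> t * (2 * \<tau>max * Lxy\<^sup>2 / \<xi> + 2 * Lyy + 1)"
      proof -
        have "2 * t0 * Lxy\<^sup>2 / \<xi> \<le> 2 * \<tau>max * Lxy\<^sup>2 / \<xi>"
          using t0 \<xi> by (intro divide_right_mono mult_right_mono) auto
        then show ?thesis using t by (intro mult_left_mono) auto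
      qed
      ultimately have "\<beta> * (t * (2 * t0 * Lxy\<^sup>2 / \<xi> + 2 * Lyy)) \<le> \<nu>"
      proof -
        assume a1: "t * (\<beta> * (2 * \<tau>max * Lxy\<^sup>2 / \<xi> + 2 * Lyy + 1)) \<le> \<nu>"
          and a2: "t * (2 * t0 * Lxy\<^sup>2 / \<xi> + 2 * Lyy) \<le> t * (2 * \<tau>max * Lxy\<^sup>2 / \<xi> + 2 * Lyy + 1)"
        have "\<beta> * (t * (2 * t0 * Lxy\<^sup>2 / \<xi> + 2 * Lyy)) \<le> \<beta> * (t * (2 * \<tau>max * Lxy\<^sup>2 / \<xi> + 2 * Lyy + 1))"
          by (rule mult_left_mono[OF a2]) (use \<beta> in simp)
        also have "\<dots> = t * (\<beta> * (2 * \<tau>max * Lxy\<^sup>2 / \<xi> + 2 * Lyy + 1))" by (simp only: mult_ac)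
        finally show ?thesis using a1 by linarith
      qed
      then show ?thesis using \<beta> by (simp add: field_simps)
    qed
    have lhs: "t * t0 / \<xi> * (norm (gx (x n) P - gx (x (n - 1)) (y (n - 1))))\<^sup>2
     + 2 * t * (\<Phi> (x n) (y (n - 1)) + inner (gy (x n) (y (n - 1))) (P - y (n - 1)) - \<Phi> (x n) P)
       \<le> (t * t0 / \<xi> * (2 * Lxx\<^sup>2)) * DX + (t * t0 / \<xi> * (2 * Lxy\<^sup>2) + 2 * t * Lyy) * DY"
    proof -
      have p: "t * t0 / \<xi> \<ge> 0" using t t0 \<xi> by simp
      have "t * t0 / \<xi> * (norm (gx (x n) P - gx (x (n - 1)) (y (n - 1))))\<^sup>2 \<le> t * t0 / \<xi> * (2 * Lxx\<^sup>2 * DX + 2 * Lxy\<^sup>2 * DY)"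
        using th2 p by (rule mult_left_mono)
      moreover have "2 * t * (\<Phi> (x n) (y (n - 1)) + inner (gy (x n) (y (n - 1))) (P - y (n - 1)) - \<Phi> (x n) P) \<le> 2 * t * (Lyy * DY)"
        using phy t by (intro mult_left_mono) auto
      ultimately show ?thesis by (simp add: algebra_simps)
    qed
    have rhs: "(t * t0 / \<xi> * (2 * Lxx\<^sup>2)) * DX + (t * t0 / \<xi> * (2 * Lxy\<^sup>2) + 2 * t * Lyy) * DY
        \<le> \<nu> * (\<omega> * \<delta> (n - 1) * DX + (1 / \<beta>) * DY)"
    proof -
      have "(t * t0 / \<xi> * (2 * Lxx\<^sup>2)) * DX \<le> (\<nu> * \<omega> * \<delta> (n - 1)) * DX" using c1 DX0 by (rule mult_right_mono)
      moreover have "(t * t0 / \<xi> * (2 * Lxy\<^sup>2) + 2 * t * Lyy) * DY \<le> (\<nu> * (1 / \<beta>)) * DY" using c2 DY0 by (rule mult_right_mono)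
      ultimately show ?thesis by (simp add: algebra_simps)
    qed
    have "0 \<le> (1 - \<nu>) * cc n" using \<nu> cc_nonneg by simp
    then have "pdacl_test \<Phi> gx gy \<xi> \<omega> \<nu> \<eta> \<beta> M x y \<tau> \<delta> n t (yt n t)"
      unfolding test_unfold using lhs rhs unfolding P_def t0_def DX_def DY_def by linarith
    then show False using nt by simp
  qed
  define tmin where "tmin = min (\<tau> 0) (\<mu> * \<kappa>)"
  have tminp: "tmin > 0" using \<tau>0 \<mu> \<kappa>p by (simp add: tmin_def)
  have "\<tau> n \<ge> tmin" for n
  proof (induction n)
    case 0 then show ?case by (simp add: tmin_def)
  next
    case (Suc n)
    obtain i where i: "\<tau> (Suc n) = tb (Suc n) * \<mu> ^ i"
      and nf: "\<forall>j<i. \<not> pdacl_test \<Phi> gx gy \<xi> \<omega> \<nu> \<eta> \<beta> M x y \<tau> \<delta> (Suc n) (tb (Suc n) * \<mu> ^ j) (yt (Suc n) (tb (Suc n) * \<mu> ^ j))"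
      using gen_step(3)[of "Suc n"] by auto
    have tbb: "tb (Suc n) \<ge> \<tau> n" "tb (Suc n) \<le> \<tau>max" "tb (Suc n) > 0"
      using tau_max[of n] tau_pos[of n] \<phi> \<tau>max by (auto simp: tb_def)
    show ?case
    proof (cases i)
      case 0 then show ?thesis using i tbb Suc by simp
    next
      case (Suc j)
      define t where "t = tb (Suc n) * \<mu> ^ j"
      have tp: "0 < t" using tbb \<mu> by (simp add: t_def)
      have "\<mu> ^ j \<le> 1" using \<mu> by (simp add: power_le_one)
      then have tm: "t \<le> \<tau>max" using tbb \<mu> unfolding t_def by (meson mult_left_le order_trans less_imp_le)
      have "\<not> pdacl_test \<Phi> gx gy \<xi> \<omega> \<nu> \<eta> \<beta> M x y \<tau> \<delta> (Suc n) t (yt (Suc n) t)"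
        using nf Suc by (simp add: t_def)
      then have "t > \<kappa>" using fail[of "Suc n" t] tp tm by simp
      then have "\<tau> (Suc n) > \<mu> * \<kappa>" using i Suc \<mu> by (simp add: t_def mult.commute mult.left_commute)
      then show ?thesis unfolding tmin_def by linarith
    qed
  qed
  then show ?thesis using tminp by blast
qed

end


context pd begin

lemma tmin_ex: obtains tmin where "tmin > 0" "\<And>n. \<tau> n \<ge> tmin"
proof -
  from tau_lower obtain t where t: "t > 0" "\<forall>n. t \<le> \<tau> n" by blast
  show ?thesis using that[OF t(1)] t(2) by blast
qed

lemma dy_lim: "(\<lambda>n. y n - y (n - 1)) \<longlonglongrightarrow> 0"
proof (rule Lim_null_comparison)
  show "eventually (\<lambda>n. norm (y n - y (n - 1)) \<le> sqrt (\<beta> * R n)) sequentially"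
  proof (rule always_eventually, rule allI)
    fix n
    have a: "0 \<le> \<omega> * \<delta> (n - 1) * (norm (x n - x (n - 1)))\<^sup>2" using \<omega>_pos delta_pos[of "n - 1"] by simp
    have "(1 / \<beta>) * (norm (y n - y (n - 1)))\<^sup>2 \<le> R n" using a unfolding R_alt by linarith
    then have "(norm (y n - y (n - 1)))\<^sup>2 \<le> \<beta> * R n" using \<beta> by (simp add: divide_le_eq mult.commute)
    then show "norm (y n - y (n - 1)) \<le> sqrt (\<beta> * R n)" by (simp add: real_le_rsqrt)
  qed
  show "(\<lambda>n. sqrt (\<beta> * R n)) \<longlonglongrightarrow> 0" using tendsto_real_sqrt[OF tendsto_mult[OF tendsto_const R_lim, of \<beta>]] by simp
qed

lemma dx_lim: "(\<lambda>n. x n - x (n - 1)) \<longlonglongrightarrow> 0"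
proof -
  obtain tmin where tp: "tmin > 0" and tl0: "\<forall>n. tmin \<le> \<tau> n" using tau_lower by blast
  have tl: "\<tau> n \<ge> tmin" for n using tl0 by simp
  define c where "c = \<omega> * (tmin / \<tau>max)"
  have cp: "c > 0" using \<omega>_pos tp \<tau>max by (simp add: c_def)
  show ?thesis
  proof (rule Lim_null_comparison)
    show "eventually (\<lambda>n. norm (x n - x (n - 1)) \<le> sqrt (R n / c)) sequentially"
    proof (rule eventually_sequentiallyI[of 1])
      fix n :: nat assume n: "n \<ge> 1"
      have d: "\<delta> (n - 1) \<ge> tmin / \<tau>max"
        using delta_lower[OF n] tl[of "n - 1"] \<tau>max by (meson divide_right_mono less_imp_le order_trans)
      have b: "0 \<le> (1 / \<beta>) * (norm (y n - y (n - 1)))\<^sup>2" using \<beta> by simp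
      have "c * (norm (x n - x (n - 1)))\<^sup>2 \<le> \<omega> * \<delta> (n - 1) * (norm (x n - x (n - 1)))\<^sup>2"
        unfolding c_def using d \<omega>_pos by (intro mult_right_mono mult_left_mono) auto
      also have "\<dots> \<le> R n" using b unfolding R_alt by linarith
      finally have "(norm (x n - x (n - 1)))\<^sup>2 \<le> R n / c" using cp by (simp add: le_divide_eq mult.commute)
      then show "norm (x n - x (n - 1)) \<le> sqrt (R n / c)" by (simp add: real_le_rsqrt)
    qed
    show "(\<lambda>n. sqrt (R n / c)) \<longlonglongrightarrow> 0"
      using tendsto_real_sqrt[OF tendsto_divide[OF R_lim tendsto_const, of c]] cp by simp
  qed
qed

lemma dx_lim': "(\<lambda>n. x (Suc n) - x n) \<longlonglongrightarrow> 0"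
  using LIMSEQ_Suc[OF dx_lim] by simp

lemma e_lim: "(\<lambda>n. z n - x n) \<longlonglongrightarrow> 0"
proof -
  have "(\<lambda>n. norm (z n - x n)) \<longlonglongrightarrow> 0"
  proof (rule contr_seq[where q = "1 / \<psi>" and b = "\<lambda>n. norm (x n - x (Suc n))"])
    show "0 \<le> norm (z n - x n)" for n by simp
    show "norm (z (Suc n) - x (Suc n)) \<le> 1 / \<psi> * norm (z n - x n) + norm (x n - x (Suc n))" for n
    proof -
      have "norm (z (Suc n) - x (Suc n)) \<le> norm ((1 / \<psi>) *\<^sub>R (z n - x n)) + norm (x n - x (Suc n))"
        unfolding e_rec by (rule norm_triangle_ineq)
      then show ?thesis using \<psi> by simp
    qed
    show "0 \<le> 1 / \<psi>" "1 / \<psi> < 1" using \<psi> by auto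
    show "(\<lambda>n. norm (x n - x (Suc n))) \<longlonglongrightarrow> 0"
      using tendsto_norm[OF dx_lim'] by (simp add: norm_minus_commute)
  qed
  then show ?thesis by (simp add: tendsto_norm_zero_iff)
qed

lemma zx_lim: "(\<lambda>n. z (Suc n) - x n) \<longlonglongrightarrow> 0"
proof -
  have "z (Suc n) - x n = (1 / \<psi>) *\<^sub>R (z n - x n)" for n
  proof -
    have zs: "z (Suc n) = ((\<psi> - 1) / \<psi>) *\<^sub>R x n + (1 / \<psi>) *\<^sub>R z n" using gen_step(1)[of "Suc n"] by simp
    have c: "(\<psi> - 1) / \<psi> = 1 - 1 / \<psi>" using \<psi> by (simp add: field_simps)
    show ?thesis unfolding zs c by (simp add: scaleR_diff_left scaleR_diff_right)
  qed
  then show ?thesis using tendsto_scaleR[OF tendsto_const e_lim, of "1 / \<psi>"] by simp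
qed

lemma cluster:
  obtains \<rho> xb yb where "strict_mono \<rho>" "\<And>k. \<rho> k \<ge> 1"
    "(\<lambda>k. x (\<rho> k)) \<longlonglongrightarrow> xb" "(\<lambda>k. y (\<rho> k)) \<longlonglongrightarrow> yb"
    "(\<lambda>k. x (\<rho> k - 1)) \<longlonglongrightarrow> xb" "(\<lambda>k. y (\<rho> k - 1)) \<longlonglongrightarrow> yb"
    "(\<lambda>k. z (\<rho> k)) \<longlonglongrightarrow> xb" "(\<lambda>k. z (Suc (\<rho> k))) \<longlonglongrightarrow> xb" "(\<lambda>k. z (Suc (Suc (\<rho> k)))) \<longlonglongrightarrow> xb"
proof -
  have "bounded (range (\<lambda>n. (x n, y n)))"
  proof -
    obtain bx where bx: "\<And>n. norm (x n) \<le> bx" using bounded_x by (auto simp: bounded_iff)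
    obtain by' where by': "\<And>n. norm (y n) \<le> by'" using bounded_y by (auto simp: bounded_iff)
    have "norm (x n, y n) \<le> bx + by'" for n
      using norm_Pair_le[of "x n" "y n"] bx[of n] by'[of n] by linarith
    then show ?thesis unfolding bounded_iff by blast
  qed
  then obtain l \<sigma> where \<sigma>: "strict_mono \<sigma>" and lim: "((\<lambda>n. (x n, y n)) \<circ> \<sigma>) \<longlonglongrightarrow> l"
    using bounded_imp_convergent_subsequence by blast
  obtain xb yb where l: "l = (xb, yb)" by (cases l)
  define \<rho> where "\<rho> k = \<sigma> (Suc k)" for k
  have \<rho>: "strict_mono \<rho>" using \<sigma> unfolding \<rho>_def strict_mono_def by simp
  have \<rho>1: "\<rho> k \<ge> 1" for k
  proof -
    have "\<sigma> (Suc k) \<ge> Suc k" by (rule seq_suble[OF \<sigma>])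
    then show ?thesis by (simp add: \<rho>_def)
  qed
  have lim\<rho>: "(\<lambda>k. (x (\<rho> k), y (\<rho> k))) \<longlonglongrightarrow> (xb, yb)"
    using LIMSEQ_Suc[OF lim] l by (simp add: \<rho>_def o_def)
  have lx: "(\<lambda>k. x (\<rho> k)) \<longlonglongrightarrow> xb" using tendsto_fst[OF lim\<rho>] by simp
  have ly: "(\<lambda>k. y (\<rho> k)) \<longlonglongrightarrow> yb" using tendsto_snd[OF lim\<rho>] by simp
  have sub: "(\<lambda>k. f (\<rho> k)) \<longlonglongrightarrow> 0" if "f \<longlonglongrightarrow> 0" for f :: "nat \<Rightarrow> 'x::real_normed_vector"
    using LIMSEQ_subseq_LIMSEQ[OF that \<rho>] by (simp add: o_def)
  have lx1: "(\<lambda>k. x (\<rho> k - 1)) \<longlonglongrightarrow> xb"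
    using tendsto_diff[OF lx sub[OF dx_lim]] by simp
  have ly1: "(\<lambda>k. y (\<rho> k - 1)) \<longlonglongrightarrow> yb"
    using tendsto_diff[OF ly sub[OF dy_lim]] by simp
  have lz: "(\<lambda>k. z (\<rho> k)) \<longlonglongrightarrow> xb"
    using tendsto_add[OF lx sub[OF e_lim]] by simp
  have lz1: "(\<lambda>k. z (Suc (\<rho> k))) \<longlonglongrightarrow> xb"
    using tendsto_add[OF lx sub[OF zx_lim]] by simp
  have lxs: "(\<lambda>k. x (Suc (\<rho> k))) \<longlonglongrightarrow> xb"
    using tendsto_add[OF lx sub[OF dx_lim']] by simp
  have lz2: "(\<lambda>k. z (Suc (Suc (\<rho> k)))) \<longlonglongrightarrow> xb"
    using tendsto_add[OF lxs sub[OF LIMSEQ_Suc[OF zx_lim]]] by simp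
  show ?thesis using that \<rho> \<rho>1 lx ly lx1 ly1 lz lz1 lz2 by blast
qed

end


context pd begin

lemma closed_g: "closed_fun g" using g by (simp add: proper_closed_convex_def)
lemma closed_fs: "closed_fun fs" using pcc_fs by (simp add: proper_closed_convex_def)

lemma cc_bounded: "\<exists>ccB. \<forall>n. cc n \<le> ccB"
proof -
  have "bounded (range cc)" using cc_lim by (rule convergent_imp_bounded)
  then obtain B where B: "\<And>n. norm (cc n) \<le> B" by (auto simp: bounded_iff)
  have "cc n \<le> B" for n using B[of n] by simp
  then show ?thesis by blast
qed

lemma G_F_upper:
  "\<exists>CG CF. \<forall>n. n \<ge> 1 \<longrightarrow> G (x n) \<le> CG \<and> F (y n) \<le> CF"
proof -
  obtain xs ys where s: "(xs, ys) \<in> saddle_set g fs gx gy" using saddle_ne by blast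
  have xsd: "xs \<in> edom g" and ysd: "ys \<in> edom fs" using saddle_props[OF s] by auto
  obtain tmin where tp: "tmin > 0" and tl0: "\<forall>n. tmin \<le> \<tau> n" using tau_lower by blast
  obtain ccB where ccB0: "\<forall>n. cc n \<le> ccB" using cc_bounded by blast
  have ccB: "cc n \<le> ccB" for n using ccB0 by simp
  obtain bx where bx: "\<And>n. norm (x n) \<le> bx" using bounded_x by (auto simp: bounded_iff)
  obtain by' where by': "\<And>n. norm (y n) \<le> by'" using bounded_y by (auto simp: bounded_iff)
  define CC where "CC = Cst xs ys + (1 - \<nu>) * ccB"
  define CG where "CG = CC / (2 * tmin) + G xs + norm (gx xs ys) * (bx + norm xs)"
  define CF where "CF = CC / (2 * tmin) + F ys + norm (gy xs ys) * (by' + norm ys)"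
  have main: "G (x n) \<le> CG \<and> F (y n) \<le> CF" if n: "n \<ge> 1" for n
  proof -
    define XP where "XP = G (x n) + \<Phi> (x n) ys - G xs - \<Phi> xs ys"
    define YP where "YP = F (y n) - \<Phi> xs (y n) - F ys + \<Phi> xs ys"
    have a: "G xs + inner (- gx xs ys) (x n - xs) \<le> G (x n)" using saddle_props(3)[OF s x_dom] .
    have b: "\<Phi> xs ys + inner (gx xs ys) (x n - xs) \<le> \<Phi> (x n) ys" using gradx[OF ysd xsd x_dom] .
    have c: "F ys + inner (gy xs ys) (y n - ys) \<le> F (y n)" using saddle_props(4)[OF s y_dom] .
    have e: "\<Phi> xs (y n) \<le> \<Phi> xs ys + inner (gy xs ys) (y n - ys)" using grady[OF xsd ysd y_dom] .
    have XP0: "XP \<ge> 0" using a b unfolding XP_def by (simp add: inner_minus_left)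
    have YP0: "YP \<ge> 0" using c e unfolding YP_def by simp
    have os: "2 * \<tau> n * ((G (x n) + \<Phi> (x n) ys - F ys) - (G xs + \<Phi> xs (y n) - F (y n)))
         + Qf xs ys (Suc n) + (1 - \<nu>) * R n \<le> Qf xs ys n + (1 - \<nu>) * cc n"
      by (rule one_step[OF n xsd ysd])
    have "Qf xs ys n \<le> Cst xs ys" by (rule Q_bound[OF s n])
    moreover have "(1 - \<nu>) * cc n \<le> (1 - \<nu>) * ccB" using ccB[of n] \<nu> by (intro mult_left_mono) auto
    moreover have "0 \<le> Qf xs ys (Suc n)" by (rule Qf_nonneg)
    moreover have "0 \<le> (1 - \<nu>) * R n" using \<nu> R_nonneg[of n] by simp
    ultimately have "2 * \<tau> n * (XP + YP) \<le> CC"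
      using os unfolding CC_def XP_def YP_def by (simp add: algebra_simps)
    moreover have "2 * tmin * (XP + YP) \<le> 2 * \<tau> n * (XP + YP)"
      using tl0 XP0 YP0 by (intro mult_right_mono) auto
    ultimately have "2 * tmin * (XP + YP) \<le> CC" by linarith
    then have s1: "XP + YP \<le> CC / (2 * tmin)" using tp by (simp add: le_divide_eq mult.commute)
    have ix: "- inner (gx xs ys) (x n - xs) \<le> norm (gx xs ys) * (bx + norm xs)"
    proof -
      have "- inner (gx xs ys) (x n - xs) \<le> norm (gx xs ys) * norm (x n - xs)"
        using inner_lower[of "gx xs ys" "x n - xs"] by simp
      also have "\<dots> \<le> norm (gx xs ys) * (bx + norm xs)"
        using norm_triangle_ineq4[of "x n" xs] bx[of n] by (intro mult_left_mono) auto
      finally show ?thesis .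
    qed
    have iy: "inner (gy xs ys) (y n - ys) \<le> norm (gy xs ys) * (by' + norm ys)"
    proof -
      have "inner (gy xs ys) (y n - ys) \<le> norm (gy xs ys) * norm (y n - ys)" by (rule norm_cauchy_schwarz)
      also have "\<dots> \<le> norm (gy xs ys) * (by' + norm ys)"
        using norm_triangle_ineq4[of "y n" ys] by'[of n] by (intro mult_left_mono) auto
      finally show ?thesis .
    qed
    have "G (x n) \<le> CG" using s1 YP0 b ix unfolding XP_def CG_def by linarith
    moreover have "F (y n) \<le> CF" using s1 XP0 e iy unfolding YP_def CF_def by linarith
    ultimately show ?thesis by simp
  qed
  show ?thesis using main by blast
qed

lemma cluster_dom:
  assumes \<rho>1: "\<And>k. \<rho> k \<ge> 1" and lx: "(\<lambda>k. x (\<rho> k)) \<longlonglongrightarrow> xb" and ly: "(\<lambda>k. y (\<rho> k)) \<longlonglongrightarrow> yb"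
  shows "xb \<in> edom g" "yb \<in> edom fs"
proof -
  obtain CG CF where CGF: "\<forall>n. n \<ge> 1 \<longrightarrow> G (x n) \<le> CG \<and> F (y n) \<le> CF"
    using G_F_upper by blast
  have CG: "G (x n) \<le> CG" and CF: "F (y n) \<le> CF" if "n \<ge> 1" for n using CGF that by auto
  have "g (x (\<rho> k)) \<le> ereal CG" for k using CG[OF \<rho>1] g_fin[OF x_dom] by simp
  then have "g xb \<le> ereal CG" using epi_closed_limit[OF closed_g lx, of "\<lambda>k. CG" CG] by simp
  then show "xb \<in> edom g" by (auto simp: edom_def)
  have "fs (y (\<rho> k)) \<le> ereal CF" for k using CF[OF \<rho>1] fs_fin[OF y_dom] by simp
  then have "fs yb \<le> ereal CF" using epi_closed_limit[OF closed_fs ly, of "\<lambda>k. CF" CF] by simp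
  then show "yb \<in> edom fs" by (auto simp: edom_def)
qed

end


context pd begin

lemma x_subgrad:
  assumes \<rho>: "strict_mono \<rho>" and \<rho>1: "\<And>k. \<rho> k \<ge> 1"
    and lx: "(\<lambda>k. x (\<rho> k)) \<longlonglongrightarrow> xb" and ly: "(\<lambda>k. y (\<rho> k)) \<longlonglongrightarrow> yb"
    and lx1: "(\<lambda>k. x (\<rho> k - 1)) \<longlonglongrightarrow> xb" and ly1: "(\<lambda>k. y (\<rho> k - 1)) \<longlonglongrightarrow> yb"
    and lz: "(\<lambda>k. z (\<rho> k)) \<longlonglongrightarrow> xb"
    and v: "v \<in> edom g"
  shows "G xb + inner (- gx xb yb) (v - xb) \<le> G v"
proof -
  have xbd: "xb \<in> edom g" and ybd: "yb \<in> edom fs" using cluster_dom[OF \<rho>1 lx ly] by auto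
  obtain tmin where tp: "tmin > 0" and tl0: "\<forall>n. tmin \<le> \<tau> n" using tau_lower by blast
  obtain bx where bx: "\<And>n. norm (x n) \<le> bx" using bounded_x by (auto simp: bounded_iff)
  obtain by' where by': "\<And>n. norm (y n) \<le> by'" using bounded_y by (auto simp: bounded_iff)
  have xbb: "norm xb \<le> bx" using tendsto_norm[OF lx] bx by (intro LIMSEQ_le_const2) auto
  have ybb: "norm yb \<le> by'" using tendsto_norm[OF ly] by' by (intro LIMSEQ_le_const2) auto
  obtain Lyy Lxx Lxy where L: "Lyy \<ge> 0" "Lxx \<ge> 0" "Lxy > 0"
    and L4: "\<forall>u \<in> cball 0 bx \<inter> edom g. \<forall>u' \<in> cball 0 bx \<inter> edom g.
                      \<forall>v \<in> cball 0 by' \<inter> edom (fenchel_conj f). \<forall>v' \<in> cball 0 by' \<inter> edom (fenchel_conj f).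
                        norm (gy u v - gy u v') \<le> Lyy * norm (v - v') \<and>
                        norm (gx u v - gx u' v') \<le> Lxx * norm (u - u') + Lxy * norm (v - v')"
    by (rule lip_consts[of "cball 0 bx" "cball 0 by'"]) auto
  define a where "a k = gx (x (\<rho> k - 1)) (y (\<rho> k - 1))" for k
  have alim: "a \<longlonglongrightarrow> gx xb yb"
  proof -
    have "(\<lambda>k. a k - gx xb yb) \<longlonglongrightarrow> 0"
    proof (rule Lim_null_comparison)
      show "eventually (\<lambda>k. norm (a k - gx xb yb) \<le> Lxx * norm (x (\<rho> k - 1) - xb) + Lxy * norm (y (\<rho> k - 1) - yb)) sequentially"
      proof (rule always_eventually, rule allI)
        fix k
        have "x (\<rho> k - 1) \<in> cball 0 bx \<inter> edom g" "xb \<in> cball 0 bx \<inter> edom g"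
          "y (\<rho> k - 1) \<in> cball 0 by' \<inter> edom fs" "yb \<in> cball 0 by' \<inter> edom fs"
          using bx by' x_dom y_dom xbb ybb xbd ybd by auto
        from L4[rule_format, OF this] show "norm (a k - gx xb yb) \<le> Lxx * norm (x (\<rho> k - 1) - xb) + Lxy * norm (y (\<rho> k - 1) - yb)"
          by (simp add: a_def)
      qed
      have "(\<lambda>k. norm (x (\<rho> k - 1) - xb)) \<longlonglongrightarrow> norm (xb - xb)" using lx1 by (intro tendsto_intros)
      then have "(\<lambda>k. norm (x (\<rho> k - 1) - xb)) \<longlonglongrightarrow> 0" by simp
      moreover have "(\<lambda>k. norm (y (\<rho> k - 1) - yb)) \<longlonglongrightarrow> norm (yb - yb)" using ly1 by (intro tendsto_intros)
      then have "(\<lambda>k. norm (y (\<rho> k - 1) - yb)) \<longlonglongrightarrow> 0" by simp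
      ultimately have "(\<lambda>k. Lxx * norm (x (\<rho> k - 1) - xb) + Lxy * norm (y (\<rho> k - 1) - yb)) \<longlonglongrightarrow> Lxx * 0 + Lxy * 0"
        by (intro tendsto_intros)
      then show "(\<lambda>k. Lxx * norm (x (\<rho> k - 1) - xb) + Lxy * norm (y (\<rho> k - 1) - yb)) \<longlonglongrightarrow> 0" by simp
    qed
    then show ?thesis by (simp add: LIM_zero_iff)
  qed
  define p where "p k = (1 / \<tau> (\<rho> k - 1)) *\<^sub>R (z (\<rho> k) - x (\<rho> k)) - a k" for k
  have plim: "p \<longlonglongrightarrow> - gx xb yb"
  proof -
    have "(\<lambda>k. (1 / \<tau> (\<rho> k - 1)) *\<^sub>R (z (\<rho> k) - x (\<rho> k))) \<longlonglongrightarrow> 0"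
    proof (rule Lim_null_comparison)
      show "eventually (\<lambda>k. norm ((1 / \<tau> (\<rho> k - 1)) *\<^sub>R (z (\<rho> k) - x (\<rho> k))) \<le> (1 / tmin) * norm (z (\<rho> k) - x (\<rho> k))) sequentially"
      proof (rule always_eventually, rule allI)
        fix k
        have "1 / \<tau> (\<rho> k - 1) \<le> 1 / tmin" using tl0 tp tau_pos[of "\<rho> k - 1"] by (simp add: frac_le)
        then have "(1 / \<tau> (\<rho> k - 1)) * norm (z (\<rho> k) - x (\<rho> k)) \<le> (1 / tmin) * norm (z (\<rho> k) - x (\<rho> k))"
          by (rule mult_right_mono) simp
        then show "norm ((1 / \<tau> (\<rho> k - 1)) *\<^sub>R (z (\<rho> k) - x (\<rho> k))) \<le> (1 / tmin) * norm (z (\<rho> k) - x (\<rho> k))"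
          using tau_pos[of "\<rho> k - 1"] by (simp only: norm_scaleR) simp
      qed
      have "(\<lambda>k. (1 / tmin) * norm (z (\<rho> k) - x (\<rho> k))) \<longlonglongrightarrow> (1 / tmin) * norm (xb - xb)"
        using lz lx by (intro tendsto_intros)
      then show "(\<lambda>k. (1 / tmin) * norm (z (\<rho> k) - x (\<rho> k))) \<longlonglongrightarrow> 0" by simp
    qed
    then show ?thesis unfolding p_def using tendsto_diff[OF _ alim] by fastforce
  qed
  have Tb: "g (x (\<rho> k)) \<le> ereal (G v - inner (p k) (v - x (\<rho> k)))" for k
  proof -
    define n where "n = \<rho> k"
    have n: "n \<ge> 1" using \<rho>1 by (simp add: n_def)
    have t: "\<tau> (n - 1) > 0" by (rule tau_pos)
    have vi: "inner (z n - \<tau> (n - 1) *\<^sub>R gx (x (n - 1)) (y (n - 1)) - x n) (v - x n) \<le> \<tau> (n - 1) * (G v - G (x n))"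
      by (rule xVI[OF n v])
    have "z n - \<tau> (n - 1) *\<^sub>R gx (x (n - 1)) (y (n - 1)) - x n = \<tau> (n - 1) *\<^sub>R p k"
      using t by (simp add: p_def a_def n_def scaleR_diff_right algebra_simps)
    then have "\<tau> (n - 1) * inner (p k) (v - x n) \<le> \<tau> (n - 1) * (G v - G (x n))" using vi by simp
    then have "inner (p k) (v - x n) \<le> G v - G (x n)" using t by simp
    then show ?thesis using g_fin[OF x_dom] by (simp add: n_def)
  qed
  have Tlim: "(\<lambda>k. G v - inner (p k) (v - x (\<rho> k))) \<longlonglongrightarrow> G v - inner (- gx xb yb) (v - xb)"
    by (intro tendsto_intros plim lx)
  have "g xb \<le> ereal (G v - inner (- gx xb yb) (v - xb))"
    by (rule epi_closed_limit[OF closed_g lx Tb Tlim])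
  then show ?thesis using g_fin[OF xbd] by simp
qed

end


context pd begin

lemma Cpart_lim: "(\<lambda>n. \<omega> * \<delta> (n - 1) * (norm (x n - x (n - 1)))\<^sup>2) \<longlonglongrightarrow> 0"
proof (rule tendsto_sandwich[OF _ _ tendsto_const R_lim])
  show "eventually (\<lambda>n. 0 \<le> \<omega> * \<delta> (n - 1) * (norm (x n - x (n - 1)))\<^sup>2) sequentially"
  proof (intro always_eventually allI)
    fix n show "0 \<le> \<omega> * \<delta> (n - 1) * (norm (x n - x (n - 1)))\<^sup>2"
      using \<omega>_pos delta_pos[of "n - 1"] by simp
  qed
  show "eventually (\<lambda>n. \<omega> * \<delta> (n - 1) * (norm (x n - x (n - 1)))\<^sup>2 \<le> R n) sequentially"
  proof (intro always_eventually allI)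
    fix n
    have "0 \<le> (1 / \<beta>) * (norm (y n - y (n - 1)))\<^sup>2" using \<beta> by simp
    then show "\<omega> * \<delta> (n - 1) * (norm (x n - x (n - 1)))\<^sup>2 \<le> R n" unfolding R_alt by linarith
  qed
qed

lemma y_value:
  assumes \<rho>: "strict_mono \<rho>" and \<rho>1: "\<And>k. \<rho> k \<ge> 1"
    and lx: "(\<lambda>k. x (\<rho> k)) \<longlonglongrightarrow> xb" and ly: "(\<lambda>k. y (\<rho> k)) \<longlonglongrightarrow> yb"
    and ly1: "(\<lambda>k. y (\<rho> k - 1)) \<longlonglongrightarrow> yb"
    and lz1: "(\<lambda>k. z (Suc (\<rho> k))) \<longlonglongrightarrow> xb" and lz2: "(\<lambda>k. z (Suc (Suc (\<rho> k)))) \<longlonglongrightarrow> xb"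
    and xsg: "\<And>v. v \<in> edom g \<Longrightarrow> G xb + inner (- gx xb yb) (v - xb) \<le> G v"
    and w: "w \<in> edom fs"
  shows "F yb \<le> F w - \<Phi> xb w + \<Phi> xb yb"
proof -
  have xbd: "xb \<in> edom g" and ybd: "yb \<in> edom fs" using cluster_dom[OF \<rho>1 lx ly] by auto
  obtain tmin where tp: "tmin > 0" and tl0: "\<forall>n. tmin \<le> \<tau> n" using tau_lower by blast
  define Cp where "Cp n = \<omega> * \<delta> (n - 1) * (norm (x n - x (n - 1)))\<^sup>2" for n
  define kp where "kp = \<psi> / (\<psi> - 1)"
  have Qe: "Qf xb w n = kp * (norm (z (Suc n) - xb))\<^sup>2 + (1 / \<beta>) * (norm (y (n - 1) - w))\<^sup>2 + Cp n" for n
    unfolding Qf_def Cp_def kp_def by simp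
  have Qe1: "Qf xb w (Suc n) = kp * (norm (z (Suc (Suc n)) - xb))\<^sup>2 + (1 / \<beta>) * (norm (y n - w))\<^sup>2 + Cp (Suc n)" for n
    unfolding Qf_def Cp_def kp_def by simp
  have Cl: "Cp \<longlonglongrightarrow> 0" using Cpart_lim unfolding Cp_def .
  have sub: "(\<lambda>k. f (\<rho> k)) \<longlonglongrightarrow> 0" if "f \<longlonglongrightarrow> 0" for f :: "nat \<Rightarrow> real"
    using LIMSEQ_subseq_LIMSEQ[OF that \<rho>] by (simp add: o_def)
  define D where "D k = Qf xb w (\<rho> k) - Qf xb w (Suc (\<rho> k)) + (1 - \<nu>) * cc (\<rho> k)" for k
  have Dlim: "D \<longlonglongrightarrow> 0"
  proof -
    have a: "(\<lambda>k. Qf xb w (\<rho> k)) \<longlonglongrightarrow> kp * (norm (xb - xb))\<^sup>2 + (1 / \<beta>) * (norm (yb - w))\<^sup>2 + 0"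
      unfolding Qe using lz1 ly1 sub[OF Cl] by (intro tendsto_intros)
    have b: "(\<lambda>k. Qf xb w (Suc (\<rho> k))) \<longlonglongrightarrow> kp * (norm (xb - xb))\<^sup>2 + (1 / \<beta>) * (norm (yb - w))\<^sup>2 + 0"
      unfolding Qe1 using lz2 ly sub[OF LIMSEQ_Suc[OF Cl]] by (intro tendsto_intros)
    have c: "(\<lambda>k. (1 - \<nu>) * cc (\<rho> k)) \<longlonglongrightarrow> (1 - \<nu>) * 0" using sub[OF cc_lim] by (intro tendsto_intros)
    show ?thesis unfolding D_def using tendsto_add[OF tendsto_diff[OF a b] c] by simp
  qed
  define T where "T k = \<bar>D k\<bar> / (2 * tmin) + inner (gx xb yb) (x (\<rho> k) - xb) - \<Phi> xb w
      - inner (gx xb w) (x (\<rho> k) - xb) + F w + \<Phi> xb yb + inner (gy xb yb) (y (\<rho> k) - yb)" for k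
  have Tlim: "T \<longlonglongrightarrow> \<bar>0\<bar> / (2 * tmin) + inner (gx xb yb) (xb - xb) - \<Phi> xb w
      - inner (gx xb w) (xb - xb) + F w + \<Phi> xb yb + inner (gy xb yb) (yb - yb)"
    unfolding T_def using Dlim lx ly tp by (intro tendsto_intros) auto
  have Tb: "fs (y (\<rho> k)) \<le> ereal (T k)" for k
  proof -
    define n where "n = \<rho> k"
    have n: "n \<ge> 1" using \<rho>1 by (simp add: n_def)
    define Gp where "Gp = (G (x n) + \<Phi> (x n) w - F w) - (G xb + \<Phi> xb (y n) - F (y n))"
    have os: "2 * \<tau> n * Gp + Qf xb w (Suc n) + (1 - \<nu>) * R n \<le> Qf xb w n + (1 - \<nu>) * cc n"
      using one_step[OF n xbd w] unfolding Gp_def .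
    have "0 \<le> (1 - \<nu>) * R n" using \<nu> R_nonneg[of n] by simp
    then have g1: "2 * \<tau> n * Gp \<le> D k" using os unfolding D_def n_def by linarith
    have g2: "Gp \<le> \<bar>D k\<bar> / (2 * tmin)"
    proof (cases "Gp \<le> 0")
      case True then show ?thesis using tp by (meson abs_ge_zero divide_nonneg_pos order_trans zero_less_mult_iff zero_less_numeral)
    next
      case False
      have "2 * tmin * Gp \<le> 2 * \<tau> n * Gp" using tl0 False by (intro mult_right_mono) auto
      then have "2 * tmin * Gp \<le> \<bar>D k\<bar>" using g1 by linarith
      then show ?thesis using tp by (simp add: le_divide_eq mult.commute)
    qed
    have a: "G xb + inner (- gx xb yb) (x n - xb) \<le> G (x n)" by (rule xsg[OF x_dom])
    have b: "\<Phi> xb w + inner (gx xb w) (x n - xb) \<le> \<Phi> (x n) w" by (rule gradx[OF w xbd x_dom])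
    have c: "\<Phi> xb (y n) \<le> \<Phi> xb yb + inner (gy xb yb) (y n - yb)" by (rule grady[OF xbd ybd y_dom])
    have "F (y n) \<le> T k"
      using g2 a b c unfolding Gp_def T_def n_def[symmetric] by (simp add: inner_minus_left)
    then show ?thesis using fs_fin[OF y_dom] by (simp add: n_def)
  qed
  have "fs yb \<le> ereal (\<bar>0\<bar> / (2 * tmin) + inner (gx xb yb) (xb - xb) - \<Phi> xb w
      - inner (gx xb w) (xb - xb) + F w + \<Phi> xb yb + inner (gy xb yb) (yb - yb))"
    by (rule epi_closed_limit[OF closed_fs ly Tb Tlim])
  then show ?thesis using fs_fin[OF ybd] by simp
qed

lemma y_subgrad:
  assumes xbd: "xb \<in> edom g" and ybd: "yb \<in> edom fs"
    and val: "\<And>w. w \<in> edom fs \<Longrightarrow> F yb \<le> F w - \<Phi> xb w + \<Phi> xb yb"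
    and w: "w \<in> edom fs"
  shows "F yb + inner (gy xb yb) (w - yb) \<le> F w"
proof -
  have der: "((\<lambda>v. \<Phi> xb v) has_derivative (\<lambda>h. inner (gy xb yb) h)) (at yb)"
    using A2_y xbd ybd by blast
  have cvf: "convex_fun fs" using pcc_fs by (simp add: proper_closed_convex_def)
  have "inner (gy xb yb) (w - yb) \<le> F w - F yb"
  proof (rule dirderiv_le[OF der])
    fix t :: real assume t: "0 < t" "t < 1"
    define yt' where "yt' = (1 - t) *\<^sub>R yb + t *\<^sub>R w"
    have e: "yb + t *\<^sub>R (w - yb) = yt'" by (simp add: yt'_def algebra_simps)
    have ytd: "yt' \<in> edom fs" unfolding yt'_def using convex_dom_fs ybd w t by (intro convexD) auto
    have cv: "fs yt' \<le> ereal ((1 - t) * F yb + t * F w)"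
      unfolding yt'_def using epi_convex_comb[OF cvf, of yb "F yb" w "F w" t] fs_fin[OF ybd] fs_fin[OF w] t by simp
    then have cv': "F yt' \<le> (1 - t) * F yb + t * F w" using fs_fin[OF ytd] by simp
    have "F yb \<le> F yt' - \<Phi> xb yt' + \<Phi> xb yb" by (rule val[OF ytd])
    then have "\<Phi> xb yt' - \<Phi> xb yb \<le> t * (F w - F yb)" using cv' by (simp add: algebra_simps)
    then show "(\<Phi> xb (yb + t *\<^sub>R (w - yb)) - \<Phi> xb yb) / t \<le> F w - F yb"
      unfolding e using t by (simp add: divide_le_eq mult.commute)
  qed
  then show ?thesis by simp
qed

end


context pd begin

lemma saddle_mem:
  assumes xbd: "xb \<in> edom g" and ybd: "yb \<in> edom fs"
    and xsg: "\<And>v. v \<in> edom g \<Longrightarrow> G xb + inner (- gx xb yb) (v - xb) \<le> G v"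
    and ysg: "\<And>w. w \<in> edom fs \<Longrightarrow> F yb + inner (gy xb yb) (w - yb) \<le> F w"
  shows "(xb, yb) \<in> saddle_set g fs gx gy"
proof -
  have "g xb + ereal (inner (- gx xb yb) (u - xb)) \<le> g u" for u
  proof (cases "u \<in> edom g")
    case True then show ?thesis using xsg[OF True] g_fin[OF xbd] g_fin[OF True] by simp
  next
    case False then have "g u = \<infinity>" by (simp add: edom_def)
    then show ?thesis by simp
  qed
  moreover have "fs yb + ereal (inner (gy xb yb) (w - yb)) \<le> fs w" for w
  proof (cases "w \<in> edom fs")
    case True then show ?thesis using ysg[OF True] fs_fin[OF ybd] fs_fin[OF True] by simp
  next
    case False then have "fs w = \<infinity>" by (simp add: edom_def)
    then show ?thesis by simp
  qed
  ultimately show ?thesis using xbd ybd g_fin[OF xbd] fs_fin[OF ybd]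
    by (simp add: saddle_set_def subdiff_def)
qed

lemma converge: "\<exists>(xs, ys) \<in> saddle_set g fs gx gy. x \<longlonglongrightarrow> xs \<and> y \<longlonglongrightarrow> ys"
proof (rule cluster)
  fix \<rho> xb yb
  assume \<rho>: "strict_mono \<rho>" and \<rho>1: "\<And>k. \<rho> k \<ge> 1"
    and lx: "(\<lambda>k. x (\<rho> k)) \<longlonglongrightarrow> xb" and ly: "(\<lambda>k. y (\<rho> k)) \<longlonglongrightarrow> yb"
    and lx1: "(\<lambda>k. x (\<rho> k - 1)) \<longlonglongrightarrow> xb" and ly1: "(\<lambda>k. y (\<rho> k - 1)) \<longlonglongrightarrow> yb"
    and lz: "(\<lambda>k. z (\<rho> k)) \<longlonglongrightarrow> xb" and lz1: "(\<lambda>k. z (Suc (\<rho> k))) \<longlonglongrightarrow> xb"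
    and lz2: "(\<lambda>k. z (Suc (Suc (\<rho> k)))) \<longlonglongrightarrow> xb"
  have xbd: "xb \<in> edom g" and ybd: "yb \<in> edom fs" using cluster_dom[OF \<rho>1 lx ly] by auto
  have xsg: "G xb + inner (- gx xb yb) (v - xb) \<le> G v" if "v \<in> edom g" for v
    by (rule x_subgrad[OF \<rho> \<rho>1 lx ly lx1 ly1 lz that])
  have yv: "F yb \<le> F w - \<Phi> xb w + \<Phi> xb yb" if "w \<in> edom fs" for w
    by (rule y_value[OF \<rho> \<rho>1 lx ly ly1 lz1 lz2 xsg that])
  have ysg: "F yb + inner (gy xb yb) (w - yb) \<le> F w" if "w \<in> edom fs" for w
    by (rule y_subgrad[OF xbd ybd yv that])
  have sad: "(xb, yb) \<in> saddle_set g fs gx gy" by (rule saddle_mem[OF xbd ybd xsg ysg])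
  define Qs where "Qs n = Qf xb yb (Suc n)" for n
  define Cp where "Cp n = \<omega> * \<delta> (n - 1) * (norm (x n - x (n - 1)))\<^sup>2" for n
  define kp where "kp = \<psi> / (\<psi> - 1)"
  have kp: "kp > 0" using \<psi> by (simp add: kp_def)
  have Qse: "Qs n = kp * (norm (z (Suc (Suc n)) - xb))\<^sup>2 + (1 / \<beta>) * (norm (y n - yb))\<^sup>2 + Cp (Suc n)" for n
    unfolding Qs_def Qf_def Cp_def kp_def by simp
  have Cp0: "Cp n \<ge> 0" for n using \<omega>_pos delta_pos[of "n - 1"] by (simp add: Cp_def)
  define W where "W n = Qs n - (1 - \<nu>) * (\<Sum>i<Suc n. cc i)" for n
  have Wdec: "decseq W"
  proof (rule decseq_SucI)
    fix n
    have st: "Qf xb yb (Suc (Suc n)) + (1 - \<nu>) * R (Suc n) \<le> Qf xb yb (Suc n) + (1 - \<nu>) * cc (Suc n)"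
      using Q_step[OF sad, of "Suc n"] by simp
    have "0 \<le> (1 - \<nu>) * R (Suc n)" using \<nu> R_nonneg by simp
    then show "W (Suc n) \<le> W n" using st unfolding W_def Qs_def by (simp add: algebra_simps)
  qed
  have Wlow: "\<forall>i. - ((1 - \<nu>) * suminf cc) \<le> W i"
  proof
    fix i
    have "(\<Sum>j<Suc i. cc j) \<le> suminf cc" by (rule sum_le_suminf[OF cc_summable]) (auto simp: cc_nonneg)
    then have "(1 - \<nu>) * (\<Sum>j<Suc i. cc j) \<le> (1 - \<nu>) * suminf cc" using \<nu> by (intro mult_left_mono) auto
    moreover have "Qs i \<ge> 0" unfolding Qs_def by (rule Qf_nonneg)
    ultimately show "- ((1 - \<nu>) * suminf cc) \<le> W i" unfolding W_def by linarith
  qed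
  obtain L where WL: "W \<longlonglongrightarrow> L" using decseq_convergent[OF Wdec Wlow] by blast
  have SL: "(\<lambda>n. \<Sum>i<Suc n. cc i) \<longlonglongrightarrow> suminf cc"
    using LIMSEQ_Suc[OF summable_LIMSEQ[OF cc_summable]] by simp
  have QL: "Qs \<longlonglongrightarrow> L + (1 - \<nu>) * suminf cc"
  proof -
    have "Qs = (\<lambda>n. W n + (1 - \<nu>) * (\<Sum>i<Suc n. cc i))" by (simp add: W_def fun_eq_iff)
    then show ?thesis using WL SL by (simp add: tendsto_add tendsto_mult_left)
  qed
  have Cl: "Cp \<longlonglongrightarrow> 0" using Cpart_lim unfolding Cp_def .
  have "(\<lambda>k. Qs (\<rho> k)) \<longlonglongrightarrow> kp * (norm (xb - xb))\<^sup>2 + (1 / \<beta>) * (norm (yb - yb))\<^sup>2 + 0"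
  proof -
    have "(\<lambda>k. Cp (Suc (\<rho> k))) \<longlonglongrightarrow> 0" using LIMSEQ_subseq_LIMSEQ[OF LIMSEQ_Suc[OF Cl] \<rho>] by (simp add: o_def)
    then show ?thesis unfolding Qse using lz2 ly by (intro tendsto_intros)
  qed
  then have "(\<lambda>k. Qs (\<rho> k)) \<longlonglongrightarrow> 0" by simp
  moreover have "(\<lambda>k. Qs (\<rho> k)) \<longlonglongrightarrow> L + (1 - \<nu>) * suminf cc"
    using LIMSEQ_subseq_LIMSEQ[OF QL \<rho>] by (simp add: o_def)
  ultimately have "L + (1 - \<nu>) * suminf cc = 0" using LIMSEQ_unique by blast
  then have Q0: "Qs \<longlonglongrightarrow> 0" using QL by simp
  have ylim: "y \<longlonglongrightarrow> yb"
  proof -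
    have "(\<lambda>n. y n - yb) \<longlonglongrightarrow> 0"
    proof (rule Lim_null_comparison)
      show "eventually (\<lambda>n. norm (y n - yb) \<le> sqrt (\<beta> * Qs n)) sequentially"
      proof (intro always_eventually allI)
        fix n
        have "0 \<le> kp * (norm (z (Suc (Suc n)) - xb))\<^sup>2" using kp by simp
        then have "(1 / \<beta>) * (norm (y n - yb))\<^sup>2 \<le> Qs n" using Qse[of n] Cp0[of "Suc n"] by linarith
        then have "(norm (y n - yb))\<^sup>2 \<le> \<beta> * Qs n" using \<beta> by (simp add: divide_le_eq mult.commute)
        then show "norm (y n - yb) \<le> sqrt (\<beta> * Qs n)" by (simp add: real_le_rsqrt)
      qed
      show "(\<lambda>n. sqrt (\<beta> * Qs n)) \<longlonglongrightarrow> 0" using tendsto_real_sqrt[OF tendsto_mult[OF tendsto_const Q0, of \<beta>]] by simp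
    qed
    then show ?thesis by (simp add: LIM_zero_iff)
  qed
  have zlim: "(\<lambda>n. z (Suc (Suc n)) - xb) \<longlonglongrightarrow> 0"
  proof (rule Lim_null_comparison)
    show "eventually (\<lambda>n. norm (z (Suc (Suc n)) - xb) \<le> sqrt (Qs n / kp)) sequentially"
    proof (intro always_eventually allI)
      fix n
      have "0 \<le> (1 / \<beta>) * (norm (y n - yb))\<^sup>2" using \<beta> by simp
      then have "kp * (norm (z (Suc (Suc n)) - xb))\<^sup>2 \<le> Qs n" using Qse[of n] Cp0[of "Suc n"] by linarith
      then have "(norm (z (Suc (Suc n)) - xb))\<^sup>2 \<le> Qs n / kp" using kp by (simp add: le_divide_eq mult.commute)
      then show "norm (z (Suc (Suc n)) - xb) \<le> sqrt (Qs n / kp)" by (simp add: real_le_rsqrt)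
    qed
    show "(\<lambda>n. sqrt (Qs n / kp)) \<longlonglongrightarrow> 0" using tendsto_real_sqrt[OF tendsto_divide[OF Q0 tendsto_const, of kp]] kp by simp
  qed
  have xlim: "x \<longlonglongrightarrow> xb"
  proof -
    have a: "(\<lambda>n. z (Suc (Suc n)) - x (Suc n)) \<longlonglongrightarrow> 0" using LIMSEQ_Suc[OF zx_lim] by simp
    have "(\<lambda>n. (z (Suc (Suc n)) - xb) - (z (Suc (Suc n)) - x (Suc n))) \<longlonglongrightarrow> 0 - 0"
      using zlim a by (rule tendsto_diff)
    then have "(\<lambda>n. x (Suc n) - xb) \<longlonglongrightarrow> 0" by simp
    then have "(\<lambda>n. x (Suc n)) \<longlonglongrightarrow> xb" by (simp add: LIM_zero_iff)
    then show ?thesis by (rule LIMSEQ_imp_Suc)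
  qed
  show ?thesis using sad xlim ylim by blast
qed

end

theorem theorem3p1:
  fixes f :: "'b::euclidean_space \<Rightarrow> ereal"
    and g :: "'a::euclidean_space \<Rightarrow> ereal"
    and \<Phi> :: "'a \<Rightarrow> 'b \<Rightarrow> real"
    and gx :: "'a \<Rightarrow> 'b \<Rightarrow> 'a" and gy :: "'a \<Rightarrow> 'b \<Rightarrow> 'b"
    and \<psi> \<xi> \<phi> \<tau>max \<nu> \<mu> \<eta> \<beta> :: real and M :: nat
    and x :: "nat \<Rightarrow> 'a" and y :: "nat \<Rightarrow> 'b" and z :: "nat \<Rightarrow> 'a"
    and \<tau> \<delta> :: "nat \<Rightarrow> real"
  assumes f: "proper_closed_convex f"
    and g: "proper_closed_convex g"
    and \<Phi>_cont: "continuous_on (edom g \<times> edom (fenchel_conj f)) (\<lambda>(u, v). \<Phi> u v)"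
    \<comment> \<open>(A1)\<close>
    and A1_nonempty: "saddle_set g (fenchel_conj f) gx gy \<noteq> {}"
    and A1_finite: "\<forall>(xs, ys) \<in> saddle_set g (fenchel_conj f) gx gy.
                      \<bar>g xs + ereal (\<Phi> xs ys) - fenchel_conj f ys\<bar> \<noteq> \<infinity>"
    \<comment> \<open>(A2)\<close>
    and A2_x: "\<forall>v \<in> edom (fenchel_conj f).
                 convex_on (edom g) (\<lambda>u. \<Phi> u v) \<and>
                 (\<forall>u \<in> edom g. ((\<lambda>u'. \<Phi> u' v) has_derivative (\<lambda>h. inner (gx u v) h)) (at u))"
    and A2_y: "\<forall>u \<in> edom g.
                 concave_on (edom (fenchel_conj f)) (\<lambda>v. \<Phi> u v) \<and>
                 (\<forall>v \<in> edom (fenchel_conj f).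
                    ((\<lambda>v'. \<Phi> u v') has_derivative (\<lambda>h. inner (gy u v) h)) (at v))"
    and A2_lip: "\<forall>X Y. bounded (X :: 'a set) \<longrightarrow> bounded (Y :: 'b set) \<longrightarrow>
                   (\<exists>Lyy Lxx Lxy. Lyy \<ge> 0 \<and> Lxx \<ge> 0 \<and> Lxy > 0 \<and>
                     (\<forall>u \<in> X \<inter> edom g. \<forall>u' \<in> X \<inter> edom g.
                      \<forall>v \<in> Y \<inter> edom (fenchel_conj f). \<forall>v' \<in> Y \<inter> edom (fenchel_conj f).
                        norm (gy u v - gy u v') \<le> Lyy * norm (v - v') \<and>
                        norm (gx u v - gx u' v') \<le> Lxx * norm (u - u') + Lxy * norm (v - v')))"
    \<comment> \<open>parameters of PDAc-L\<close>
    and \<psi>: "1 < \<psi>" "\<psi> < 1 + sqrt 3"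
    and \<xi>: "\<xi> > 0" and \<phi>: "\<phi> > 1"
    and \<omega>: "2 * \<psi> - \<xi> - \<psi> ^ 3 * \<phi> / (1 + \<psi>) > 0"
    and \<tau>max: "\<tau>max > 0"
    and \<nu>: "0 < \<nu>" "\<nu> < 1" and \<mu>: "0 < \<mu>" "\<mu> < 1" and \<eta>: "0 \<le> \<eta>" "\<eta> < 1"
    and M: "M \<ge> 1" and \<beta>: "\<beta> > 0"
    and x0: "x 0 \<in> edom g" and y0: "y 0 \<in> edom (fenchel_conj f)"
    and \<tau>0: "0 < \<tau> 0" "\<tau> 0 \<le> \<tau>max"
    and gen: "pdacl_seq g (fenchel_conj f) \<Phi> gx gy \<psi> \<xi> \<phi> \<tau>max \<nu> \<mu> \<eta> M \<beta> x y z \<tau> \<delta>"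
  shows "\<exists>(xs, ys) \<in> saddle_set g (fenchel_conj f) gx gy. x \<longlonglongrightarrow> xs \<and> y \<longlonglongrightarrow> ys"
proof -
  interpret pd f g \<Phi> gx gy \<psi> \<xi> \<phi> \<tau>max \<nu> \<mu> \<eta> \<beta> M x y z \<tau> \<delta>
    by unfold_locales (fact assms)+
  show ?thesis using converge .
qed

end
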